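(* Let $\mathfrak g=\mathfrak d_4$ and let $\mathcal L_{\mathfrak d_4}(-2\Lambda_0)$ be the simple affine vertex algebra of $\widehat{\mathfrak d}_4$ at level $-2$. For $i\in\{1,3,4\}$, the spectral flowed module $\sigma^{\bar\Lambda_i}(\mathcal L_{\mathfrak d_4}(-2\Lambda_0))$ is isomorphic, as a $\widehat{\mathfrak d}_4$-module, to the irreducible highest weight module $\mathcal L_{\mathfrak d_4}(-2\Lambda_i)$.
   Context: $\alpha_1,\dots,\alpha_4$ are the simple roots of $\mathfrak d_4$ with $\alpha_2$ the central node, the invariant form normalized so $(\alpha|\alpha)=2$ for roots (so roots and coroots, weights and coweights are identified via the form); $\bar\Lambda_i$ are the fundamental weights of $\mathfrak d_4$ and $\Lambda_0,\dots,\Lambda_4$ the fundamental weights of $\widehat{\mathfrak d}_4$. $\mathcal L_{\mathfrak d_4}(\Lambda)$ denotes the irreducible highest weight $\widehat{\mathfrak d}_4$-module of highest weight $\Lambda$. For $\mu$ in the Cartan subalgebra $\mathfrak h$ (here $\mu=\bar\Lambda_i$ viewed in $\mathfrak h$ via the form), and a module $(M,Y_M)$ of level $k$, the spectral flowed module $\sigma^{\mu}(M)=(M,Y_M(\Delta_\mu(z)\cdot,z))$ with Li's operator $\Delta_\mu(z)=z^{\mu_{(0)}}\exp\big(\sum_{n\ge1}\frac{\mu_{(n)}}{-n}(-z)^{-n}\big)$; equivalently, $\sigma^{\mu}(M)$ is the space $M$ on which the root vector $e^\alpha_n$ acts as $e^\alpha_{n+\langle\mu,\alpha\rangle}$ and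 $h_n$ acts as $h_n+\delta_{n,0}(\mu|h)K$ ($K$ the central element acting by $k$). *)

theory Defs
  imports Complex_Main
begin

text \<open>Concrete model of d4 = so(8,C). Matrices are functions nat => nat => complex,
  only indices 0..7 matter. Basis order: e_1..e_4 (indices 0..3), e_{-1}..e_{-4} (indices 4..7);
  so(8) preserves the symmetric form S with S(e_i,e_{-i}) = 1.\<close>

type_synonym mat = "nat \<Rightarrow> nat \<Rightarrow> complex"

definition pidx :: "nat \<Rightarrow> nat" where "pidx a = (a + 4) mod 8"

definition supp8 :: "mat \<Rightarrow> bool" where
  "supp8 X \<longleftrightarrow> (\<forall>a b. (8 \<le> a \<or> 8 \<le> b) \<longrightarrow> X a b = 0)"

definition so8 :: "mat set" where
  "so8 = {X. supp8 X \<and> (\<forall>a<8. \<forall>b<8. X (pidx b) a + X (pidx a) b = 0)}"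

definition mmul :: "mat \<Rightarrow> mat \<Rightarrow> mat" where
  "mmul X Y = (\<lambda>a b. \<Sum>c<8. X a c * Y c b)"

definition bracket :: "mat \<Rightarrow> mat \<Rightarrow> mat" where
  "bracket X Y = (\<lambda>a b. mmul X Y a b - mmul Y X a b)"

text \<open>Normalized invariant form (roots have square length 2): (X|Y) = 1/2 tr(XY).\<close>
definition nform :: "mat \<Rightarrow> mat \<Rightarrow> complex" where
  "nform X Y = (\<Sum>a<8. \<Sum>b<8. X a b * Y b a) / 2"

definition cartan :: "(nat \<Rightarrow> complex) \<Rightarrow> mat" where
  "cartan x = (\<lambda>a b. if a = b \<and> a < 4 then x a
                      else if a = b \<and> 4 \<le> a \<and> a < 8 then - x (a - 4) else 0)"

definition cartan_sub :: "mat set" where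
  "cartan_sub = range cartan"

text \<open>Positive nilpotent part n_+ (positive roots e_i - e_j, e_i + e_j, i<j, for the simple
  roots alpha1 = e1-e2, alpha2 = e2-e3 (central node), alpha3 = e3-e4, alpha4 = e3+e4).\<close>
definition nplus :: "mat set" where
  "nplus = {X \<in> so8. (\<forall>a<4. \<forall>b<4. b \<le> a \<longrightarrow> X a b = 0) \<and>
                     (\<forall>a. \<forall>b. 4 \<le> a \<and> a < 8 \<and> b < 4 \<longrightarrow> X a b = 0)}"

text \<open>Fundamental weights of d4 (identified with elements of h via the form).\<close>
definition fw :: "nat \<Rightarrow> mat" where
  "fw i = cartan (if i = 1 then (\<lambda>j. if j = 0 then 1 else 0)
             else if i = 2 then (\<lambda>j. if j \<le> 1 then 1 else 0)
             else if i = 3 then (\<lambda>j. if j \<le> 2 then 1/2 else if j = 3 then -1/2 else 0)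
             else if i = 4 then (\<lambda>j. if j \<le> 3 then 1/2 else 0)
             else (\<lambda>j. 0))"

definition cvs :: "(complex \<Rightarrow> 'm::ab_group_add \<Rightarrow> 'm) \<Rightarrow> bool" where
  "cvs sc \<longleftrightarrow> (\<forall>v. sc 1 v = v) \<and> (\<forall>a b v. sc a (sc b v) = sc (a * b) v) \<and>
     (\<forall>a b v. sc (a + b) v = sc a v + sc b v) \<and> (\<forall>a v w. sc a (v + w) = sc a v + sc a w)"

text \<open>A module of level k for the affine algebra ghat = d4 (x) C[t,t^-1] + CK:
  act X n is the action of X (x) t^n, and K acts as k.\<close>
definition aff_module ::
  "(complex \<Rightarrow> 'm::ab_group_add \<Rightarrow> 'm) \<Rightarrow> (mat \<Rightarrow> int \<Rightarrow> 'm \<Rightarrow> 'm) \<Rightarrow> complex \<Rightarrow> bool" where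
  "aff_module sc act k \<longleftrightarrow> cvs sc \<and>
     (\<forall>X\<in>so8. \<forall>n v w. act X n (v + w) = act X n v + act X n w) \<and>
     (\<forall>X\<in>so8. \<forall>n c v. act X n (sc c v) = sc c (act X n v)) \<and>
     (\<forall>X\<in>so8. \<forall>Y\<in>so8. \<forall>n v. act (\<lambda>a b. X a b + Y a b) n v = act X n v + act Y n v) \<and>
     (\<forall>X\<in>so8. \<forall>c n v. act (\<lambda>a b. c * X a b) n v = sc c (act X n v)) \<and>
     (\<forall>X\<in>so8. \<forall>Y\<in>so8. \<forall>m n v.
        act X m (act Y n v) - act Y n (act X m v) =
        act (bracket X Y) (m + n) v +
          (if m + n = 0 then sc (of_int m * nform X Y * k) v else 0))"

definition csubspace :: "(complex \<Rightarrow> 'm::ab_group_add \<Rightarrow> 'm) \<Rightarrow> 'm set \<Rightarrow> bool" where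
  "csubspace sc W \<longleftrightarrow> 0 \<in> W \<and> (\<forall>v\<in>W. \<forall>w\<in>W. v + w \<in> W) \<and> (\<forall>c. \<forall>v\<in>W. sc c v \<in> W)"

definition irreducible_mod ::
  "(complex \<Rightarrow> 'm::ab_group_add \<Rightarrow> 'm) \<Rightarrow> (mat \<Rightarrow> int \<Rightarrow> 'm \<Rightarrow> 'm) \<Rightarrow> bool" where
  "irreducible_mod sc act \<longleftrightarrow> (\<exists>v::'m. v \<noteq> 0) \<and>
     (\<forall>W. csubspace sc W \<and> (\<forall>X\<in>so8. \<forall>n. \<forall>v\<in>W. act X n v \<in> W) \<longrightarrow> W = {0} \<or> W = UNIV)"

definition hw_vector ::
  "(complex \<Rightarrow> 'm::ab_group_add \<Rightarrow> 'm) \<Rightarrow> (mat \<Rightarrow> int \<Rightarrow> 'm \<Rightarrow> 'm) \<Rightarrow> mat \<Rightarrow> 'm \<Rightarrow> bool" where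
  "hw_vector sc act lam v \<longleftrightarrow> v \<noteq> 0 \<and>
     (\<forall>H\<in>cartan_sub. act H 0 v = sc (nform lam H) v) \<and>
     (\<forall>X\<in>so8. \<forall>n>0. act X n v = 0) \<and>
     (\<forall>X\<in>nplus. act X 0 v = 0)"

text \<open>(sc, act) is (a model of) the irreducible highest weight module L(Lambda) with
  Lambda = k Lambda_0 + lam (level k, finite part lam).\<close>
definition is_L ::
  "(complex \<Rightarrow> 'm::ab_group_add \<Rightarrow> 'm) \<Rightarrow> (mat \<Rightarrow> int \<Rightarrow> 'm \<Rightarrow> 'm) \<Rightarrow> complex \<Rightarrow> mat \<Rightarrow> bool" where
  "is_L sc act k lam \<longleftrightarrow> aff_module sc act k \<and> irreducible_mod sc act \<and> (\<exists>v. hw_vector sc act lam v)"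

definition adcomp :: "mat \<Rightarrow> int \<Rightarrow> mat \<Rightarrow> mat" where
  "adcomp mu j X = (\<lambda>a b. if mu a a - mu b b = of_int j then X a b else 0)"

definition ad_eigs :: "mat \<Rightarrow> int set" where
  "ad_eigs mu = {j. \<exists>a<8. \<exists>b<8. mu a a - mu b b = of_int j}"

text \<open>Spectral flow sigma^mu at level k: root vector e^alpha_n acts as e^alpha_{n+<mu,alpha>},
  h_n acts as h_n + delta_{n,0} (mu|h) k.\<close>
definition sflow :: "mat \<Rightarrow> complex \<Rightarrow> (complex \<Rightarrow> 'm::ab_group_add \<Rightarrow> 'm) \<Rightarrow>
    (mat \<Rightarrow> int \<Rightarrow> 'm \<Rightarrow> 'm) \<Rightarrow> (mat \<Rightarrow> int \<Rightarrow> 'm \<Rightarrow> 'm)" where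
  "sflow mu k sc act = (\<lambda>X n v. (\<Sum>j\<in>ad_eigs mu. act (adcomp mu j X) (n + j) v) +
       (if n = 0 then sc (nform mu X * k) v else 0))"

definition mod_iso ::
  "(complex \<Rightarrow> 'm::ab_group_add \<Rightarrow> 'm) \<Rightarrow> (mat \<Rightarrow> int \<Rightarrow> 'm \<Rightarrow> 'm) \<Rightarrow>
   (complex \<Rightarrow> 'n::ab_group_add \<Rightarrow> 'n) \<Rightarrow> (mat \<Rightarrow> int \<Rightarrow> 'n \<Rightarrow> 'n) \<Rightarrow> ('m \<Rightarrow> 'n) \<Rightarrow> bool" where
  "mod_iso sc1 act1 sc2 act2 f \<longleftrightarrow> bij f \<and>
     (\<forall>v w. f (v + w) = f v + f w) \<and> (\<forall>c v. f (sc1 c v) = sc2 c (f v)) \<and>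
     (\<forall>X\<in>so8. \<forall>n v. f (act1 X n v) = act2 X n (f v))"

end

theory Submission
  imports Defs "HOL-Library.Product_Plus"
begin
lemma pidx_lt: "pidx a < 8" by (simp add: pidx_def)
lemma less8_cases: "(a::nat) < 8 \<Longrightarrow> a = 0 \<or> a = 1 \<or> a = 2 \<or> a = 3 \<or> a = 4 \<or> a = 5 \<or> a = 6 \<or> a = 7" by arith
lemma pidx_pidx: "a < 8 \<Longrightarrow> pidx (pidx a) = a" using less8_cases[of a] by (auto simp: pidx_def)
lemma pidx_eq_iff: "a < 8 \<Longrightarrow> p < 8 \<Longrightarrow> (a = pidx p) \<longleftrightarrow> (p = pidx a)"
  using pidx_pidx by metis
lemma pidx_eq_iff2: "a < 8 \<Longrightarrow> p < 8 \<Longrightarrow> (pidx a = p) \<longleftrightarrow> (a = pidx p)"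
  using pidx_pidx by metis
lemma pidx_inj: "a < 8 \<Longrightarrow> b < 8 \<Longrightarrow> (pidx a = pidx b) \<longleftrightarrow> a = b"
  using pidx_pidx by metis

definition Fm :: "nat \<Rightarrow> nat \<Rightarrow> mat" where
  "Fm p q = (\<lambda>a b. (if a = p \<and> b = q then 1 else 0) - (if a = pidx q \<and> b = pidx p then 1 else 0))"

lemma mmul_F_left: "p < 8 \<Longrightarrow> q < 8 \<Longrightarrow>
  mmul (Fm p q) Y r s = (if r = p then Y q s else 0) - (if r = pidx q then Y (pidx p) s else 0)"
proof -
  assume pq: "p < 8" "q < 8"
  have "mmul (Fm p q) Y r s = (\<Sum>c<8. (if c = q then (if r = p then Y q s else 0) else 0)
       - (if c = pidx p then (if r = pidx q then Y (pidx p) s else 0) else 0))"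
    unfolding mmul_def Fm_def by (intro sum.cong refl) (simp add: left_diff_distrib)
  also have "\<dots> = (if r = p then Y q s else 0) - (if r = pidx q then Y (pidx p) s else 0)"
    using pq by (simp add: sum_subtractf pidx_lt)
  finally show ?thesis .
qed

lemma mmul_F_right: "p < 8 \<Longrightarrow> q < 8 \<Longrightarrow>
  mmul Y (Fm p q) r s = (if s = q then Y r p else 0) - (if s = pidx p then Y r (pidx q) else 0)"
proof -
  assume pq: "p < 8" "q < 8"
  have "mmul Y (Fm p q) r s = (\<Sum>c<8. (if c = p then (if s = q then Y r p else 0) else 0)
       - (if c = pidx q then (if s = pidx p then Y r (pidx q) else 0) else 0))"
    unfolding mmul_def Fm_def by (intro sum.cong refl) (simp add: right_diff_distrib)
  also have "\<dots> = (if s = q then Y r p else 0) - (if s = pidx p then Y r (pidx q) else 0)"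
    using pq by (simp add: sum_subtractf pidx_lt)
  finally show ?thesis .
qed

lemma bracket_F: "p < 8 \<Longrightarrow> q < 8 \<Longrightarrow> bracket (Fm p q) Y r s =
   (if r = p then Y q s else 0) - (if r = pidx q then Y (pidx p) s else 0)
   - (if s = q then Y r p else 0) + (if s = pidx p then Y r (pidx q) else 0)"
  by (simp add: bracket_def mmul_F_left mmul_F_right)

lemma bracket_anti: "bracket X Y a b = - bracket Y X a b"
  by (simp add: bracket_def)

lemma so8_supp: "X \<in> so8 \<Longrightarrow> 8 \<le> a \<or> 8 \<le> b \<Longrightarrow> X a b = 0"
  by (auto simp: so8_def supp8_def)

lemma so8_skew: "X \<in> so8 \<Longrightarrow> a < 8 \<Longrightarrow> b < 8 \<Longrightarrow> X a b = - X (pidx b) (pidx a)"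
proof -
  assume X: "X \<in> so8" and ab: "a < 8" "b < 8"
  have "X (pidx b) (pidx a) + X (pidx (pidx a)) b = 0"
    using X ab pidx_lt unfolding so8_def by blast
  thus ?thesis using ab pidx_pidx by (simp add: eq_neg_iff_add_eq_0 add.commute)
qed

lemma so8I: "supp8 X \<Longrightarrow> (\<And>a b. a < 8 \<Longrightarrow> b < 8 \<Longrightarrow> X a b = - X (pidx b) (pidx a)) \<Longrightarrow> X \<in> so8"
proof -
  assume s: "supp8 X" and k: "\<And>a b. a < 8 \<Longrightarrow> b < 8 \<Longrightarrow> X a b = - X (pidx b) (pidx a)"
  have "\<forall>a<8. \<forall>b<8. X (pidx b) a + X (pidx a) b = 0"
  proof (intro allI impI)
    fix a b :: nat assume ab: "a < 8" "b < 8"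
    have "X (pidx a) b = - X (pidx b) (pidx (pidx a))" using k[of "pidx a" b] ab pidx_lt by simp
    thus "X (pidx b) a + X (pidx a) b = 0" using ab pidx_pidx by simp
  qed
  thus ?thesis using s by (simp add: so8_def)
qed

lemma so8_zero: "(\<lambda>a b. 0) \<in> so8"
  by (rule so8I) (auto simp: supp8_def)

lemma so8_add: "X \<in> so8 \<Longrightarrow> Y \<in> so8 \<Longrightarrow> (\<lambda>a b. X a b + Y a b) \<in> so8"
proof (rule so8I)
  assume X: "X \<in> so8" and Y: "Y \<in> so8"
  show "supp8 (\<lambda>a b. X a b + Y a b)" using X Y by (auto simp: supp8_def so8_supp)
  fix a b :: nat assume ab: "a < 8" "b < 8"
  show "X a b + Y a b = - (X (pidx b) (pidx a) + Y (pidx b) (pidx a))"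
    using so8_skew[OF X ab] so8_skew[OF Y ab] by simp
qed

lemma so8_scale: "X \<in> so8 \<Longrightarrow> (\<lambda>a b. c * X a b) \<in> so8"
proof (rule so8I)
  assume X: "X \<in> so8"
  show "supp8 (\<lambda>a b. c * X a b)" using X by (auto simp: supp8_def so8_supp)
  fix a b :: nat assume ab: "a < 8" "b < 8"
  show "c * X a b = - (c * X (pidx b) (pidx a))"
    using so8_skew[OF X ab] by simp
qed

lemma so8_F: "p < 8 \<Longrightarrow> q < 8 \<Longrightarrow> Fm p q \<in> so8"
proof (rule so8I)
  assume pq: "p < 8" "q < 8"
  show "supp8 (Fm p q)" using pq pidx_lt[of p] pidx_lt[of q] by (auto simp: supp8_def Fm_def)
  fix a b :: nat assume ab: "a < 8" "b < 8"
  show "Fm p q a b = - Fm p q (pidx b) (pidx a)"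
  proof -
    note e1 = pidx_eq_iff2[OF ab(2) pq(1)] and e2 = pidx_eq_iff2[OF ab(1) pq(2)]
      and e3 = pidx_inj[OF ab(2) pq(2)] and e4 = pidx_inj[OF ab(1) pq(1)]
    show ?thesis unfolding Fm_def e1 e2 e3 e4 by (simp add: conj_commute)
  qed
qed

lemma sum8_pidx: "(\<Sum>c<8. f (pidx c)) = (\<Sum>c<8. f c :: 'a::comm_monoid_add)"
  by (rule sum.reindex_bij_witness[where i=pidx and j=pidx]) (auto simp: pidx_pidx pidx_lt)

lemma so8_bracket: "X \<in> so8 \<Longrightarrow> Y \<in> so8 \<Longrightarrow> bracket X Y \<in> so8"
proof (rule so8I)
  assume X: "X \<in> so8" and Y: "Y \<in> so8"
  show "supp8 (bracket X Y)"
    unfolding supp8_def bracket_def mmul_def using X Y by (auto simp: so8_supp)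
  have key: "mmul A B (pidx b) (pidx a) = mmul B A a b" if A: "A \<in> so8" and B: "B \<in> so8"
     and ab: "a < 8" "b < 8" for A B a b
  proof -
    have "mmul A B (pidx b) (pidx a) = (\<Sum>c<8. A (pidx b) (pidx c) * B (pidx c) (pidx a))"
      unfolding mmul_def by (rule sum8_pidx[symmetric])
    also have "\<dots> = (\<Sum>c<8. B a c * A c b)"
      proof (rule sum.cong[OF refl])
      fix c assume c: "c \<in> {..<8::nat}"
      have 1: "A (pidx b) (pidx c) = - A c b" using so8_skew[OF A, of c b] c ab by simp
      have 2: "B (pidx c) (pidx a) = - B a c" using so8_skew[OF B, of a c] c ab by simp
      show "A (pidx b) (pidx c) * B (pidx c) (pidx a) = B a c * A c b" using 1 2 by simp
    qed
    finally show ?thesis by (simp add: mmul_def)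
  qed
  fix a b :: nat assume ab: "a < 8" "b < 8"
  show "bracket X Y a b = - bracket X Y (pidx b) (pidx a)"
    using key[OF X Y ab] key[OF Y X ab] by (simp add: bracket_def)
qed

lemma sd_pidx: "x < 8 \<Longrightarrow> (\<Sum>p<8. if x = pidx p then f p else 0) = (f (pidx x) :: 'a::comm_monoid_add)"
proof -
  assume x: "x < 8"
  have "(\<Sum>p<8. if x = pidx p then f p else 0) = (\<Sum>p<8. if p = pidx x then f p else 0)"
  proof (rule sum.cong[OF refl])
    fix p assume "p \<in> {..<8::nat}"
    hence "(x = pidx p) = (p = pidx x)" using pidx_eq_iff[OF x] by simp
    thus "(if x = pidx p then f p else 0) = (if p = pidx x then f p else 0)" by simp
  qed
  also have "\<dots> = f (pidx x)" by (simp add: pidx_lt)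
  finally show ?thesis .
qed

lemma sum_if_const: "(\<Sum>p\<in>A. if P then f p else 0) = (if P then (\<Sum>p\<in>A. f p) else (0::'a::comm_monoid_add))"
  by simp

lemma trace0: "Y \<in> so8 \<Longrightarrow> (\<Sum>p<8. Y p p) = 0"
proof -
  assume Y: "Y \<in> so8"
  have "(\<Sum>p<8. Y p p) = (\<Sum>p<8. Y (pidx p) (pidx p))" by (rule sum8_pidx[symmetric])
  also have "\<dots> = (\<Sum>p<8. - Y p p)"
  proof (rule sum.cong[OF refl])
    fix p assume "p \<in> {..<8::nat}"
    thus "Y (pidx p) (pidx p) = - Y p p" using so8_skew[OF Y, of p p] by simp
  qed
  finally have "(\<Sum>p<8. Y p p) = - (\<Sum>p<8. Y p p)" by (simp add: sum_negf)
  thus ?thesis by simp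
qed

lemma cT1: assumes Y: "Y \<in> so8" and ab: "a < 8" "b < 8"
  shows "(\<Sum>p<8. \<Sum>q<8. if a = q then bracket (Fm p q) Y p b else 0) = 6 * Y a b"
proof -
  have "(\<Sum>p<8. \<Sum>q<8. if a = q then bracket (Fm p q) Y p b else 0)
     = (\<Sum>p<8. Y a b - (if p = pidx a then Y a b else 0) + (if b = pidx p then Y p (pidx a) else 0)
          - (if b = a then Y p p else 0))"
  proof (rule sum.cong[OF refl])
    fix p assume p: "p \<in> {..<8::nat}"
    have "(\<Sum>q<8. if a = q then bracket (Fm p q) Y p b else 0) = bracket (Fm p a) Y p b" using ab by simp
    also have "\<dots> = Y a b - (if p = pidx a then Y a b else 0) + (if b = pidx p then Y p (pidx a) else 0)
          - (if b = a then Y p p else 0)"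
      using p ab by (simp add: bracket_F pidx_pidx)
    finally show "(\<Sum>q<8. if a = q then bracket (Fm p q) Y p b else 0) = \<dots>" .
  qed
  also have "\<dots> = 8 * Y a b - Y a b + Y (pidx b) (pidx a)"
    using ab by (simp add: sum.distrib sum_subtractf sd_pidx pidx_lt trace0[OF Y] sum_if_const)
  also have "\<dots> = 6 * Y a b" using so8_skew[OF Y ab] by simp
  finally show ?thesis .
qed


lemma cT2: assumes Y: "Y \<in> so8" and ab: "a < 8" "b < 8"
  shows "(\<Sum>p<8. \<Sum>q<8. if a = pidx p then bracket (Fm p q) Y (pidx q) b else 0) = - 6 * Y a b"
proof -
  have "(\<Sum>p<8. \<Sum>q<8. if a = pidx p then bracket (Fm p q) Y (pidx q) b else 0)
     = (\<Sum>q<8. \<Sum>p<8. if a = pidx p then bracket (Fm p q) Y (pidx q) b else 0)"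
    by (rule sum.swap)
  also have "\<dots> = (\<Sum>q<8. (if q = a then Y a b else 0) - Y a b - (if q = b then Y (pidx b) (pidx a) else 0)
       + (if b = a then Y (pidx q) (pidx q) else 0))"
  proof (rule sum.cong[OF refl])
    fix q assume q: "q \<in> {..<8::nat}"
    have "(\<Sum>p<8. if a = pidx p then bracket (Fm p q) Y (pidx q) b else 0) = bracket (Fm (pidx a) q) Y (pidx q) b"
      by (rule sd_pidx[OF ab(1)])
    also have "\<dots> = (if q = a then Y a b else 0) - Y a b - (if q = b then Y (pidx b) (pidx a) else 0)
       + (if b = a then Y (pidx q) (pidx q) else 0)"
      using q ab pidx_inj[of q a] by (simp add: bracket_F pidx_pidx pidx_lt)
    finally show "(\<Sum>p<8. if a = pidx p then bracket (Fm p q) Y (pidx q) b else 0) = \<dots>" .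
  qed
  also have "\<dots> = Y a b - 8 * Y a b - Y (pidx b) (pidx a)"
    using ab by (simp add: sum.distrib sum_subtractf sum_if_const sum8_pidx[of "\<lambda>q. Y q q"] trace0[OF Y])
  also have "\<dots> = - 6 * Y a b" using so8_skew[OF Y ab] by simp
  finally show ?thesis .
qed

lemma cT3: assumes Y: "Y \<in> so8" and ab: "a < 8" "b < 8"
  shows "(\<Sum>p<8. \<Sum>q<8. if b = p then bracket (Fm p q) Y a q else 0) = - 6 * Y a b"
proof -
  have "(\<Sum>p<8. \<Sum>q<8. if b = p then bracket (Fm p q) Y a q else 0)
     = (\<Sum>q<8. \<Sum>p<8. if b = p then bracket (Fm p q) Y a q else 0)"
    by (rule sum.swap)
  also have "\<dots> = (\<Sum>q<8. (if a = b then Y q q else 0) - (if q = pidx a then Y (pidx b) (pidx a) else 0)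
      - Y a b + (if q = pidx b then Y a b else 0))"
  proof (rule sum.cong[OF refl])
    fix q assume q: "q \<in> {..<8::nat}"
    have "(\<Sum>p<8. if b = p then bracket (Fm p q) Y a q else 0) = bracket (Fm b q) Y a q"
      using ab by simp
    also have "\<dots> = (if a = b then Y q q else 0) - (if q = pidx a then Y (pidx b) (pidx a) else 0)
      - Y a b + (if q = pidx b then Y a b else 0)"
      using q ab pidx_eq_iff[of a q] pidx_inj[of b a] by (simp add: bracket_F pidx_pidx pidx_lt)
    finally show "(\<Sum>p<8. if b = p then bracket (Fm p q) Y a q else 0) = \<dots>" .
  qed
  also have "\<dots> = - Y (pidx b) (pidx a) - 8 * Y a b + Y a b"
    using ab by (simp add: sum.distrib sum_subtractf sum_if_const trace0[OF Y] pidx_lt)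
  also have "\<dots> = - 6 * Y a b" using so8_skew[OF Y ab] by simp
  finally show ?thesis .
qed

lemma cT4: assumes Y: "Y \<in> so8" and ab: "a < 8" "b < 8"
  shows "(\<Sum>p<8. \<Sum>q<8. if b = pidx q then bracket (Fm p q) Y a (pidx p) else 0) = 6 * Y a b"
proof -
  have "(\<Sum>p<8. \<Sum>q<8. if b = pidx q then bracket (Fm p q) Y a (pidx p) else 0)
     = (\<Sum>p<8. (if p = a then Y (pidx b) (pidx a) else 0) - (if a = b then Y (pidx p) (pidx p) else 0)
        - (if p = b then Y a b else 0) + Y a b)"
  proof (rule sum.cong[OF refl])
    fix p assume p: "p \<in> {..<8::nat}"
    have "(\<Sum>q<8. if b = pidx q then bracket (Fm p q) Y a (pidx p) else 0) = bracket (Fm p (pidx b)) Y a (pidx p)"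
      by (rule sd_pidx[OF ab(2)])
    also have "\<dots> = (if p = a then Y (pidx b) (pidx a) else 0) - (if a = b then Y (pidx p) (pidx p) else 0)
        - (if p = b then Y a b else 0) + Y a b"
      using p ab pidx_inj[of p b] by (simp add: bracket_F pidx_pidx pidx_lt)
    finally show "(\<Sum>q<8. if b = pidx q then bracket (Fm p q) Y a (pidx p) else 0) = \<dots>" .
  qed
  also have "\<dots> = Y (pidx b) (pidx a) - Y a b + 8 * Y a b"
    using ab by (simp add: sum.distrib sum_subtractf sum_if_const sum8_pidx[of "\<lambda>q. Y q q"] trace0[OF Y])
  also have "\<dots> = 6 * Y a b" using so8_skew[OF Y ab] by simp
  finally show ?thesis .
qed

lemma casimir: assumes Y: "Y \<in> so8" and ab: "a < 8" "b < 8"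
  shows "(\<Sum>p<8. \<Sum>q<8. bracket (bracket (Fm p q) Y) (Fm q p) a b) = - 24 * Y a b"
proof -
  have "(\<Sum>p<8. \<Sum>q<8. bracket (bracket (Fm p q) Y) (Fm q p) a b)
    = (\<Sum>p<8. \<Sum>q<8. - ((if a = q then bracket (Fm p q) Y p b else 0)
        - (if a = pidx p then bracket (Fm p q) Y (pidx q) b else 0)
        - (if b = p then bracket (Fm p q) Y a q else 0)
        + (if b = pidx q then bracket (Fm p q) Y a (pidx p) else 0)))"
  proof (intro sum.cong refl)
    fix p q assume "p \<in> {..<8::nat}" "q \<in> {..<8::nat}"
    thus "bracket (bracket (Fm p q) Y) (Fm q p) a b = - ((if a = q then bracket (Fm p q) Y p b else 0)
        - (if a = pidx p then bracket (Fm p q) Y (pidx q) b else 0)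
        - (if b = p then bracket (Fm p q) Y a q else 0)
        + (if b = pidx q then bracket (Fm p q) Y a (pidx p) else 0))"
      by (subst bracket_anti) (simp add: bracket_F[of q p])
  qed
  also have "\<dots> = - (6 * Y a b - (- 6 * Y a b) - (- 6 * Y a b) + 6 * Y a b)"
    by (simp only: sum_negf sum.distrib sum_subtractf cT1[OF Y ab] cT2[OF Y ab] cT3[OF Y ab] cT4[OF Y ab])
  also have "\<dots> = - 24 * Y a b" by simp
  finally show ?thesis .
qed


lemma casimir_mat: assumes Y: "Y \<in> so8"
  shows "(\<Sum>p<8. \<Sum>q<8. bracket (bracket (Fm p q) Y) (Fm q p) a b) = - 24 * Y a b"
proof (cases "a < 8 \<and> b < 8")
  case True thus ?thesis using casimir[OF Y] by auto
next
  case False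
  have "bracket (bracket (Fm p q) Y) (Fm q p) a b = 0" if "p < 8" "q < 8" for p q
    using so8_supp[OF so8_bracket[OF so8_bracket[OF so8_F[OF that] Y] so8_F[OF that(2,1)]]] False by auto
  moreover have "8 \<le> a \<or> 8 \<le> b" using False by auto
  ultimately show ?thesis using so8_supp[OF Y, of a b] by simp
qed

lemma expansion: assumes X: "X \<in> so8"
  shows "(\<Sum>p<8. \<Sum>q<8. X p q * Fm p q a b) = 2 * X a b"
proof (cases "a < 8 \<and> b < 8")
  case True
  have "(\<Sum>p<8. \<Sum>q<8. X p q * Fm p q a b)
     = (\<Sum>p<8. \<Sum>q<8. (if p = a then (if q = b then X a b else 0) else 0)
          - (if p = pidx b then (if q = pidx a then X (pidx b) (pidx a) else 0) else 0))"
  proof (intro sum.cong refl)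
    fix p q assume pq: "p \<in> {..<8::nat}" "q \<in> {..<8::nat}"
    have e1: "(a = pidx q) = (q = pidx a)" using pidx_eq_iff[of a q] True pq by simp
    have e2: "(b = pidx p) = (p = pidx b)" using pidx_eq_iff[of b p] True pq by simp
    show "X p q * Fm p q a b = (if p = a then (if q = b then X a b else 0) else 0)
          - (if p = pidx b then (if q = pidx a then X (pidx b) (pidx a) else 0) else 0)"
      unfolding Fm_def e1 e2 by (cases "p = a"; cases "q = b"; cases "p = pidx b"; cases "q = pidx a"; simp)
  qed
  also have "\<dots> = X a b - X (pidx b) (pidx a)" using True by (simp add: sum_subtractf pidx_lt sum_if_const)
  also have "\<dots> = 2 * X a b" using so8_skew[OF X, of a b] True by simp
  finally show ?thesis .
next
  case False
  have z: "Fm p q a b = 0" if "p < 8" "q < 8" for p q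
  proof -
    have n1: "(a = p \<and> b = q) = False" using False that by auto
    have n2: "(a = pidx q \<and> b = pidx p) = False" using False pidx_lt[of p] pidx_lt[of q] by auto
    show ?thesis unfolding Fm_def n1 n2 by simp
  qed
  have "(\<Sum>p<8. \<Sum>q<8. X p q * Fm p q a b) = (\<Sum>p<8::nat. \<Sum>q<8::nat. 0)"
    by (intro sum.cong refl) (simp add: z)
  moreover have "8 \<le> a \<or> 8 \<le> b" using False by auto
  ultimately show ?thesis using so8_supp[OF X, of a b] by simp
qed

lemma nform_comm: "nform X Y = nform Y X"
  unfolding nform_def by (subst sum.swap) (simp add: mult.commute)

lemma nform_F: assumes X: "X \<in> so8" and pq: "p < 8" "q < 8"
  shows "nform (Fm q p) X = X p q"
proof -
  have "(\<Sum>a<8. \<Sum>b<8. Fm q p a b * X b a)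
     = (\<Sum>a<8. \<Sum>b<8. (if a = q \<and> b = p then 1 else 0) * X b a)
       - (\<Sum>a<8. \<Sum>b<8. (if a = pidx p \<and> b = pidx q then 1 else 0) * X b a)"
    by (simp add: Fm_def left_diff_distrib sum_subtractf)
  also have "(\<Sum>a<8. \<Sum>b<8. (if a = q \<and> b = p then 1 else 0) * X b a)
      = (\<Sum>a<8. \<Sum>b<8. if a = q then (if b = p then X p q else 0) else 0)"
    by (intro sum.cong refl) simp
  also have "(\<Sum>a<8. \<Sum>b<8. (if a = pidx p \<and> b = pidx q then 1 else 0) * X b a)
      = (\<Sum>a<8. \<Sum>b<8. if a = pidx p then (if b = pidx q then X (pidx q) (pidx p) else 0) else 0)"
    by (intro sum.cong refl) simp
  also have "(\<Sum>a<8. \<Sum>b<8. if a = q then (if b = p then X p q else 0) else 0)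
     - (\<Sum>a<8. \<Sum>b<8. if a = pidx p then (if b = pidx q then X (pidx q) (pidx p) else 0) else 0)
     = X p q - X (pidx q) (pidx p)" using pq by (simp add: pidx_lt sum_if_const)
  also have "\<dots> = 2 * X p q" using so8_skew[OF X pq] by simp
  finally show ?thesis by (simp add: nform_def)
qed

lemma invariance: assumes Y: "Y \<in> so8" and "p < 8" "q < 8" "r < 8" "s < 8"
  shows "bracket (Fm q p) Y r s = - bracket (Fm s r) Y p q"
proof -
  have y1: "Y (pidx q) s = - Y (pidx s) q" using so8_skew[OF Y, of "pidx q" s] assms pidx_lt pidx_pidx by simp
  have y2: "Y r (pidx p) = - Y p (pidx r)" using so8_skew[OF Y, of r "pidx p"] assms pidx_lt pidx_pidx by simp
  have A1: "(if r = q then Y p s else 0) = (if q = r then Y p s else 0)" by (cases "r = q") simp_all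
  have A3: "(if s = p then Y r q else 0) = (if p = s then Y r q else 0)" by (cases "s = p") simp_all
  have A2: "(if r = pidx p then Y (pidx q) s else 0) = - (if p = pidx r then Y (pidx s) q else 0)"
    using pidx_eq_iff[of r p] assms y1 by (cases "r = pidx p") simp_all
  have A4: "(if s = pidx q then Y r (pidx p) else 0) = - (if q = pidx s then Y p (pidx r) else 0)"
    using pidx_eq_iff[of s q] assms y2 by (cases "s = pidx q") simp_all
  show ?thesis unfolding bracket_F[OF assms(3,2)] bracket_F[OF assms(5,4)] A1 A2 A3 A4
    by (simp add: algebra_simps)
qed

lemma casimir_central: assumes Y: "Y \<in> so8"
  shows "(\<Sum>p<8. \<Sum>q<8. nform (bracket (Fm p q) Y) (Fm q p)) = 0"
proof -
  have "(\<Sum>p<8. \<Sum>q<8. nform (bracket (Fm p q) Y) (Fm q p))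
     = (\<Sum>p<8. \<Sum>q<8. Y q q - (if p = pidx q then Y q q else 0) - Y p p + (if q = pidx p then Y p p else 0))"
  proof (intro sum.cong refl)
    fix p q assume pq: "p \<in> {..<8::nat}" "q \<in> {..<8::nat}"
    hence "nform (bracket (Fm p q) Y) (Fm q p) = bracket (Fm p q) Y p q"
      using nform_F[OF so8_bracket[OF so8_F Y]] by (simp add: nform_comm)
    moreover have e1: "(if p = pidx q then Y (pidx p) q else 0) = (if p = pidx q then Y q q else 0)"
      using pq pidx_pidx[of q] by (cases "p = pidx q") simp_all
    moreover have e2: "(if q = pidx p then Y p (pidx q) else 0) = (if q = pidx p then Y p p else 0)"
      using pq pidx_pidx[of p] by (cases "q = pidx p") simp_all
    ultimately show "nform (bracket (Fm p q) Y) (Fm q p) = Y q q - (if p = pidx q then Y q q else 0) - Y p p + (if q = pidx p then Y p p else 0)"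
      using pq by (simp only: bracket_F lessThan_iff if_True simp_thms)
  qed
  also have "\<dots> = 0"
  proof -
    have a: "(\<Sum>p<8. \<Sum>q<8. (if p = pidx q then Y q q else 0)) = 0"
      by (subst sum.swap) (simp add: pidx_lt trace0[OF Y])
    have b: "(\<Sum>p<8. \<Sum>q<8. (if q = pidx p then Y p p else 0)) = 0"
    proof -
      have "(\<Sum>p<8. \<Sum>q<8. (if q = pidx p then Y p p else 0)) = (\<Sum>p<8. Y p p)"
        by (intro sum.cong refl) (simp add: pidx_lt)
      thus ?thesis using trace0[OF Y] by simp
    qed
    have c: "(\<Sum>p<8::nat. \<Sum>q<8::nat. Y q q) = 0" using trace0[OF Y] by simp
    have d: "(\<Sum>p<8::nat. \<Sum>q<8::nat. Y p p) = 0"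
    proof -
      have "(\<Sum>p<8::nat. \<Sum>q<8::nat. Y p p) = (\<Sum>p<8::nat. 8 * Y p p)" by simp
      also have "\<dots> = 8 * (\<Sum>p<8::nat. Y p p)" by (simp add: sum_distrib_left)
      finally show ?thesis using trace0[OF Y] by simp
    qed
    show ?thesis by (simp only: sum.distrib sum_subtractf a b c d) simp
  qed
  finally show ?thesis .
qed

definition rho :: "nat \<Rightarrow> int" where
  "rho a = (if a < 4 then 3 - int a else if a < 8 then int a - 7 else 0)"

lemma rho_pidx: "a < 8 \<Longrightarrow> rho (pidx a) = - rho a"
  using less8_cases[of a] by (auto simp: rho_def pidx_def)

definition hom :: "int \<Rightarrow> mat \<Rightarrow> bool" where
  "hom h X \<longleftrightarrow> X \<in> so8 \<and> (\<forall>a b. X a b \<noteq> 0 \<longrightarrow> rho a - rho b = h)"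

lemma hom_F: "p < 8 \<Longrightarrow> q < 8 \<Longrightarrow> hom (rho p - rho q) (Fm p q)"
  unfolding hom_def using so8_F rho_pidx by (auto simp: Fm_def)

lemma hom_bracket: assumes X: "hom g X" and Y: "hom h Y" shows "hom (g + h) (bracket X Y)"
  unfolding hom_def
proof (intro conjI allI impI)
  show "bracket X Y \<in> so8" using X Y so8_bracket by (auto simp: hom_def)
  fix a b assume ne: "bracket X Y a b \<noteq> 0"
  show "rho a - rho b = g + h"
  proof (rule ccontr)
    assume cc: "rho a - rho b \<noteq> g + h"
    have h1: "X a c * Y c b = 0" for c
    proof (rule ccontr)
      assume "X a c * Y c b \<noteq> 0"
      hence "X a c \<noteq> 0" "Y c b \<noteq> 0" by auto
      hence "rho a - rho c = g" "rho c - rho b = h" using X Y by (auto simp: hom_def)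
      thus False using cc by simp
    qed
    have h2: "Y a c * X c b = 0" for c
    proof (rule ccontr)
      assume "Y a c * X c b \<noteq> 0"
      hence "Y a c \<noteq> 0" "X c b \<noteq> 0" by auto
      hence "rho a - rho c = h" "rho c - rho b = g" using X Y by (auto simp: hom_def)
      thus False using cc by simp
    qed
    have "bracket X Y a b = 0" by (simp add: bracket_def mmul_def h1 h2)
    thus False using ne by simp
  qed
qed

lemma hom_nform: assumes X: "hom g X" and Y: "hom h Y" and gh: "g + h \<noteq> 0" shows "nform X Y = 0"
proof -
  have h: "X a b * Y b a = 0" for a b
  proof (rule ccontr)
    assume "X a b * Y b a \<noteq> 0"
    hence "X a b \<noteq> 0" "Y b a \<noteq> 0" by auto
    hence "rho a - rho b = g" "rho b - rho a = h" using X Y by (auto simp: hom_def)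
    thus False using gh by simp
  qed
  show ?thesis by (simp add: nform_def h)
qed


lemma rho_eq_cases: "a < 8 \<Longrightarrow> b < 8 \<Longrightarrow> a \<noteq> b \<Longrightarrow> rho a = rho b \<Longrightarrow> (a = 3 \<and> b = 7) \<or> (a = 7 \<and> b = 3)"
  using less8_cases[of a] less8_cases[of b] by (auto simp: rho_def)

lemma pidx_hi: "4 \<le> a \<Longrightarrow> a < 8 \<Longrightarrow> pidx a = a - 4"
  using less8_cases[of a] by (auto simp: pidx_def)

lemma hom0_cartan: assumes X: "hom 0 X" shows "X = cartan (\<lambda>j. X j j)"
proof (intro ext)
  fix a b
  have so: "X \<in> so8" using X by (simp add: hom_def)
  have off: "X a b = 0" if ab: "a < 8" "b < 8" "a \<noteq> b"
  proof (cases "rho a = rho b")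
    case False thus ?thesis using X by (auto simp: hom_def)
  next
    case True
    have x37: "X 3 7 = 0" using so8_skew[OF so, of 3 7] by (simp add: pidx_def)
    have x73: "X 7 3 = 0" using so8_skew[OF so, of 7 3] by (simp add: pidx_def)
    show ?thesis using rho_eq_cases[OF ab True] x37 x73 by auto
  qed
  show "X a b = cartan (\<lambda>j. X j j) a b"
  proof (cases "a < 8 \<and> b < 8")
    case False
    hence "X a b = 0" using so8_supp[OF so, of a b] by auto
    thus ?thesis using False by (auto simp: cartan_def)
  next
    case True
    show ?thesis
    proof (cases "a = b")
      case False thus ?thesis using off True by (simp add: cartan_def)
    next
      case eq: True
      show ?thesis
      proof (cases "a < 4")
        case True thus ?thesis using eq by (simp add: cartan_def)
      next
        case False
        have "X a a = - X (pidx a) (pidx a)" using so8_skew[OF so, of a a] \<open>a < 8 \<and> b < 8\<close> by simp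
        thus ?thesis using eq False \<open>a < 8 \<and> b < 8\<close> pidx_hi[of a] by (simp add: cartan_def)
      qed
    qed
  qed
qed

lemma hom0_cartan_sub: "hom 0 X \<Longrightarrow> X \<in> cartan_sub"
  unfolding cartan_sub_def using hom0_cartan by blast

lemma hom_pos_nplus: assumes X: "hom h X" and h: "h > 0" shows "X \<in> nplus"
proof -
  have so: "X \<in> so8" using X by (simp add: hom_def)
  have d: "X a b \<noteq> 0 \<Longrightarrow> rho a - rho b = h" for a b using X by (simp add: hom_def)
  have 1: "X a b = 0" if "a < 4" "b < 4" "b \<le> a" for a b
  proof (rule ccontr)
    assume "X a b \<noteq> 0" hence "rho a - rho b = h" by (rule d)
    thus False using that h by (simp add: rho_def)
  qed
  have 2: "X a b = 0" if "4 \<le> a" "a < 8" "b < 4" for a b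
  proof (rule ccontr)
    assume "X a b \<noteq> 0" hence "rho a - rho b = h" by (rule d)
    thus False using that h by (simp add: rho_def)
  qed
  show ?thesis unfolding nplus_def using so 1 2 by blast
qed

definition dg :: "(nat \<Rightarrow> complex) \<Rightarrow> nat \<Rightarrow> complex" where
  "dg x a = (if a < 4 then x a else if a < 8 then - x (a - 4) else 0)"

lemma cartan_dg: "cartan x a c = (if a = c then dg x a else 0)"
  by (auto simp: cartan_def dg_def)

lemma mmul_cartan_left: "mmul (cartan x) X a b = dg x a * X a b"
proof (cases "a < 8")
  case True
  have "mmul (cartan x) X a b = (\<Sum>c<8. if c = a then dg x a * X a b else 0)"
    unfolding mmul_def cartan_dg by (intro sum.cong refl) auto
  thus ?thesis using True by simp
next
  case False
  hence "cartan x a c = 0" for c by (simp add: cartan_dg dg_def)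
  thus ?thesis using False by (simp add: mmul_def dg_def)
qed

lemma mmul_cartan_right: "mmul X (cartan x) a b = X a b * dg x b"
proof (cases "b < 8")
  case True
  have "mmul X (cartan x) a b = (\<Sum>c<8. if c = b then X a b * dg x b else 0)"
    unfolding mmul_def cartan_dg by (intro sum.cong refl) auto
  thus ?thesis using True by simp
next
  case False
  hence "cartan x c b = 0" for c by (simp add: cartan_dg dg_def)
  thus ?thesis using False by (simp add: mmul_def dg_def)
qed

lemma bracket_cartan: "bracket (cartan x) X a b = (dg x a - dg x b) * X a b"
  by (simp add: bracket_def mmul_cartan_left mmul_cartan_right algebra_simps)

definition rhoc :: mat where "rhoc = cartan (\<lambda>j. of_int (rho j))"

lemma dg_rho: "dg (\<lambda>j. of_int (rho j)) a = of_int (rho a)"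
  by (auto simp: dg_def rho_def of_nat_diff)

lemma bracket_rhoc: assumes X: "hom h X" shows "bracket rhoc X = (\<lambda>a b. of_int h * X a b)"
proof (intro ext)
  fix a b
  have "bracket rhoc X a b = of_int (rho a - rho b) * X a b"
    unfolding rhoc_def bracket_cartan dg_rho by simp
  show "bracket rhoc X a b = of_int h * X a b"
  proof (cases "X a b = 0")
    case True thus ?thesis using \<open>bracket rhoc X a b = _\<close> by simp
  next
    case False hence "rho a - rho b = h" using X by (simp add: hom_def)
    thus ?thesis using \<open>bracket rhoc X a b = _\<close> by simp
  qed
qed

lemma rhoc_cartan: "rhoc \<in> cartan_sub" by (simp add: rhoc_def cartan_sub_def)

lemma cartan_so8: "cartan x \<in> so8"
proof (rule so8I)
  show "supp8 (cartan x)" by (auto simp: supp8_def cartan_def)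
  fix a b :: nat assume ab: "a < 8" "b < 8"
  show "cartan x a b = - cartan x (pidx b) (pidx a)"
  proof -
    have dp: "dg x (pidx c) = - dg x c" if "c < 8" for c
      using less8_cases[OF that] by (auto simp: dg_def pidx_def)
    show ?thesis unfolding cartan_dg pidx_inj[OF ab(2) ab(1)]
      by (cases "a = b") (simp_all add: dp ab)
  qed
qed

lemma hom_cartan: "hom 0 (cartan x)"
  unfolding hom_def using cartan_so8 by (auto simp: cartan_dg split: if_splits)


inductive_set cspan :: "(complex \<Rightarrow> 'm::ab_group_add \<Rightarrow> 'm) \<Rightarrow> 'm set \<Rightarrow> 'm set" for sc S where
  cspan_zero: "0 \<in> cspan sc S"
| cspan_base: "x \<in> S \<Longrightarrow> x \<in> cspan sc S"
| cspan_add: "x \<in> cspan sc S \<Longrightarrow> y \<in> cspan sc S \<Longrightarrow> x + y \<in> cspan sc S"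
| cspan_sc: "x \<in> cspan sc S \<Longrightarrow> sc c x \<in> cspan sc S"

lemma cspan_mono: "S \<subseteq> T \<Longrightarrow> cspan sc S \<subseteq> cspan sc T"
proof
  fix x assume S: "S \<subseteq> T" and x: "x \<in> cspan sc S"
  from x show "x \<in> cspan sc T" by (induction rule: cspan.induct) (use S in \<open>auto intro: cspan.intros\<close>)
qed

lemma cspan_sub: "S \<subseteq> cspan sc T \<Longrightarrow> cspan sc S \<subseteq> cspan sc T"
proof
  fix x assume S: "S \<subseteq> cspan sc T" and x: "x \<in> cspan sc S"
  from x show "x \<in> cspan sc T" by (induction rule: cspan.induct) (use S in \<open>auto intro: cspan.intros\<close>)
qed

lemma cspan_image:
  assumes add: "\<And>x y. f (x + y) = f x + f y" and scl: "\<And>c x. f (sc c x) = sc' c (f x)" and z: "f 0 = 0"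
  shows "x \<in> cspan sc S \<Longrightarrow> f x \<in> cspan sc' (f ` S)"
proof (induction rule: cspan.induct)
  case cspan_zero thus ?case using z by (simp add: cspan.cspan_zero)
next
  case (cspan_base x) thus ?case by (simp add: cspan.cspan_base)
next
  case (cspan_add x y) thus ?case using add by (simp add: cspan.cspan_add)
next
  case (cspan_sc x c) thus ?case using scl by (simp add: cspan.cspan_sc)
qed

lemma cspan_list:
  assumes "x \<in> cspan sc {f z | z. P z}" and cv: "cvs sc"
  shows "\<exists>l. (\<forall>cz\<in>set l. P (snd cz)) \<and> x = sum_list (map (\<lambda>cz. sc (fst cz) (f (snd cz))) l)"
  using assms(1)
proof (induction rule: cspan.induct)
  case cspan_zero show ?case by (rule exI[of _ "[]"]) simp
next
  case (cspan_base x)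
  then obtain z where "x = f z" "P z" by auto
  moreover have "sc 1 (f z) = f z" using cv by (simp add: cvs_def)
  ultimately show ?case by (intro exI[of _ "[(1, z)]"]) simp
next
  case (cspan_add x y)
  then obtain l1 l2 where "\<forall>cz\<in>set l1. P (snd cz)" "x = sum_list (map (\<lambda>cz. sc (fst cz) (f (snd cz))) l1)"
    "\<forall>cz\<in>set l2. P (snd cz)" "y = sum_list (map (\<lambda>cz. sc (fst cz) (f (snd cz))) l2)" by blast
  thus ?case by (intro exI[of _ "l1 @ l2"]) auto
next
  case (cspan_sc x c)
  then obtain l where l: "\<forall>cz\<in>set l. P (snd cz)" "x = sum_list (map (\<lambda>cz. sc (fst cz) (f (snd cz))) l)" by blast
  have sz: "sc c 0 = 0" using cv unfolding cvs_def by (metis add_cancel_right_right)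
  have "sc c (sum_list (map (\<lambda>cz. sc (fst cz) (f (snd cz))) l))
      = sum_list (map (\<lambda>cz. sc (c * fst cz) (f (snd cz))) l)"
    by (induction l) (use cv sz in \<open>auto simp: cvs_def\<close>)
  thus ?case using l by (intro exI[of _ "map (\<lambda>cz. (c * fst cz, snd cz)) l"]) (auto simp: comp_def)
qed


lemma so8_msum: "finite I \<Longrightarrow> (\<forall>i\<in>I. X i \<in> so8) \<Longrightarrow> (\<lambda>a b. \<Sum>i\<in>I. X i a b) \<in> so8"
proof (induction I rule: finite_induct)
  case empty thus ?case using so8_zero by simp
next
  case (insert i I)
  have "(\<lambda>a b. \<Sum>i\<in>insert i I. X i a b) = (\<lambda>a b. X i a b + (\<lambda>a b. \<Sum>i\<in>I. X i a b) a b)"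
    using insert by simp
  thus ?case using insert so8_add by simp
qed

type_synonym letter = "mat \<times> int \<times> int"

primrec wapp :: "(mat \<Rightarrow> int \<Rightarrow> 'm \<Rightarrow> 'm) \<Rightarrow> letter list \<Rightarrow> 'm \<Rightarrow> 'm" where
  "wapp act [] v = v"
| "wapp act (l # w) v = act (fst l) (fst (snd l)) (wapp act w v)"

definition homw :: "letter list \<Rightarrow> bool" where
  "homw w \<longleftrightarrow> (\<forall>l\<in>set w. hom (snd (snd l)) (fst l))"
definition loww :: "letter list \<Rightarrow> bool" where
  "loww w \<longleftrightarrow> (\<forall>l\<in>set w. fst (snd l) < 0 \<or> (fst (snd l) = 0 \<and> snd (snd l) < 0))"
definition msum :: "letter list \<Rightarrow> int" where
  "msum w = sum_list (map (\<lambda>l. fst (snd l)) w)"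
definition hsum :: "letter list \<Rightarrow> int" where
  "hsum w = sum_list (map (\<lambda>l. snd (snd l)) w)"

lemma homw_simps[simp]: "homw []" "homw (l # w) \<longleftrightarrow> hom (snd (snd l)) (fst l) \<and> homw w"
  by (auto simp: homw_def)
lemma loww_simps[simp]: "loww []" "loww (l # w) \<longleftrightarrow> (fst (snd l) < 0 \<or> (fst (snd l) = 0 \<and> snd (snd l) < 0)) \<and> loww w"
  by (auto simp: loww_def)
lemma msum_simps[simp]: "msum [] = 0" "msum (l # w) = fst (snd l) + msum w"
  by (auto simp: msum_def)
lemma hsum_simps[simp]: "hsum [] = 0" "hsum (l # w) = snd (snd l) + hsum w"
  by (auto simp: hsum_def)
lemma wapp_append: "wapp act (w1 @ w2) v = wapp act w1 (wapp act w2 v)"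
  by (induction w1) auto
lemma homw_append[simp]: "homw (w1 @ w2) \<longleftrightarrow> homw w1 \<and> homw w2" by (auto simp: homw_def)
lemma loww_append[simp]: "loww (w1 @ w2) \<longleftrightarrow> loww w1 \<and> loww w2" by (auto simp: loww_def)
lemma msum_append[simp]: "msum (w1 @ w2) = msum w1 + msum w2" by (simp add: msum_def)
lemma hsum_append[simp]: "hsum (w1 @ w2) = hsum w1 + hsum w2" by (simp add: hsum_def)

locale affm =
  fixes sc :: "complex \<Rightarrow> 'm::ab_group_add \<Rightarrow> 'm" and act :: "mat \<Rightarrow> int \<Rightarrow> 'm \<Rightarrow> 'm" and k :: complex
  assumes aff: "aff_module sc act k"
begin

lemma cv: "cvs sc" using aff by (simp add: aff_module_def)
lemma sc_one[simp]: "sc 1 v = v" using cv by (simp add: cvs_def)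
lemma sc_mult[simp]: "sc a (sc b v) = sc (a * b) v" using cv by (simp add: cvs_def)
lemma sc_addl: "sc (a + b) v = sc a v + sc b v" using cv by (simp add: cvs_def)
lemma sc_addr: "sc a (v + w) = sc a v + sc a w" using cv by (simp add: cvs_def)
lemma sc_zero[simp]: "sc 0 v = 0"
proof -
  have "sc 0 v = sc 0 v + sc 0 v" using sc_addl[of 0 0 v] by simp
  thus ?thesis by simp
qed
lemma sc_zero_r[simp]: "sc c 0 = 0"
proof -
  have "sc c 0 = sc c 0 + sc c 0" using sc_addr[of c 0 0] by simp
  thus ?thesis by simp
qed
lemma sc_neg_r: "sc c (- v) = - sc c v"
proof -
  have "sc c v + sc c (- v) = 0" using sc_addr[of c v "- v"] by simp
  thus ?thesis by (simp add: eq_neg_iff_add_eq_0 add.commute)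
qed
lemma sc_neg_l: "sc (- c) v = - sc c v"
proof -
  have "sc c v + sc (- c) v = 0" using sc_addl[of c "- c" v] by simp
  thus ?thesis by (simp add: eq_neg_iff_add_eq_0 add.commute)
qed
lemma sc_diff_r: "sc c (v - w) = sc c v - sc c w"
  using sc_addr[of c v "- w"] sc_neg_r by simp
lemma sc_diff_l: "sc (a - b) v = sc a v - sc b v"
  using sc_addl[of a "- b" v] sc_neg_l by simp
lemma sc_sum_r: "sc c (sum f A) = (\<Sum>i\<in>A. sc c (f i))"
  by (induction A rule: infinite_finite_induct) (auto simp: sc_addr)
lemma sc_sum_l: "sc (sum f A) v = (\<Sum>i\<in>A. sc (f i) v)"
  by (induction A rule: infinite_finite_induct) (auto simp: sc_addl)
lemma sc_cancel: "sc c v = 0 \<Longrightarrow> c \<noteq> 0 \<Longrightarrow> v = 0"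
proof -
  assume "sc c v = 0" "c \<noteq> 0"
  hence "sc (1 / c) (sc c v) = 0" by simp
  thus "v = 0" using \<open>c \<noteq> 0\<close> by simp
qed

lemma act_add: "X \<in> so8 \<Longrightarrow> act X n (v + w) = act X n v + act X n w"
  using aff by (simp add: aff_module_def)
lemma act_scv: "X \<in> so8 \<Longrightarrow> act X n (sc c v) = sc c (act X n v)"
  using aff by (simp add: aff_module_def)
lemma act_0: "X \<in> so8 \<Longrightarrow> act X n 0 = 0"
  using act_scv[of X n 0 0] by simp
lemma act_neg: "X \<in> so8 \<Longrightarrow> act X n (- v) = - act X n v"
proof -
  assume X: "X \<in> so8"
  have "act X n v + act X n (- v) = 0" using act_add[OF X, of n v "- v"] act_0[OF X] by simp
  thus ?thesis by (simp add: eq_neg_iff_add_eq_0 add.commute)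
qed
lemma act_diff: "X \<in> so8 \<Longrightarrow> act X n (v - w) = act X n v - act X n w"
  using act_add[of X n v "- w"] act_neg by simp
lemma act_sum: "X \<in> so8 \<Longrightarrow> act X n (sum f A) = (\<Sum>i\<in>A. act X n (f i))"
  by (induction A rule: infinite_finite_induct) (auto simp: act_add act_0)
lemma act_madd: "X \<in> so8 \<Longrightarrow> Y \<in> so8 \<Longrightarrow> act (\<lambda>a b. X a b + Y a b) n v = act X n v + act Y n v"
  using aff by (simp add: aff_module_def)
lemma act_mscale: "X \<in> so8 \<Longrightarrow> act (\<lambda>a b. c * X a b) n v = sc c (act X n v)"
  using aff by (simp add: aff_module_def)
lemma act_mzero: "act (\<lambda>a b. 0) n v = 0"
  using act_mscale[OF so8_zero, of 0 n v] by simp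
lemma act_msum: "finite I \<Longrightarrow> (\<forall>i\<in>I. X i \<in> so8) \<Longrightarrow> act (\<lambda>a b. \<Sum>i\<in>I. X i a b) n v = (\<Sum>i\<in>I. act (X i) n v)"
proof (induction I rule: finite_induct)
  case empty thus ?case using act_mzero by simp
next
  case (insert i I)
  have "(\<lambda>a b. \<Sum>i\<in>insert i I. X i a b) = (\<lambda>a b. X i a b + (\<lambda>a b. \<Sum>i\<in>I. X i a b) a b)"
    using insert by simp
  hence "act (\<lambda>a b. \<Sum>i\<in>insert i I. X i a b) n v = act (X i) n v + act (\<lambda>a b. \<Sum>i\<in>I. X i a b) n v"
    using act_madd[of "X i" "\<lambda>a b. \<Sum>i\<in>I. X i a b"] so8_msum[of I X] insert by simp
  thus ?case using insert by simp
qed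

lemma comm: "X \<in> so8 \<Longrightarrow> Y \<in> so8 \<Longrightarrow> act X m (act Y n v) = act Y n (act X m v) + act (bracket X Y) (m + n) v
   + (if m + n = 0 then sc (of_int m * nform X Y * k) v else 0)"
proof -
  assume X: "X \<in> so8" and Y: "Y \<in> so8"
  have "act X m (act Y n v) - act Y n (act X m v) = act (bracket X Y) (m + n) v
     + (if m + n = 0 then sc (of_int m * nform X Y * k) v else 0)"
    using aff X Y unfolding aff_module_def by blast
  hence "act X m (act Y n v) = (act (bracket X Y) (m + n) v
     + (if m + n = 0 then sc (of_int m * nform X Y * k) v else 0)) + act Y n (act X m v)"
    by (simp add: diff_eq_eq)
  thus ?thesis by (simp add: ac_simps)
qed

lemma act_expand: assumes X: "X \<in> so8"
  shows "act X n v = sc (1/2) (\<Sum>p<8. \<Sum>q<8. sc (X p q) (act (Fm p q) n v))"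
proof -
  define Mpq where "Mpq p q = (\<lambda>a b. X p q * Fm p q a b)" for p q
  define Mp where "Mp p = (\<lambda>a b. \<Sum>q<8. Mpq p q a b)" for p
  define M where "M = (\<lambda>a b. \<Sum>p<8. Mp p a b)"
  have Mpq_so: "Mpq p q \<in> so8" if "p < 8" "q < 8" for p q
    unfolding Mpq_def using so8_scale[OF so8_F[OF that]] .
  have Mp_so: "Mp p \<in> so8" if "p < 8" for p
    unfolding Mp_def using so8_msum[of "{..<8}" "Mpq p"] Mpq_so that by simp
  have M_so: "M \<in> so8" unfolding M_def using so8_msum[of "{..<8}" Mp] Mp_so by simp
  have e: "X = (\<lambda>a b. (1/2) * M a b)"
  proof (intro ext)
    fix a b
    have "M a b = 2 * X a b" unfolding M_def Mp_def Mpq_def using expansion[OF X, of a b] by simp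
    thus "X a b = (1/2) * M a b" by simp
  qed
  have "act X n v = sc (1/2) (act M n v)" by (subst e) (rule act_mscale[OF M_so])
  also have "act M n v = (\<Sum>p<8. act (Mp p) n v)"
    unfolding M_def by (rule act_msum) (simp_all add: Mp_so)
  also have "\<dots> = (\<Sum>p<8. \<Sum>q<8. act (Mpq p q) n v)"
  proof (rule sum.cong[OF refl])
    fix p assume "p \<in> {..<8::nat}"
    thus "act (Mp p) n v = (\<Sum>q<8. act (Mpq p q) n v)"
      unfolding Mp_def by (intro act_msum) (simp_all add: Mpq_so)
  qed
  also have "\<dots> = (\<Sum>p<8. \<Sum>q<8. sc (X p q) (act (Fm p q) n v))"
    by (intro sum.cong refl) (simp add: Mpq_def act_mscale so8_F)
  finally show ?thesis .
qed

definition LS :: "'m set \<Rightarrow> int \<Rightarrow> int \<Rightarrow> 'm set" where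
  "LS U m h = cspan sc {wapp act w u | w u. u \<in> U \<and> homw w \<and> loww w \<and> msum w = m \<and> hsum w = h}"

lemma act_cspan: "X \<in> so8 \<Longrightarrow> x \<in> cspan sc S \<Longrightarrow> act X n x \<in> cspan sc (act X n ` S)"
  by (rule cspan_image[where f="act X n"]) (simp_all add: act_add act_scv act_0)

lemma LS_gen: "u \<in> U \<Longrightarrow> homw w \<Longrightarrow> loww w \<Longrightarrow> wapp act w u \<in> LS U (msum w) (hsum w)"
  unfolding LS_def by (rule cspan_base) blast

lemma LS_act: assumes X: "hom g X" and low: "n < 0 \<or> (n = 0 \<and> g < 0)" and x: "x \<in> LS U m h"
  shows "act X n x \<in> LS U (n + m) (g + h)"
proof -
  have so: "X \<in> so8" using X by (simp add: hom_def)
  have "act X n x \<in> cspan sc (act X n ` {wapp act w u | w u. u \<in> U \<and> homw w \<and> loww w \<and> msum w = m \<and> hsum w = h})"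
    using act_cspan[OF so] x unfolding LS_def by blast
  also have "\<dots> \<subseteq> LS U (n + m) (g + h)"
    unfolding LS_def
  proof (rule cspan_mono, rule subsetI)
    fix y assume "y \<in> act X n ` {wapp act w u | w u. u \<in> U \<and> homw w \<and> loww w \<and> msum w = m \<and> hsum w = h}"
    then obtain w u where wu: "u \<in> U" "homw w" "loww w" "msum w = m" "hsum w = h" "y = act X n (wapp act w u)"
      by blast
    hence "y = wapp act ((X, n, g) # w) u \<and> homw ((X, n, g) # w) \<and> loww ((X, n, g) # w)
       \<and> msum ((X, n, g) # w) = n + m \<and> hsum ((X, n, g) # w) = g + h"
      using X low by simp
    thus "y \<in> {wapp act w u | w u. u \<in> U \<and> homw w \<and> loww w \<and> msum w = n + m \<and> hsum w = g + h}"
      using wu by blast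
  qed
  finally show ?thesis .
qed

lemma LS_add: "x \<in> LS U m h \<Longrightarrow> y \<in> LS U m h \<Longrightarrow> x + y \<in> LS U m h"
  unfolding LS_def by (rule cspan_add)
lemma LS_sc: "x \<in> LS U m h \<Longrightarrow> sc c x \<in> LS U m h"
  unfolding LS_def by (rule cspan_sc)
lemma LS_zero: "0 \<in> LS U m h"
  unfolding LS_def by (rule cspan_zero)

lemma tri_step:
  assumes hyU: "\<forall>u\<in>U. \<forall>X n h. hom h X \<longrightarrow> (0 < n \<or> (n = 0 \<and> 0 < h)) \<longrightarrow> act X n u = 0"
    and UC: "\<forall>u\<in>U. \<forall>X. hom 0 X \<longrightarrow> act X 0 u \<in> cspan sc U"
  shows "homw w \<Longrightarrow> loww w \<Longrightarrow> u \<in> U \<Longrightarrow> hom g Y \<Longrightarrow> act Y m (wapp act w u) \<in> LS U (m + msum w) (g + hsum w)"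
proof (induction w arbitrary: Y m g)
  case Nil
  consider (lo) "m < 0 \<or> (m = 0 \<and> g < 0)" | (hi) "0 < m \<or> (m = 0 \<and> 0 < g)" | (ca) "m = 0 \<and> g = 0" by linarith
  thus ?case
  proof cases
    case lo
    have "wapp act [(Y, m, g)] u \<in> LS U (msum [(Y, m, g)]) (hsum [(Y, m, g)])"
      using Nil lo by (intro LS_gen) auto
    thus ?thesis by simp
  next
    case hi
    have "act Y m u = 0" using hyU Nil hi by blast
    thus ?thesis by (simp add: LS_zero)
  next
    case ca
    have "act Y 0 u \<in> cspan sc U" using UC Nil ca by auto
    moreover have "cspan sc U \<subseteq> LS U 0 0"
      unfolding LS_def by (rule cspan_mono) (force intro: exI[of _ "[]"])
    ultimately show ?thesis using ca by auto
  qed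
next
  case (Cons x w)
  obtain X n h where x: "x = (X, n, h)" by (cases x) auto
  have Xh: "hom h X" and xlow: "n < 0 \<or> (n = 0 \<and> h < 0)" and hw: "homw w" and lw: "loww w"
    using Cons.prems x by auto
  have Yh: "hom g Y" using Cons.prems by simp
  have soX: "X \<in> so8" and soY: "Y \<in> so8" using Xh Yh by (auto simp: hom_def)
  define z where "z = wapp act w u"
  show ?case
  proof (cases "m < 0 \<or> (m = 0 \<and> g < 0)")
    case True
    have "wapp act ((Y, m, g) # x # w) u \<in> LS U (msum ((Y, m, g) # x # w)) (hsum ((Y, m, g) # x # w))"
      using Cons.prems True by (intro LS_gen) auto
    thus ?thesis by simp
  next
    case False
    have eq: "act Y m (act X n z) = act X n (act Y m z) + act (bracket Y X) (m + n) z
       + (if m + n = 0 then sc (of_int m * nform Y X * k) z else 0)"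
      by (rule comm[OF soY soX])
    have t1: "act X n (act Y m z) \<in> LS U (m + msum (x # w)) (g + hsum (x # w))"
    proof -
      have "act Y m z \<in> LS U (m + msum w) (g + hsum w)" unfolding z_def using Cons.IH hw lw Cons.prems(3) Yh by blast
      from LS_act[OF Xh xlow this] show ?thesis using x by (simp add: ac_simps)
    qed
    have t2: "act (bracket Y X) (m + n) z \<in> LS U (m + msum (x # w)) (g + hsum (x # w))"
    proof -
      have "act (bracket Y X) (m + n) z \<in> LS U (m + n + msum w) (g + h + hsum w)"
        unfolding z_def using Cons.IH hw lw Cons.prems(3) hom_bracket[OF Yh Xh] by blast
      thus ?thesis using x by (simp add: ac_simps)
    qed
    have t3: "(if m + n = 0 then sc (of_int m * nform Y X * k) z else 0) \<in> LS U (m + msum (x # w)) (g + hsum (x # w))"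
    proof (cases "m + n = 0 \<and> g + h = 0")
      case True
      have "z \<in> LS U (msum w) (hsum w)" unfolding z_def using LS_gen Cons.prems(3) hw lw by blast
      hence "sc (of_int m * nform Y X * k) z \<in> LS U (msum w) (hsum w)" by (rule LS_sc)
      moreover have e1: "m + msum (x # w) = msum w" and e2: "g + hsum (x # w) = hsum w" using True x by simp_all
      ultimately show ?thesis using True unfolding e1 e2 by simp
    next
      case False
      have "(if m + n = 0 then sc (of_int m * nform Y X * k) z else 0) = 0"
        using False hom_nform[OF Yh Xh] by auto
      thus ?thesis by (simp add: LS_zero)
    qed
    have "act Y m (wapp act (x # w) u) = act Y m (act X n z)" using x z_def by simp
    thus ?thesis using eq t1 t2 t3 by (simp add: LS_add)
  qed
qed

lemma tri:
  assumes hyU: "\<forall>u\<in>U. \<forall>X n h. hom h X \<longrightarrow> (0 < n \<or> (n = 0 \<and> 0 < h)) \<longrightarrow> act X n u = 0"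
    and UC: "\<forall>u\<in>U. \<forall>X. hom 0 X \<longrightarrow> act X 0 u \<in> cspan sc U"
  shows "homw w \<Longrightarrow> u \<in> U \<Longrightarrow> wapp act w u \<in> LS U (msum w) (hsum w)"
proof (induction w)
  case Nil
  have "wapp act [] u \<in> LS U (msum []) (hsum [])" using Nil by (intro LS_gen) auto
  thus ?case by simp
next
  case (Cons x w)
  obtain Y m g where x: "x = (Y, m, g)" by (cases x) auto
  have Yh: "hom g Y" and hw: "homw w" using Cons.prems x by auto
  have soY: "Y \<in> so8" using Yh by (simp add: hom_def)
  have "act Y m (wapp act w u) \<in> cspan sc (act Y m ` {wapp act w' u' | w' u'. u' \<in> U \<and> homw w' \<and> loww w' \<and> msum w' = msum w \<and> hsum w' = hsum w})"
    using act_cspan[OF soY] Cons.IH[OF hw Cons.prems(2)] unfolding LS_def by blast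
  also have "\<dots> \<subseteq> LS U (m + msum w) (g + hsum w)"
    unfolding LS_def[of U "m + msum w"]
  proof (rule cspan_sub, rule subsetI)
    fix y assume "y \<in> act Y m ` {wapp act w' u' | w' u'. u' \<in> U \<and> homw w' \<and> loww w' \<and> msum w' = msum w \<and> hsum w' = hsum w}"
    then obtain w' u' where "u' \<in> U" "homw w'" "loww w'" "msum w' = msum w" "hsum w' = hsum w" "y = act Y m (wapp act w' u')"
      by blast
    note H = this
    have "act Y m (wapp act w' u') \<in> LS U (m + msum w') (g + hsum w')"
      by (rule tri_step[OF hyU UC]) (use H Yh in auto)
    thus "y \<in> cspan sc {wapp act w2 u2 | w2 u2. u2 \<in> U \<and> homw w2 \<and> loww w2 \<and> msum w2 = m + msum w \<and> hsum w2 = g + hsum w}"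
      using H unfolding LS_def by simp
  qed
  finally show ?case using x by simp
qed

end


lemma tele_nat: "(\<Sum>i<L. g i - g (i + d)) = (\<Sum>i<d. g i) - (\<Sum>i<d. g (L + i))"
  for g :: "nat \<Rightarrow> 'a::ab_group_add"
proof -
  define h where "h i = (\<Sum>j<d. g (i + j))" for i
  have hh: "g i - g (i + d) = h i - h (Suc i)" for i
  proof (cases d)
    case 0 thus ?thesis by (simp add: h_def)
  next
    case (Suc d')
    have "h i = g i + (\<Sum>j<d'. g (Suc i + j))" unfolding h_def Suc by (subst sum.lessThan_Suc_shift) simp
    moreover have "h (Suc i) = (\<Sum>j<d'. g (Suc i + j)) + g (Suc i + d')" unfolding h_def Suc by simp
    ultimately show ?thesis using Suc by (simp add: algebra_simps)
  qed
  have "(\<Sum>i<L. g i - g (i + d)) = (\<Sum>i<L. h i - h (Suc i))" by (simp add: hh)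
  also have "\<dots> = h 0 - h L" by (rule sum_lessThan_telescope')
  finally show ?thesis by (simp add: h_def)
qed

lemma sum_swap_pq: "(\<Sum>p<8::nat. \<Sum>q<8::nat. f p q) = (\<Sum>p<8::nat. \<Sum>q<8::nat. f q p)"
  by (rule sum.swap)

context affm begin

lemma act_msum2: "(\<And>(p::nat) (q::nat). p < 8 \<Longrightarrow> q < 8 \<Longrightarrow> Z p q \<in> so8) \<Longrightarrow>
  act (\<lambda>a b. \<Sum>p<8. \<Sum>q<8. Z p q a b) n v = (\<Sum>p<8. \<Sum>q<8. act (Z p q) n v)"
proof -
  assume Z: "\<And>p q. p < 8 \<Longrightarrow> q < 8 \<Longrightarrow> Z p q \<in> so8"
  define Mp where "Mp p = (\<lambda>a b. \<Sum>q<8. Z p q a b)" for p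
  have Mp_so: "Mp p \<in> so8" if "p < 8" for p
    unfolding Mp_def using so8_msum[of "{..<8}" "Z p"] Z that by simp
  have "act (\<lambda>a b. \<Sum>p<8. \<Sum>q<8. Z p q a b) n v = act (\<lambda>a b. \<Sum>p<8. Mp p a b) n v"
    by (simp add: Mp_def)
  also have "\<dots> = (\<Sum>p<8. act (Mp p) n v)" by (rule act_msum) (simp_all add: Mp_so)
  also have "\<dots> = (\<Sum>p<8. \<Sum>q<8. act (Z p q) n v)"
  proof (rule sum.cong[OF refl])
    fix p assume "p \<in> {..<8::nat}"
    thus "act (Mp p) n v = (\<Sum>q<8. act (Z p q) n v)"
      unfolding Mp_def by (intro act_msum) (simp_all add: Z)
  qed
  finally show ?thesis .
qed

lemma act_expand2: "X \<in> so8 \<Longrightarrow> (\<Sum>p<8. \<Sum>q<8. sc (X p q) (act (Fm p q) n v)) = sc 2 (act X n v)"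
  using act_expand[of X n v] by simp

definition Bop :: "int \<Rightarrow> 'm \<Rightarrow> 'm" where
  "Bop n x = (\<Sum>p<8. \<Sum>q<8. act (Fm p q) (- n) (act (Fm q p) n x))"
definition Sop :: "nat \<Rightarrow> 'm \<Rightarrow> 'm" where
  "Sop N x = (\<Sum>i<2 * N + 1. Bop (int i - int N) x)"
definition gb :: "int \<Rightarrow> 'm \<Rightarrow> bool" where
  "gb N x \<longleftrightarrow> (\<forall>n\<ge>N. \<forall>X\<in>so8. act X n x = 0)"
definition C0 :: complex where
  "C0 = (\<Sum>p<8. \<Sum>q<8. nform (Fm p q) (Fm q p))"
definition Gf :: "mat \<Rightarrow> int \<Rightarrow> int \<Rightarrow> 'm \<Rightarrow> 'm" where
  "Gf Y m j x = (\<Sum>p<8. \<Sum>q<8. act (bracket (Fm p q) Y) (m - j) (act (Fm q p) j x))"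

lemma brk_sum_zero: "(\<Sum>p<8. \<Sum>q<8. act (bracket (Fm p q) (Fm q p)) 0 x) = 0"
proof -
  let ?S = "(\<Sum>p<8. \<Sum>q<8. act (bracket (Fm p q) (Fm q p)) 0 x)"
  have "?S = (\<Sum>p<8. \<Sum>q<8. act (bracket (Fm q p) (Fm p q)) 0 x)" by (rule sum_swap_pq)
  also have "\<dots> = (\<Sum>p<8. \<Sum>q<8. - act (bracket (Fm p q) (Fm q p)) 0 x)"
  proof (intro sum.cong refl)
    fix p q assume pq: "p \<in> {..<8::nat}" "q \<in> {..<8::nat}"
    have "bracket (Fm q p) (Fm p q) = (\<lambda>a b. (-1) * bracket (Fm p q) (Fm q p) a b)"
      by (intro ext) (simp add: bracket_anti[of "Fm q p"])
    hence "act (bracket (Fm q p) (Fm p q)) 0 x = act (\<lambda>a b. (-1) * bracket (Fm p q) (Fm q p) a b) 0 x"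
      by (simp only:)
    also have "\<dots> = sc (-1) (act (bracket (Fm p q) (Fm q p)) 0 x)"
      by (rule act_mscale[OF so8_bracket[OF so8_F so8_F]]) (use pq in auto)
    finally have "act (bracket (Fm q p) (Fm p q)) 0 x = sc (-1) (act (bracket (Fm p q) (Fm q p)) 0 x)" .
    thus "act (bracket (Fm q p) (Fm p q)) 0 x = - act (bracket (Fm p q) (Fm q p)) 0 x"
      using sc_neg_l[of 1] by simp
  qed
  also have "\<dots> = - ?S" by (simp add: sum_negf)
  finally have "?S + ?S = 0" by (simp add: eq_neg_iff_add_eq_0)
  hence "sc 2 ?S = 0" using sc_addl[of 1 1 ?S] by simp
  thus ?thesis using sc_cancel by auto
qed

lemma Bop_neg: "Bop (- n) x = Bop n x + sc (of_int n * k * C0) x"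
proof -
  have "Bop (- n) x = (\<Sum>p<8. \<Sum>q<8. act (Fm q p) (- n) (act (Fm p q) n x)
      + act (bracket (Fm p q) (Fm q p)) 0 x + sc (of_int n * nform (Fm p q) (Fm q p) * k) x)"
    unfolding Bop_def
  proof (intro sum.cong refl)
    fix p q assume pq: "p \<in> {..<8::nat}" "q \<in> {..<8::nat}"
    show "act (Fm p q) (- (- n)) (act (Fm q p) (- n) x) = act (Fm q p) (- n) (act (Fm p q) n x)
      + act (bracket (Fm p q) (Fm q p)) 0 x + sc (of_int n * nform (Fm p q) (Fm q p) * k) x"
      using comm[OF so8_F so8_F, of p q q p n "- n" x] pq by simp
  qed
  also have "\<dots> = Bop n x + 0 + sc (of_int n * k * C0) x"
  proof -
    have 1: "(\<Sum>p<8. \<Sum>q<8. act (Fm q p) (- n) (act (Fm p q) n x)) = Bop n x"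
      unfolding Bop_def by (rule sum_swap_pq)
    have 3: "(\<Sum>p<8. \<Sum>q<8. sc (of_int n * nform (Fm p q) (Fm q p) * k) x) = sc (of_int n * k * C0) x"
      by (simp add: sc_sum_l C0_def sum_distrib_left sum_distrib_right algebra_simps)
    show ?thesis using 1 3 brk_sum_zero by (simp add: sum.distrib)
  qed
  finally show ?thesis by simp
qed

lemma block_swap: "(\<Sum>p<8::nat. \<Sum>q<8::nat. \<Sum>r<8::nat. \<Sum>s<8::nat. f p q r s)
   = (\<Sum>r<8::nat. \<Sum>s<8::nat. \<Sum>p<8::nat. \<Sum>q<8::nat. f p q r s)"
proof -
  have 1: "(\<Sum>p<8::nat. \<Sum>q<8::nat. \<Sum>r<8::nat. \<Sum>s<8::nat. f p q r s)
     = (\<Sum>p<8::nat. \<Sum>r<8::nat. \<Sum>q<8::nat. \<Sum>s<8::nat. f p q r s)"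
    by (rule sum.cong[OF refl], rule sum.swap)
  have 2: "(\<Sum>p<8::nat. \<Sum>r<8::nat. \<Sum>q<8::nat. \<Sum>s<8::nat. f p q r s)
     = (\<Sum>r<8::nat. \<Sum>p<8::nat. \<Sum>q<8::nat. \<Sum>s<8::nat. f p q r s)"
    by (rule sum.swap)
  have 3: "(\<Sum>r<8::nat. \<Sum>p<8::nat. \<Sum>q<8::nat. \<Sum>s<8::nat. f p q r s)
     = (\<Sum>r<8::nat. \<Sum>p<8::nat. \<Sum>s<8::nat. \<Sum>q<8::nat. f p q r s)"
    by (rule sum.cong[OF refl], rule sum.cong[OF refl], rule sum.swap)
  have 4: "(\<Sum>r<8::nat. \<Sum>p<8::nat. \<Sum>s<8::nat. \<Sum>q<8::nat. f p q r s)
     = (\<Sum>r<8::nat. \<Sum>s<8::nat. \<Sum>p<8::nat. \<Sum>q<8::nat. f p q r s)"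
    by (rule sum.cong[OF refl], rule sum.swap)
  show ?thesis using 1 2 3 4 by simp
qed

lemma Hinv: assumes Y: "Y \<in> so8"
  shows "(\<Sum>p<8. \<Sum>q<8. act (bracket (Fm p q) Y) a (act (Fm q p) b x))
     = - (\<Sum>p<8. \<Sum>q<8. act (Fm p q) a (act (bracket (Fm q p) Y) b x))"
proof -
  have inner: "(\<Sum>p<8. \<Sum>q<8. sc (bracket (Fm p q) Y r s) (act (Fm q p) b x))
      = - sc 2 (act (bracket (Fm s r) Y) b x)" if rs: "r < 8" "s < 8" for r s
  proof -
    have "(\<Sum>p<8. \<Sum>q<8. sc (bracket (Fm p q) Y r s) (act (Fm q p) b x))
        = (\<Sum>p<8. \<Sum>q<8. - sc (bracket (Fm s r) Y q p) (act (Fm q p) b x))"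
    proof (intro sum.cong refl)
      fix p q assume pq: "p \<in> {..<8::nat}" "q \<in> {..<8::nat}"
      have "bracket (Fm p q) Y r s = - bracket (Fm s r) Y q p"
        using invariance[OF Y, of q p r s] pq rs by simp
      thus "sc (bracket (Fm p q) Y r s) (act (Fm q p) b x) = - sc (bracket (Fm s r) Y q p) (act (Fm q p) b x)"
        by (simp add: sc_neg_l)
    qed
    also have "\<dots> = - (\<Sum>p<8. \<Sum>q<8. sc (bracket (Fm s r) Y q p) (act (Fm q p) b x))"
      by (simp add: sum_negf)
    also have "(\<Sum>p<8. \<Sum>q<8. sc (bracket (Fm s r) Y q p) (act (Fm q p) b x))
        = (\<Sum>p<8. \<Sum>q<8. sc (bracket (Fm s r) Y p q) (act (Fm p q) b x))"
      by (rule sum_swap_pq)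
    also have "\<dots> = sc 2 (act (bracket (Fm s r) Y) b x)"
      using act_expand2[OF so8_bracket[OF so8_F Y]] rs by simp
    finally show ?thesis .
  qed
  have "(\<Sum>p<8. \<Sum>q<8. act (bracket (Fm p q) Y) a (act (Fm q p) b x))
     = (\<Sum>p<8. \<Sum>q<8. sc (1/2) (\<Sum>r<8. \<Sum>s<8. sc (bracket (Fm p q) Y r s) (act (Fm r s) a (act (Fm q p) b x))))"
    by (intro sum.cong refl) (simp add: act_expand[OF so8_bracket[OF so8_F Y]])
  also have "\<dots> = sc (1/2) (\<Sum>p<8. \<Sum>q<8. \<Sum>r<8. \<Sum>s<8. sc (bracket (Fm p q) Y r s) (act (Fm r s) a (act (Fm q p) b x)))"
    by (simp add: sc_sum_r)
  also have "(\<Sum>p<8. \<Sum>q<8. \<Sum>r<8. \<Sum>s<8. sc (bracket (Fm p q) Y r s) (act (Fm r s) a (act (Fm q p) b x)))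
     = (\<Sum>r<8. \<Sum>s<8. \<Sum>p<8. \<Sum>q<8. sc (bracket (Fm p q) Y r s) (act (Fm r s) a (act (Fm q p) b x)))"
    by (rule block_swap)
  also have "\<dots> = (\<Sum>r<8. \<Sum>s<8. act (Fm r s) a (\<Sum>p<8. \<Sum>q<8. sc (bracket (Fm p q) Y r s) (act (Fm q p) b x)))"
    by (intro sum.cong refl) (simp add: act_sum act_scv so8_F)
  also have "\<dots> = (\<Sum>r<8. \<Sum>s<8. act (Fm r s) a (- sc 2 (act (bracket (Fm s r) Y) b x)))"
    by (intro sum.cong refl) (simp add: inner)
  also have "\<dots> = - sc 2 (\<Sum>r<8. \<Sum>s<8. act (Fm r s) a (act (bracket (Fm s r) Y) b x))"
    by (simp add: act_neg act_scv so8_F sc_sum_r sum_negf)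
  finally show ?thesis by (simp add: sc_neg_r)
qed

lemma Bop_pt: assumes Y: "Y \<in> so8" and pq: "p < 8" "q < 8"
  shows "act (Fm p q) (- n) (act (Fm q p) n (act Y m x))
   = act Y m (act (Fm p q) (- n) (act (Fm q p) n x)) + act (bracket (Fm p q) Y) (m - n) (act (Fm q p) n x)
     + act (Fm p q) (- n) (act (bracket (Fm q p) Y) (n + m) x)
     + (if n + m = 0 then sc (of_int n * nform (Fm q p) Y * k) (act (Fm p q) (- n) x) else 0)
     + (if m = n then sc (of_int (- n) * nform (Fm p q) Y * k) (act (Fm q p) n x) else 0)"
proof -
  have Fpq: "Fm p q \<in> so8" and Fqp: "Fm q p \<in> so8" using so8_F pq by auto
  have c1: "act (Fm q p) n (act Y m x) = act Y m (act (Fm q p) n x) + act (bracket (Fm q p) Y) (n + m) x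
     + (if n + m = 0 then sc (of_int n * nform (Fm q p) Y * k) x else 0)"
    by (rule comm[OF Fqp Y])
  have c2: "act (Fm p q) (- n) (act Y m (act (Fm q p) n x)) = act Y m (act (Fm p q) (- n) (act (Fm q p) n x))
     + act (bracket (Fm p q) Y) (- n + m) (act (Fm q p) n x)
     + (if - n + m = 0 then sc (of_int (- n) * nform (Fm p q) Y * k) (act (Fm q p) n x) else 0)"
    by (rule comm[OF Fpq Y])
  have c3: "act (Fm p q) (- n) (if n + m = 0 then sc (of_int n * nform (Fm q p) Y * k) x else 0)
     = (if n + m = 0 then sc (of_int n * nform (Fm q p) Y * k) (act (Fm p q) (- n) x) else 0)"
    by (simp add: act_scv[OF Fpq] act_0[OF Fpq])
  have e: "- n + m = m - n" "(- n + m = 0) = (m = n)" by auto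
  show ?thesis unfolding c1 act_add[OF Fpq] c2 c3 e by (simp add: ac_simps)
qed

lemma Bop_comm: assumes Y: "Y \<in> so8"
  shows "Bop n (act Y m x) = act Y m (Bop n x) + Gf Y m n x - Gf Y m (n + m) x
     + (if n + m = 0 then sc (2 * of_int n * k) (act Y m x) else 0)
     + (if m = n then sc (- 2 * of_int n * k) (act Y m x) else 0)"
proof -
  have "Bop n (act Y m x) = (\<Sum>p<8. \<Sum>q<8.
      act Y m (act (Fm p q) (- n) (act (Fm q p) n x)) + act (bracket (Fm p q) Y) (m - n) (act (Fm q p) n x)
     + act (Fm p q) (- n) (act (bracket (Fm q p) Y) (n + m) x)
     + (if n + m = 0 then sc (of_int n * nform (Fm q p) Y * k) (act (Fm p q) (- n) x) else 0)
     + (if m = n then sc (of_int (- n) * nform (Fm p q) Y * k) (act (Fm q p) n x) else 0))"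
    unfolding Bop_def by (intro sum.cong refl) (simp add: Bop_pt[OF Y])
  also have "\<dots> = act Y m (Bop n x) + Gf Y m n x + (- Gf Y m (n + m) x)
     + (if n + m = 0 then sc (2 * of_int n * k) (act Y m x) else 0)
     + (if m = n then sc (- 2 * of_int n * k) (act Y m x) else 0)"
  proof -
    have s1: "(\<Sum>p<8. \<Sum>q<8. act Y m (act (Fm p q) (- n) (act (Fm q p) n x))) = act Y m (Bop n x)"
      unfolding Bop_def by (simp add: act_sum[OF Y])
    have s2: "(\<Sum>p<8. \<Sum>q<8. act (bracket (Fm p q) Y) (m - n) (act (Fm q p) n x)) = Gf Y m n x"
      unfolding Gf_def ..
    have s3: "(\<Sum>p<8. \<Sum>q<8. act (Fm p q) (- n) (act (bracket (Fm q p) Y) (n + m) x)) = - Gf Y m (n + m) x"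
      unfolding Gf_def using Hinv[OF Y, of "- n" "n + m" x] by simp
    have s4: "(\<Sum>p<8. \<Sum>q<8. (if n + m = 0 then sc (of_int n * nform (Fm q p) Y * k) (act (Fm p q) (- n) x) else 0))
        = (if n + m = 0 then sc (2 * of_int n * k) (act Y m x) else 0)"
    proof (cases "n + m = 0")
      case True
      have "(\<Sum>p<8. \<Sum>q<8. sc (of_int n * nform (Fm q p) Y * k) (act (Fm p q) (- n) x))
          = (\<Sum>p<8. \<Sum>q<8. sc (of_int n * k) (sc (Y p q) (act (Fm p q) (- n) x)))"
        by (intro sum.cong refl) (simp add: nform_F[OF Y] ac_simps)
      also have "\<dots> = sc (of_int n * k) (sc 2 (act Y (- n) x))"
        by (simp only: sc_sum_r[symmetric] act_expand2[OF Y])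
      finally show ?thesis using True by (simp add: ac_simps eq_neg_iff_add_eq_0[symmetric])
    next
      case False thus ?thesis by simp
    qed
    have s5: "(\<Sum>p<8. \<Sum>q<8. (if m = n then sc (of_int (- n) * nform (Fm p q) Y * k) (act (Fm q p) n x) else 0))
        = (if m = n then sc (- 2 * of_int n * k) (act Y m x) else 0)"
    proof (cases "m = n")
      case True
      have "(\<Sum>p<8. \<Sum>q<8. sc (of_int (- n) * nform (Fm p q) Y * k) (act (Fm q p) n x))
          = (\<Sum>p<8. \<Sum>q<8. sc (of_int (- n) * k) (sc (Y q p) (act (Fm q p) n x)))"
        by (intro sum.cong refl) (simp add: nform_F[OF Y] ac_simps)
      also have "\<dots> = (\<Sum>p<8. \<Sum>q<8. sc (of_int (- n) * k) (sc (Y p q) (act (Fm p q) n x)))"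
        by (rule sum_swap_pq)
      also have "\<dots> = sc (of_int (- n) * k) (sc 2 (act Y n x))"
        by (simp only: sc_sum_r[symmetric] act_expand2[OF Y])
      finally show ?thesis using True by (simp add: ac_simps)
    next
      case False thus ?thesis by simp
    qed
    show ?thesis using s1 s2 s3 s4 s5 by (simp add: sum.distrib)
  qed
  finally show ?thesis by simp
qed

lemma gb_act: assumes x: "gb N x" and N: "N \<ge> 1" and Y: "Y \<in> so8" shows "gb (N + \<bar>m\<bar>) (act Y m x)"
  unfolding gb_def
proof (intro allI impI ballI)
  fix n X assume n: "n \<ge> N + \<bar>m\<bar>" and X: "X \<in> so8"
  have 1: "act X n x = 0" using x n X unfolding gb_def by auto
  have 2: "act (bracket X Y) (n + m) x = 0" using x n so8_bracket[OF X Y] unfolding gb_def by auto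
  have 3: "n + m \<noteq> 0" using n N by auto
  show "act X n (act Y m x) = 0" using comm[OF X Y, of n m x] 1 2 3 act_0[OF Y] by simp
qed

lemma gb_mono: "gb N x \<Longrightarrow> N \<le> N' \<Longrightarrow> gb N' x"
  unfolding gb_def by auto

lemma Gf_hi: assumes "gb N0 x" "j \<ge> N0" "Y \<in> so8" shows "Gf Y m j x = 0"
proof -
  have "act (Fm q p) j x = 0" if "p < 8" "q < 8" for p q
    using assms so8_F[OF that(2,1)] unfolding gb_def by auto
  thus ?thesis unfolding Gf_def using act_0 so8_bracket[OF so8_F assms(3)] by simp
qed

lemma Gf_lo: assumes x: "gb N0 x" and j: "m - j \<ge> N0" and Y: "Y \<in> so8"
  shows "Gf Y m j x = sc (-24) (act Y m x)"
proof -
  have pt: "act (bracket (Fm p q) Y) (m - j) (act (Fm q p) j x)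
     = act (bracket (bracket (Fm p q) Y) (Fm q p)) m x
       + (if m = 0 then sc (of_int (m - j) * k * nform (bracket (Fm p q) Y) (Fm q p)) x else 0)"
    if pq: "p < 8" "q < 8" for p q
  proof -
    have B: "bracket (Fm p q) Y \<in> so8" using so8_bracket[OF so8_F[OF pq] Y] .
    have "act (bracket (Fm p q) Y) (m - j) x = 0" using x j B unfolding gb_def by auto
    thus ?thesis using comm[OF B so8_F[OF pq(2,1)], of "m - j" j x] act_0[OF so8_F[OF pq(2,1)]]
      by (simp add: ac_simps)
  qed
  have "Gf Y m j x = (\<Sum>p<8. \<Sum>q<8. act (bracket (bracket (Fm p q) Y) (Fm q p)) m x
       + (if m = 0 then sc (of_int (m - j) * k * nform (bracket (Fm p q) Y) (Fm q p)) x else 0))"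
    unfolding Gf_def by (intro sum.cong refl) (simp add: pt)
  also have "\<dots> = (\<Sum>p<8. \<Sum>q<8. act (bracket (bracket (Fm p q) Y) (Fm q p)) m x)
      + (if m = 0 then sc (of_int (m - j) * k * (\<Sum>p<8. \<Sum>q<8. nform (bracket (Fm p q) Y) (Fm q p))) x else 0)"
    by (simp add: sum.distrib sc_sum_l sum_distrib_left)
  also have "(\<Sum>p<8. \<Sum>q<8. act (bracket (bracket (Fm p q) Y) (Fm q p)) m x)
      = act (\<lambda>a b. \<Sum>p<8. \<Sum>q<8. bracket (bracket (Fm p q) Y) (Fm q p) a b) m x"
    by (rule act_msum2[symmetric]) (simp add: so8_bracket so8_F Y)
  also have "(\<lambda>a b. \<Sum>p<8. \<Sum>q<8. bracket (bracket (Fm p q) Y) (Fm q p) a b) = (\<lambda>a b. (-24) * Y a b)"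
    using casimir_mat[OF Y] by (intro ext) simp
  also have "act (\<lambda>a b. (-24) * Y a b) m x = sc (-24) (act Y m x)" by (rule act_mscale[OF Y])
  finally show ?thesis using casimir_central[OF Y] by simp
qed

lemma sum_delta_int: assumes c: "\<bar>c\<bar> \<le> int N"
  shows "(\<Sum>i<2 * N + 1. if int i - int N = c then f (int i - int N) else (0::'a::comm_monoid_add)) = f c"
proof -
  have "(\<Sum>i<2 * N + 1. if int i - int N = c then f (int i - int N) else 0)
      = (\<Sum>i<2 * N + 1. if i = nat (c + int N) then f c else 0)"
    by (intro sum.cong refl) (use c in auto)
  also have "\<dots> = (if nat (c + int N) \<in> {..<2 * N + 1} then f c else 0)"
    by (rule sum.delta[OF finite_lessThan])
  also have "\<dots> = f c" using c by auto
  finally show ?thesis .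
qed

lemma Sop_comm: assumes Y: "Y \<in> so8" and x: "gb N0 x" and N0: "N0 \<ge> 1" and N: "int N \<ge> N0 + \<bar>m\<bar>"
  shows "Sop N (act Y m x) = act Y m (Sop N x) + sc (- (24 + 4 * k) * of_int m) (act Y m x)"
proof -
  define L where "L = 2 * N + 1"
  have "Sop N (act Y m x) = (\<Sum>i<L. act Y m (Bop (int i - int N) x) + Gf Y m (int i - int N) x - Gf Y m (int i - int N + m) x
     + (if int i - int N = - m then sc (2 * of_int (int i - int N) * k) (act Y m x) else 0)
     + (if int i - int N = m then sc (- 2 * of_int (int i - int N) * k) (act Y m x) else 0))"
    unfolding Sop_def L_def
  proof (intro sum.cong refl)
    fix i
    have e: "(int i - int N + m = 0) = (int i - int N = - m)" "(m = int i - int N) = (int i - int N = m)" by auto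
    show "Bop (int i - int N) (act Y m x) = act Y m (Bop (int i - int N) x) + Gf Y m (int i - int N) x - Gf Y m (int i - int N + m) x
     + (if int i - int N = - m then sc (2 * of_int (int i - int N) * k) (act Y m x) else 0)
     + (if int i - int N = m then sc (- 2 * of_int (int i - int N) * k) (act Y m x) else 0)"
      using Bop_comm[OF Y, of "int i - int N" m x] unfolding e by simp
  qed
  also have "\<dots> = act Y m (Sop N x) + (\<Sum>i<L. Gf Y m (int i - int N) x - Gf Y m (int i - int N + m) x)
     + sc (2 * of_int (- m) * k) (act Y m x) + sc (- 2 * of_int m * k) (act Y m x)"
  proof -
    have mN: "\<bar>- m\<bar> \<le> int N" "\<bar>m\<bar> \<le> int N" using N N0 by auto
    have c1: "(\<Sum>i<L. if int i - int N = - m then sc (2 * of_int (int i - int N) * k) (act Y m x) else 0)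
        = sc (2 * of_int (- m) * k) (act Y m x)"
      unfolding L_def by (rule sum_delta_int[OF mN(1), where f="\<lambda>j. sc (2 * of_int j * k) (act Y m x)"])
    have c2: "(\<Sum>i<L. if int i - int N = m then sc (- 2 * of_int (int i - int N) * k) (act Y m x) else 0)
        = sc (- 2 * of_int m * k) (act Y m x)"
      unfolding L_def by (rule sum_delta_int[OF mN(2), where f="\<lambda>j. sc (- 2 * of_int j * k) (act Y m x)"])
    have c0: "(\<Sum>i<L. act Y m (Bop (int i - int N) x)) = act Y m (Sop N x)"
      unfolding Sop_def L_def by (rule act_sum[OF Y, symmetric])
    show ?thesis using c0 c1 c2 by (simp add: sum.distrib sum_subtractf)
  qed
  also have "(\<Sum>i<L. Gf Y m (int i - int N) x - Gf Y m (int i - int N + m) x) = sc (- 24 * of_int m) (act Y m x)"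
  proof (cases "m \<ge> 0")
    case True
    define d where "d = nat m"
    define g where "g i = Gf Y m (int i - int N) x" for i
    have "(\<Sum>i<L. Gf Y m (int i - int N) x - Gf Y m (int i - int N + m) x) = (\<Sum>i<L. g i - g (i + d))"
      unfolding g_def d_def using True by (intro sum.cong refl) (simp add: algebra_simps)
    also have "\<dots> = (\<Sum>i<d. g i) - (\<Sum>i<d. g (L + i))" by (rule tele_nat)
    also have "(\<Sum>i<d. g i) = (\<Sum>i<d. sc (-24) (act Y m x))"
    proof (intro sum.cong refl)
      fix i assume "i \<in> {..<d}"
      hence "m - (int i - int N) \<ge> N0" using N N0 True by (auto simp: d_def)
      thus "g i = sc (-24) (act Y m x)" unfolding g_def by (rule Gf_lo[OF x _ Y])
    qed
    also have "(\<Sum>i<d. g (L + i)) = 0"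
    proof (intro sum.neutral ballI)
      fix i assume "i \<in> {..<d}"
      have "int (L + i) - int N \<ge> N0" using N N0 by (auto simp: L_def)
      thus "g (L + i) = 0" unfolding g_def by (rule Gf_hi[OF x _ Y])
    qed
    also have "(\<Sum>i<d. sc (-24) (act Y m x)) = sc (- 24 * of_int m) (act Y m x)"
      using True by (simp add: sc_sum_l[symmetric] d_def mult.commute)
    finally show ?thesis by simp
  next
    case False
    define d where "d = nat (- m)"
    define g where "g i = Gf Y m (int i - int N - int d) x" for i
    have "(\<Sum>i<L. Gf Y m (int i - int N) x - Gf Y m (int i - int N + m) x) = - (\<Sum>i<L. g i - g (i + d))"
      unfolding g_def d_def using False by (simp add: sum_negf[symmetric])
    also have "(\<Sum>i<L. g i - g (i + d)) = (\<Sum>i<d. g i) - (\<Sum>i<d. g (L + i))" by (rule tele_nat)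
    also have "(\<Sum>i<d. g i) = (\<Sum>i<d. sc (-24) (act Y m x))"
    proof (intro sum.cong refl)
      fix i assume "i \<in> {..<d}"
      hence "m - (int i - int N - int d) \<ge> N0" using N N0 False by (auto simp: d_def)
      thus "g i = sc (-24) (act Y m x)" unfolding g_def by (rule Gf_lo[OF x _ Y])
    qed
    also have "(\<Sum>i<d. g (L + i)) = 0"
    proof (intro sum.neutral ballI)
      fix i assume "i \<in> {..<d}"
      have "int (L + i) - int N - int d \<ge> N0" using N N0 False by (auto simp: L_def d_def)
      thus "g (L + i) = 0" unfolding g_def by (rule Gf_hi[OF x _ Y])
    qed
    also have "(\<Sum>i<d. sc (-24) (act Y m x)) = sc (24 * of_int m) (act Y m x)"
      using False by (simp add: sc_sum_l[symmetric] d_def mult.commute)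
    finally show ?thesis by (simp add: sc_neg_l[symmetric])
  qed
  finally show ?thesis by (simp add: sc_addl[symmetric] algebra_simps)
qed

end


definition absum :: "letter list \<Rightarrow> int" where
  "absum w = sum_list (map (\<lambda>l. \<bar>fst (snd l)\<bar>) w)"
lemma absum_simps[simp]: "absum [] = 0" "absum (l # w) = \<bar>fst (snd l)\<bar> + absum w"
  by (auto simp: absum_def)
lemma absum_nonneg: "absum w \<ge> 0"
  by (induction w) auto

lemma low_neg: "loww w \<Longrightarrow> w \<noteq> [] \<Longrightarrow> msum w < 0 \<or> (msum w = 0 \<and> hsum w < 0)"
proof (induction w)
  case Nil thus ?case by simp
next
  case (Cons l w)
  have ms: "msum w \<le> 0" using Cons.prems(1) by (induction w) auto
  show ?case
  proof (cases "w = []")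
    case True thus ?thesis using Cons.prems by auto
  next
    case False thus ?thesis using Cons.IH Cons.prems ms by auto
  qed
qed

context affm begin

definition Rop :: "'m \<Rightarrow> 'm" where "Rop x = act rhoc 0 x"

lemma sumlist_A: assumes Aadd: "\<And>x y. A (x + y) = A x + A y" and Asc: "\<And>c x. A (sc c x) = sc c (A x)"
  shows "(\<forall>cx\<in>set l. A (fst (snd cx)) = sc (snd (snd cx)) (fst (snd cx))) \<Longrightarrow>
    A (sum_list (map (\<lambda>cx. sc (fst cx) (fst (snd cx))) l)) - sc b (sum_list (map (\<lambda>cx. sc (fst cx) (fst (snd cx))) l))
    = sum_list (map (\<lambda>cx. sc (fst cx) (fst (snd cx))) (map (\<lambda>cx. (fst cx * (snd (snd cx) - b), snd cx)) l))"
proof (induction l)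
  case Nil
  have "A 0 = 0" using Asc[of 0 0] by simp
  thus ?case by simp
next
  case (Cons cx l)
  obtain c y mu where cx: "cx = (c, y, mu)" by (cases cx) auto
  have Ay: "A y = sc mu y" using Cons.prems cx by auto
  have "A (sc c y) - sc b (sc c y) = sc (c * (mu - b)) y"
    using Ay by (simp add: Asc sc_diff_l[symmetric] algebra_simps)
  thus ?case using Cons cx by (simp add: Aadd sc_addr algebra_simps)
qed

lemma eig_indep: assumes Aadd: "\<And>x y. A (x + y) = A x + A y" and Asc: "\<And>c x. A (sc c x) = sc c (A x)"
  shows "(\<forall>cx\<in>set l. A (fst (snd cx)) = sc (snd (snd cx)) (fst (snd cx)) \<and> snd (snd cx) \<noteq> a) \<Longrightarrow>
    u = sum_list (map (\<lambda>cx. sc (fst cx) (fst (snd cx))) l) \<Longrightarrow> A u = sc a u \<Longrightarrow> u = 0"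
proof (induction "length l" arbitrary: l u)
  case 0 thus ?case by simp
next
  case (Suc n)
  obtain cx l0 where lc: "l = cx # l0" using Suc.hyps(2) by (cases l) auto
  obtain c y mu where cx: "cx = (c, y, mu)" by (cases cx) auto
  have len: "n = length l0" using Suc.hyps(2) lc by simp
  define u' where "u' = sum_list (map (\<lambda>cx. sc (fst cx) (fst (snd cx))) l0)"
  have u: "u = sc c y + u'" using Suc.prems(2) lc cx u'_def by simp
  have Ay: "A y = sc mu y" and ne: "mu \<noteq> a" using Suc.prems(1) lc cx by auto
  have P0: "\<forall>cx\<in>set l0. A (fst (snd cx)) = sc (snd (snd cx)) (fst (snd cx)) \<and> snd (snd cx) \<noteq> a"
    using Suc.prems(1) lc by simp
  define l' where "l' = map (\<lambda>cx. (fst cx * (snd (snd cx) - mu), snd cx)) l0"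
  have h1: "A u' - sc mu u' = sum_list (map (\<lambda>cx. sc (fst cx) (fst (snd cx))) l')"
    unfolding u'_def l'_def by (rule sumlist_A[OF Aadd Asc]) (use P0 in blast)
  have h2: "A (sc c y) - sc mu (sc c y) = 0" using Ay by (simp add: Asc mult.commute)
  have Au: "A u = sc a u" by (rule Suc.prems(3))
  have "sc (a - mu) u = A u - sc mu u" unfolding Au by (simp add: sc_diff_l)
  also have "\<dots> = (A (sc c y) - sc mu (sc c y)) + (A u' - sc mu u')"
    unfolding u Aadd sc_addr by (simp add: algebra_simps)
  also have "\<dots> = sum_list (map (\<lambda>cx. sc (fst cx) (fst (snd cx))) l')" using h1 h2 by simp
  finally have u2: "sc (a - mu) u = sum_list (map (\<lambda>cx. sc (fst cx) (fst (snd cx))) l')" .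
  have Au2: "A (sc (a - mu) u) = sc a (sc (a - mu) u)" unfolding Asc Au by (simp add: mult.commute)
  have P': "\<forall>cx\<in>set l'. A (fst (snd cx)) = sc (snd (snd cx)) (fst (snd cx)) \<and> snd (snd cx) \<noteq> a"
    using P0 unfolding l'_def by simp
  have len': "n = length l'" using len l'_def by simp
  have "sc (a - mu) u = 0" by (rule Suc.hyps(1)[OF len' P' u2 Au2])
  thus "u = 0" using ne sc_cancel by auto
qed

lemma Bop_add: "Bop n (x + y) = Bop n x + Bop n y"
  unfolding Bop_def by (simp add: act_add so8_F sum.distrib)
lemma Bop_sc: "Bop n (sc c x) = sc c (Bop n x)"
  unfolding Bop_def by (simp add: act_scv so8_F sc_sum_r)
lemma Sop_add: "Sop N (x + y) = Sop N x + Sop N y"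
  unfolding Sop_def by (simp add: Bop_add sum.distrib)
lemma Sop_sc: "Sop N (sc c x) = sc c (Sop N x)"
  unfolding Sop_def by (simp only: Bop_sc sc_sum_r)
lemma Rop_add: "Rop (x + y) = Rop x + Rop y"
  unfolding Rop_def rhoc_def by (simp add: act_add cartan_so8)
lemma Rop_sc: "Rop (sc c x) = sc c (Rop x)"
  unfolding Rop_def rhoc_def by (simp add: act_scv cartan_so8)

lemma gb_wapp: "gb 1 v \<Longrightarrow> homw w \<Longrightarrow> gb (1 + absum w) (wapp act w v)"
proof (induction w)
  case Nil thus ?case by simp
next
  case (Cons l w)
  obtain Y m g where l: "l = (Y, m, g)" by (cases l) auto
  have Y: "Y \<in> so8" using Cons.prems l by (simp add: hom_def)
  have "gb (1 + absum w + \<bar>m\<bar>) (act Y m (wapp act w v))"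
    by (rule gb_act[OF Cons.IH[OF Cons.prems(1)] _ Y]) (use Cons.prems absum_nonneg[of w] in auto)
  thus ?case using l by (simp add: ac_simps)
qed

lemma Rop_comm: assumes Y: "hom g Y" shows "Rop (act Y m y) = act Y m (Rop y) + sc (of_int g) (act Y m y)"
proof -
  have so: "Y \<in> so8" using Y by (simp add: hom_def)
  have rs: "rhoc \<in> so8" unfolding rhoc_def by (rule cartan_so8)
  have "act rhoc 0 (act Y m y) = act Y m (act rhoc 0 y) + act (bracket rhoc Y) m y"
    using comm[OF rs so, of 0 m y] by simp
  also have "act (bracket rhoc Y) m y = sc (of_int g) (act Y m y)"
    unfolding bracket_rhoc[OF Y] by (rule act_mscale[OF so])
  finally show ?thesis unfolding Rop_def .
qed

lemma Bop_hw: assumes hw: "hw_vector sc act lam v" shows "\<exists>\<beta>. Bop n v = sc \<beta> v"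
proof -
  have pos: "act X n v = 0" if "X \<in> so8" "n > 0" for X n using hw that by (auto simp: hw_vector_def)
  have np: "act X 0 v = 0" if "X \<in> nplus" for X using hw that by (auto simp: hw_vector_def)
  have ca: "act H 0 v = sc (nform lam H) v" if "H \<in> cartan_sub" for H using hw that by (auto simp: hw_vector_def)
  have Bpos: "Bop n v = 0" if "n > 0" for n
    unfolding Bop_def using pos[OF so8_F that] act_0[OF so8_F] by simp
  show ?thesis
  proof (cases "n > 0")
    case True thus ?thesis using Bpos by (intro exI[of _ 0]) simp
  next
    case False
    show ?thesis
    proof (cases "n < 0")
      case True
      have "Bop n v = Bop (- (- n)) v" by simp
      also have "\<dots> = Bop (- n) v + sc (of_int (- n) * k * C0) v" by (rule Bop_neg)
      finally show ?thesis using Bpos[of "- n"] True by auto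
    next
      case False
      hence n0: "n = 0" using \<open>\<not> n > 0\<close> by simp
      have pt: "\<exists>\<beta>. act (Fm p q) 0 (act (Fm q p) 0 v) = sc \<beta> v" if pq: "p < 8" "q < 8" for p q
      proof -
        have hqp: "hom (rho q - rho p) (Fm q p)" and hpq: "hom (rho p - rho q) (Fm p q)"
          using hom_F pq by auto
        consider "rho q - rho p > 0" | "rho q - rho p = 0" | "rho q - rho p < 0" by linarith
        thus ?thesis
        proof cases
          case 1
          hence "act (Fm q p) 0 v = 0" using np hom_pos_nplus[OF hqp] by auto
          thus ?thesis using act_0[OF so8_F[OF pq]] by (intro exI[of _ 0]) simp
        next
          case 2
          have c1: "act (Fm q p) 0 v = sc (nform lam (Fm q p)) v"
            using ca hom0_cartan_sub hqp 2 by auto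
          have c2: "act (Fm p q) 0 v = sc (nform lam (Fm p q)) v"
            using ca hom0_cartan_sub hpq 2 by auto
          show ?thesis using c1 c2 act_scv[OF so8_F[OF pq]] by auto
        next
          case 3
          have z: "act (Fm p q) 0 v = 0" using np hom_pos_nplus[OF hpq] 3 by auto
          have hb: "hom ((rho p - rho q) + (rho q - rho p)) (bracket (Fm p q) (Fm q p))"
            by (rule hom_bracket[OF hpq hqp])
          hence "bracket (Fm p q) (Fm q p) \<in> cartan_sub" using hom0_cartan_sub by simp
          hence c: "act (bracket (Fm p q) (Fm q p)) 0 v = sc (nform lam (bracket (Fm p q) (Fm q p))) v"
            using ca by auto
          have "act (Fm p q) 0 (act (Fm q p) 0 v) = act (Fm q p) 0 (act (Fm p q) 0 v)
              + act (bracket (Fm p q) (Fm q p)) 0 v" using comm[OF so8_F[OF pq] so8_F[OF pq(2,1)], of 0 0 v] by simp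
          thus ?thesis using z c act_0[OF so8_F[OF pq(2,1)]] by auto
        qed
      qed
      define \<beta> where "\<beta> p q = (SOME \<beta>. act (Fm p q) 0 (act (Fm q p) 0 v) = sc \<beta> v)" for p q
      have "act (Fm p q) 0 (act (Fm q p) 0 v) = sc (\<beta> p q) v" if "p < 8" "q < 8" for p q
        unfolding \<beta>_def using someI_ex[OF pt[OF that]] .
      hence "Bop 0 v = (\<Sum>p<8. \<Sum>q<8. sc (\<beta> p q) v)" unfolding Bop_def by simp
      also have "\<dots> = sc (\<Sum>p<8. \<Sum>q<8. \<beta> p q) v" by (simp add: sc_sum_l)
      finally show ?thesis using n0 by auto
    qed
  qed
qed

lemma Sop_hw: assumes hw: "hw_vector sc act lam v" shows "\<exists>\<sigma>. Sop N v = sc \<sigma> v"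
proof -
  define f where "f n = (SOME \<beta>. Bop n v = sc \<beta> v)" for n
  have "Bop n v = sc (f n) v" for n unfolding f_def using someI_ex[OF Bop_hw[OF hw]] .
  hence "Sop N v = (\<Sum>i<2 * N + 1. sc (f (int i - int N)) v)" unfolding Sop_def by simp
  also have "\<dots> = sc (\<Sum>i<2 * N + 1. f (int i - int N)) v" by (simp only: sc_sum_l)
  finally show ?thesis by auto
qed

end

locale affm2 = affm sc act k for sc :: "complex \<Rightarrow> 'm::ab_group_add \<Rightarrow> 'm" and act k +
  assumes k2: "k = -2"
begin

lemma wapp_eig: assumes S: "Sop N v = sc \<sigma> v" and R: "Rop v = sc r v" and g: "gb 1 v"
  shows "homw w \<Longrightarrow> int N \<ge> 1 + absum w \<Longrightarrow> Sop N (wapp act w v) = sc (\<sigma> - 16 * of_int (msum w)) (wapp act w v)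
     \<and> Rop (wapp act w v) = sc (r + of_int (hsum w)) (wapp act w v)"
proof (induction w)
  case Nil thus ?case using S R by simp
next
  case (Cons l w)
  obtain Y m h where l: "l = (Y, m, h)" by (cases l) auto
  have Yh: "hom h Y" and hw: "homw w" using Cons.prems l by auto
  have Y: "Y \<in> so8" using Yh by (simp add: hom_def)
  have Nw: "int N \<ge> 1 + absum w" using Cons.prems l by simp
  have IH: "Sop N (wapp act w v) = sc (\<sigma> - 16 * of_int (msum w)) (wapp act w v)"
     "Rop (wapp act w v) = sc (r + of_int (hsum w)) (wapp act w v)" using Cons.IH[OF hw Nw] by auto
  have gw: "gb (1 + absum w) (wapp act w v)" by (rule gb_wapp[OF g hw])
  have "Sop N (act Y m (wapp act w v)) = act Y m (Sop N (wapp act w v)) + sc (- (24 + 4 * k) * of_int m) (act Y m (wapp act w v))"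
    by (rule Sop_comm[OF Y gw]) (use Cons.prems l absum_nonneg[of w] in auto)
  also have "\<dots> = sc (\<sigma> - 16 * of_int (msum w) - 16 * of_int m) (act Y m (wapp act w v))"
    unfolding IH k2 by (simp add: act_scv[OF Y] sc_addl[symmetric] algebra_simps)
  finally have 1: "Sop N (act Y m (wapp act w v)) = sc (\<sigma> - 16 * of_int (msum w) - 16 * of_int m) (act Y m (wapp act w v))" .
  have "Rop (act Y m (wapp act w v)) = act Y m (Rop (wapp act w v)) + sc (of_int h) (act Y m (wapp act w v))"
    by (rule Rop_comm[OF Yh])
  also have "\<dots> = sc (r + of_int (hsum w) + of_int h) (act Y m (wapp act w v))"
    unfolding IH by (simp add: act_scv[OF Y] act_add[OF Y] sc_addl)
  finally have 2: "Rop (act Y m (wapp act w v)) = sc (r + of_int (hsum w) + of_int h) (act Y m (wapp act w v))" .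
  show ?case using 1 2 l by (simp add: algebra_simps)
qed

lemma sum_list_split: "sum_list (map f l) = sum_list (map f (filter P l)) + sum_list (map f (filter (\<lambda>x. \<not> P x) l))"
  for f :: "_ \<Rightarrow> 'a::ab_group_add"
  by (induction l) (auto simp: ac_simps)

lemma Qlemma: assumes hw: "hw_vector sc act lam v"
  and l: "\<forall>cw\<in>set l. homw (snd cw) \<and> loww (snd cw)"
  and eq: "sum_list (map (\<lambda>cw. sc (fst cw) (wapp act (snd cw) v)) l) = sc d v"
  shows "d = sum_list (map fst (filter (\<lambda>cw. snd cw = []) l))"
proof -
  define N where "N = Suc (sum_list (map (\<lambda>cw. nat (absum (snd cw))) l))"
  have Nge: "int N \<ge> 1 + absum (snd cw)" if "cw \<in> set l" for cw
  proof -
    have "nat (absum (snd cw)) \<le> sum_list (map (\<lambda>cw. nat (absum (snd cw))) l)"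
      using that by (intro member_le_sum_list) auto
    thus ?thesis unfolding N_def using absum_nonneg[of "snd cw"] by linarith
  qed
  obtain \<sigma> where S: "Sop N v = sc \<sigma> v" using Sop_hw[OF hw] by blast
  define r where "r = nform lam rhoc"
  have R: "Rop v = sc r v" unfolding Rop_def r_def using hw rhoc_cartan by (simp add: hw_vector_def)
  have g: "gb 1 v" using hw unfolding gb_def hw_vector_def by auto
  have v0: "v \<noteq> 0" using hw by (simp add: hw_vector_def)
  define A where "A x = Sop N x + sc \<i> (Rop x)" for x
  have Aadd: "A (x + y) = A x + A y" for x y unfolding A_def by (simp add: Sop_add Rop_add sc_addr ac_simps)
  have Asc: "A (sc c x) = sc c (A x)" for c x unfolding A_def by (simp add: Sop_sc Rop_sc sc_addr mult.commute)
  define a where "a = \<sigma> + \<i> * r"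
  have Av: "A v = sc a v" unfolding A_def a_def S R by (simp add: sc_addl)
  define mu where "mu w = \<sigma> - 16 * of_int (msum w) + \<i> * (r + of_int (hsum w))" for w
  have Aw: "A (wapp act w v) = sc (mu w) (wapp act w v)" if wl: "w \<in> snd ` set l" for w
  proof -
    obtain cw where cw: "cw \<in> set l" "w = snd cw" using wl by auto
    have "Sop N (wapp act w v) = sc (\<sigma> - 16 * of_int (msum w)) (wapp act w v) \<and> Rop (wapp act w v) = sc (r + of_int (hsum w)) (wapp act w v)"
      by (rule wapp_eig[OF S R g]) (use l cw Nge in auto)
    hence e1: "Sop N (wapp act w v) = sc (\<sigma> - 16 * of_int (msum w)) (wapp act w v)"
      and e2: "Rop (wapp act w v) = sc (r + of_int (hsum w)) (wapp act w v)" by auto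
    show ?thesis unfolding A_def mu_def e1 e2 sc_mult sc_addl[symmetric] by (rule refl)
  qed
  have mune: "mu w \<noteq> a" if "loww w" "w \<noteq> []" for w
  proof
    assume "mu w = a"
    hence "- 16 * of_int (msum w) + \<i> * of_int (hsum w) = (0::complex)" unfolding mu_def a_def by (simp add: algebra_simps)
    hence "Re (- 16 * of_int (msum w) + \<i> * of_int (hsum w)) = 0" "Im (- 16 * of_int (msum w) + \<i> * of_int (hsum w)) = 0"
      by simp_all
    hence "msum w = 0" "hsum w = 0" by simp_all
    thus False using low_neg[OF that] by simp
  qed
  define l1 where "l1 = filter (\<lambda>cw. snd cw \<noteq> []) l"
  define l0 where "l0 = filter (\<lambda>cw. snd cw = []) l"
  define c0 where "c0 = sum_list (map fst l0)"
  have s0: "sum_list (map (\<lambda>cw. sc (fst cw) (wapp act (snd cw) v)) l0) = sc c0 v"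
    unfolding c0_def l0_def by (induction l) (auto simp: sc_addl)
  have split: "sum_list (map (\<lambda>cw. sc (fst cw) (wapp act (snd cw) v)) l)
     = sum_list (map (\<lambda>cw. sc (fst cw) (wapp act (snd cw) v)) l0) + sum_list (map (\<lambda>cw. sc (fst cw) (wapp act (snd cw) v)) l1)"
    unfolding l0_def l1_def by (rule sum_list_split)
  define u where "u = sc (d - c0) v"
  have u1: "u = sum_list (map (\<lambda>cw. sc (fst cw) (wapp act (snd cw) v)) l1)"
    using eq split s0 unfolding u_def by (simp add: sc_diff_l algebra_simps)
  define L where "L = map (\<lambda>cw. (fst cw, wapp act (snd cw) v, mu (snd cw))) l1"
  have uL: "u = sum_list (map (\<lambda>cx. sc (fst cx) (fst (snd cx))) L)" unfolding L_def u1 by (simp add: comp_def)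
  have PL: "\<forall>cx\<in>set L. A (fst (snd cx)) = sc (snd (snd cx)) (fst (snd cx)) \<and> snd (snd cx) \<noteq> a"
  proof
    fix cx assume "cx \<in> set L"
    then obtain cw where cw: "cw \<in> set l" "snd cw \<noteq> []" "cx = (fst cw, wapp act (snd cw) v, mu (snd cw))"
      unfolding L_def l1_def by auto
    show "A (fst (snd cx)) = sc (snd (snd cx)) (fst (snd cx)) \<and> snd (snd cx) \<noteq> a"
      using Aw[of "snd cw"] mune[of "snd cw"] cw l by auto
  qed
  have Au: "A u = sc a u" unfolding u_def Asc Av by (simp add: mult.commute)
  have "u = 0" by (rule eig_indep[OF Aadd Asc PL uL Au])
  hence "d - c0 = 0" using v0 sc_cancel unfolding u_def by blast
  thus ?thesis unfolding c0_def l0_def by simp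
qed

end


lemma cspan_sum: "finite A \<Longrightarrow> (\<forall>i\<in>A. f i \<in> cspan sc S) \<Longrightarrow> sum f A \<in> cspan sc S"
  by (induction A rule: finite_induct) (auto intro: cspan.intros)

lemma cspan_csubspace: "csubspace sc (cspan sc S)"
  unfolding csubspace_def by (auto intro: cspan.intros)

lemma nform_zero_left[simp]: "nform (\<lambda>a b. 0) H = 0"
  by (simp add: nform_def)

context affm begin

definition WS :: "'m set \<Rightarrow> 'm set" where
  "WS U = cspan sc {wapp act w u | w u. u \<in> U \<and> homw w}"

lemma WS_inv: assumes x: "x \<in> WS U" and Y: "Y \<in> so8" shows "act Y n x \<in> WS U"
proof -
  have F: "act (Fm p q) n x \<in> WS U" if pq: "p < 8" "q < 8" for p q
  proof -
    have "act (Fm p q) n x \<in> cspan sc (act (Fm p q) n ` {wapp act w u | w u. u \<in> U \<and> homw w})"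
      using act_cspan[OF so8_F[OF pq]] x unfolding WS_def by blast
    also have "\<dots> \<subseteq> WS U" unfolding WS_def
    proof (rule cspan_mono, rule subsetI)
      fix y assume "y \<in> act (Fm p q) n ` {wapp act w u | w u. u \<in> U \<and> homw w}"
      then obtain w u where wu: "u \<in> U" "homw w" "y = act (Fm p q) n (wapp act w u)" by blast
      hence "y = wapp act ((Fm p q, n, rho p - rho q) # w) u \<and> homw ((Fm p q, n, rho p - rho q) # w)"
        using hom_F[OF pq] by simp
      thus "y \<in> {wapp act w u | w u. u \<in> U \<and> homw w}" using wu by blast
    qed
    finally show ?thesis .
  qed
  have "act Y n x = sc (1/2) (\<Sum>p<8. \<Sum>q<8. sc (Y p q) (act (Fm p q) n x))" by (rule act_expand[OF Y])
  also have "\<dots> \<in> WS U" unfolding WS_def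
    by (intro cspan_sc cspan_sum ballI finite_lessThan) (use F in \<open>auto simp: WS_def intro: cspan_sc\<close>)
  finally show ?thesis .
qed

lemma WS_irr: assumes irr: "irreducible_mod sc act" and x: "x \<in> WS U" "x \<noteq> 0" shows "WS U = UNIV"
proof -
  have "csubspace sc (WS U)" unfolding WS_def by (rule cspan_csubspace)
  moreover have "\<forall>X\<in>so8. \<forall>n. \<forall>v\<in>WS U. act X n v \<in> WS U" using WS_inv by blast
  ultimately have "WS U = {0} \<or> WS U = UNIV" using irr unfolding irreducible_mod_def by blast
  thus ?thesis using x by auto
qed

lemma WS_low:
  assumes hyU: "\<forall>u\<in>U. \<forall>X n h. hom h X \<longrightarrow> (0 < n \<or> (n = 0 \<and> 0 < h)) \<longrightarrow> act X n u = 0"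
    and UC: "\<forall>u\<in>U. \<forall>X. hom 0 X \<longrightarrow> act X 0 u \<in> cspan sc U"
  shows "WS U \<subseteq> cspan sc {wapp act w u | w u. u \<in> U \<and> homw w \<and> loww w}"
  unfolding WS_def
proof (rule cspan_sub, rule subsetI)
  fix y assume "y \<in> {wapp act w u | w u. u \<in> U \<and> homw w}"
  then obtain w u where wu: "u \<in> U" "homw w" "y = wapp act w u" by blast
  have "y \<in> LS U (msum w) (hsum w)" using tri[OF hyU UC wu(2,1)] wu(3) by simp
  also have "\<dots> \<subseteq> cspan sc {wapp act w u | w u. u \<in> U \<and> homw w \<and> loww w}"
    unfolding LS_def by (rule cspan_mono) blast
  finally show "y \<in> cspan sc {wapp act w u | w u. u \<in> U \<and> homw w \<and> loww w}" .
qed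

end

context affm2 begin

lemma vac_neg: assumes hw: "hw_vector sc act (\<lambda>a b. 0) v" and irr: "irreducible_mod sc act"
  shows "h < 0 \<Longrightarrow> hom h X \<Longrightarrow> act X 0 v = 0"
proof (induction "nat (- h)" arbitrary: h X rule: less_induct)
  case less
  have pos: "act Z n v = 0" if "Z \<in> so8" "n > 0" for Z n using hw that by (auto simp: hw_vector_def)
  have np: "act Z 0 v = 0" if "Z \<in> nplus" for Z using hw that by (auto simp: hw_vector_def)
  have ca: "act H 0 v = 0" if "H \<in> cartan_sub" for H using hw that by (auto simp: hw_vector_def)
  have v0: "v \<noteq> 0" using hw by (simp add: hw_vector_def)
  define U where "U = {act X0 0 v | X0. hom h X0}"
  have hyU: "\<forall>u\<in>U. \<forall>Z n g. hom g Z \<longrightarrow> (0 < n \<or> (n = 0 \<and> 0 < g)) \<longrightarrow> act Z n u = 0"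
  proof (intro ballI allI impI)
    fix u Z and n g :: int assume u: "u \<in> U" and Z: "hom g Z" and r: "0 < n \<or> (n = 0 \<and> 0 < g)"
    obtain X1 where X: "hom h X1" "u = act X1 0 v" using u U_def by blast
    have soX: "X1 \<in> so8" and soZ: "Z \<in> so8" using X Z by (auto simp: hom_def)
    have Zv: "act Z n v = 0" using r pos[OF soZ] np hom_pos_nplus[OF Z] by auto
    have B: "act (bracket Z X1) n v = 0"
    proof (cases "n > 0")
      case True thus ?thesis using pos so8_bracket[OF soZ soX] by simp
    next
      case False
      hence n0: "n = 0" and g0: "g > 0" using r by auto
      have hb: "hom (g + h) (bracket Z X1)" by (rule hom_bracket[OF Z X(1)])
      consider "g + h > 0" | "g + h = 0" | "g + h < 0" by linarith
      thus ?thesis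
      proof cases
        case 1 thus ?thesis using np hom_pos_nplus[OF hb] n0 by auto
      next
        case 2 thus ?thesis using ca hom0_cartan_sub hb n0 by auto
      next
        case 3
        have "nat (- (g + h)) < nat (- h)" using 3 g0 by auto
        thus ?thesis using less.hyps[OF _ 3 hb] n0 by blast
      qed
    qed
    have "act Z n (act X1 0 v) = act X1 0 (act Z n v) + act (bracket Z X1) n v
        + (if n = 0 then sc (of_int n * nform Z X1 * k) v else 0)"
      using comm[OF soZ soX, of n 0 v] by simp
    thus "act Z n u = 0" using X(2) Zv B act_0[OF soX] by simp
  qed
  have UC: "\<forall>u\<in>U. \<forall>H. hom 0 H \<longrightarrow> act H 0 u \<in> cspan sc U"
  proof (intro ballI allI impI)
    fix u H assume u: "u \<in> U" and H: "hom 0 H"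
    obtain X1 where X: "hom h X1" "u = act X1 0 v" using u U_def by blast
    have soX: "X1 \<in> so8" and soH: "H \<in> so8" using X H by (auto simp: hom_def)
    have Hv: "act H 0 v = 0" using ca hom0_cartan_sub[OF H] by simp
    have "act H 0 (act X1 0 v) = act X1 0 (act H 0 v) + act (bracket H X1) 0 v"
      using comm[OF soH soX, of 0 0 v] by simp
    hence "act H 0 u = act (bracket H X1) 0 v" using X(2) Hv act_0[OF soX] by simp
    moreover have "hom h (bracket H X1)" using hom_bracket[OF H X(1)] by simp
    ultimately have "act H 0 u \<in> U" unfolding U_def by blast
    thus "act H 0 u \<in> cspan sc U" by (rule cspan_base)
  qed
  show ?case
  proof (rule ccontr)
    assume ne: "act X 0 v \<noteq> 0"
    have "act X 0 v \<in> WS U" unfolding WS_def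
      by (rule cspan_base) (use less.prems in \<open>force simp: U_def intro: exI[of _ "[]"]\<close>)
    hence "WS U = UNIV" using WS_irr[OF irr] ne by blast
    hence "v \<in> cspan sc {wapp act w u | w u. u \<in> U \<and> homw w \<and> loww w}" using WS_low[OF hyU UC] by blast
    also have "\<dots> \<subseteq> cspan sc {wapp act z v | z. homw z \<and> loww z \<and> z \<noteq> []}"
    proof (rule cspan_mono, rule subsetI)
      fix y assume "y \<in> {wapp act w u | w u. u \<in> U \<and> homw w \<and> loww w}"
      then obtain w X' where wX: "hom h X'" "homw w" "loww w" "y = wapp act w (act X' 0 v)"
        unfolding U_def by blast
      hence "y = wapp act (w @ [(X', 0, h)]) v \<and> homw (w @ [(X', 0, h)])
          \<and> loww (w @ [(X', 0, h)]) \<and> w @ [(X', 0, h)] \<noteq> []"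
        using less.prems by (simp add: wapp_append)
      thus "y \<in> {wapp act z v | z. homw z \<and> loww z \<and> z \<noteq> []}" by blast
    qed
    finally have "v \<in> cspan sc {wapp act z v | z. homw z \<and> loww z \<and> z \<noteq> []}" .
    then obtain l where l: "\<forall>cz\<in>set l. homw (snd cz) \<and> loww (snd cz) \<and> snd cz \<noteq> []"
      "v = sum_list (map (\<lambda>cz. sc (fst cz) (wapp act (snd cz) v)) l)"
      using cspan_list[where f="\<lambda>z. wapp act z v" and P="\<lambda>z. homw z \<and> loww z \<and> z \<noteq> []", OF _ cv] by blast
    have "1 = sum_list (map fst (filter (\<lambda>cw. snd cw = []) l))"
      by (rule Qlemma[OF hw]) (use l in auto)
    also have "filter (\<lambda>cw. snd cw = []) l = []" using l(1) by (simp add: filter_empty_conv)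
    finally show False by simp
  qed
qed

lemma vac: assumes hw: "hw_vector sc act (\<lambda>a b. 0) v" and irr: "irreducible_mod sc act"
  shows "X \<in> so8 \<Longrightarrow> act X 0 v = 0"
proof -
  assume X: "X \<in> so8"
  have np: "act Z 0 v = 0" if "Z \<in> nplus" for Z using hw that by (auto simp: hw_vector_def)
  have ca: "act H 0 v = 0" if "H \<in> cartan_sub" for H using hw that by (auto simp: hw_vector_def)
  have F: "act (Fm p q) 0 v = 0" if pq: "p < 8" "q < 8" for p q
  proof -
    have h: "hom (rho p - rho q) (Fm p q)" by (rule hom_F[OF pq])
    consider "rho p - rho q > 0" | "rho p - rho q = 0" | "rho p - rho q < 0" by linarith
    thus ?thesis
    proof cases
      case 1 thus ?thesis using np hom_pos_nplus[OF h] by auto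
    next
      case 2 thus ?thesis using ca hom0_cartan_sub h by auto
    next
      case 3 show ?thesis by (rule vac_neg[OF hw irr 3 h])
    qed
  qed
  have "act X 0 v = sc (1/2) (\<Sum>p<8. \<Sum>q<8. sc (X p q) (act (Fm p q) 0 v))" by (rule act_expand[OF X])
  thus ?thesis using F by simp
qed

end


lemma cartan_diag: "cartan x a a = dg x a" by (simp add: cartan_dg)
lemma dg_pidx: "a < 8 \<Longrightarrow> dg x (pidx a) = - dg x a"
  using less8_cases[of a] by (auto simp: dg_def pidx_def)

definition mh :: "(nat \<Rightarrow> complex) \<Rightarrow> int \<Rightarrow> mat \<Rightarrow> bool" where
  "mh x j X \<longleftrightarrow> X \<in> so8 \<and> (\<forall>a b. X a b \<noteq> 0 \<longrightarrow> dg x a - dg x b = of_int j)"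

definition intd :: "(nat \<Rightarrow> complex) \<Rightarrow> bool" where
  "intd x \<longleftrightarrow> (\<forall>a<8. \<forall>b<8. \<exists>j::int. dg x a - dg x b = of_int j)"

lemma adcomp_cartan: "adcomp (cartan x) j X a b = (if dg x a - dg x b = of_int j then X a b else 0)"
  by (simp add: adcomp_def cartan_diag)

lemma ad_eigs_cartan: "ad_eigs (cartan x) = {j. \<exists>a<8. \<exists>b<8. dg x a - dg x b = of_int j}"
  by (simp add: ad_eigs_def cartan_diag)

lemma ad_eigs_finite: "finite (ad_eigs (cartan x))"
proof -
  let ?f = "\<lambda>ab. (THE j::int. dg x (fst ab) - dg x (snd ab) = of_int j)"
  have "ad_eigs (cartan x) \<subseteq> ?f ` ({..<8} \<times> {..<8})"
  proof
    fix j assume "j \<in> ad_eigs (cartan x)"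
    then obtain a b where ab: "a < 8" "b < 8" "dg x a - dg x b = of_int j" by (auto simp: ad_eigs_cartan)
    have "?f (a, b) = j" by (simp, rule the_equality) (use ab(3) in auto)
    thus "j \<in> ?f ` ({..<8} \<times> {..<8})" using ab by force
  qed
  thus ?thesis by (rule finite_subset) simp
qed

lemma adcomp_so8: assumes X: "X \<in> so8" shows "adcomp (cartan x) j X \<in> so8"
proof (rule so8I)
  show "supp8 (adcomp (cartan x) j X)" using X by (auto simp: supp8_def adcomp_cartan so8_supp)
  fix a b :: nat assume ab: "a < 8" "b < 8"
  have e: "dg x (pidx b) - dg x (pidx a) = dg x a - dg x b" using dg_pidx ab by simp
  show "adcomp (cartan x) j X a b = - adcomp (cartan x) j X (pidx b) (pidx a)"
    unfolding adcomp_cartan e using so8_skew[OF X ab] by simp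
qed

lemma adcomp_mh: "X \<in> so8 \<Longrightarrow> mh x j (adcomp (cartan x) j X)"
  unfolding mh_def using adcomp_so8 by (auto simp: adcomp_cartan split: if_splits)

lemma adcomp_sum: assumes X: "X \<in> so8" and I: "intd x"
  shows "(\<Sum>j\<in>ad_eigs (cartan x). adcomp (cartan x) j X a b) = X a b"
proof (cases "a < 8 \<and> b < 8")
  case True
  then obtain j0 where j0: "dg x a - dg x b = of_int j0" using I unfolding intd_def by blast
  have j0E: "j0 \<in> ad_eigs (cartan x)" using True j0 by (auto simp: ad_eigs_cartan)
  have "(\<Sum>j\<in>ad_eigs (cartan x). adcomp (cartan x) j X a b) = (\<Sum>j\<in>ad_eigs (cartan x). if j = j0 then X a b else 0)"
    by (intro sum.cong refl) (auto simp: adcomp_cartan j0)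
  also have "\<dots> = X a b" using j0E ad_eigs_finite by simp
  finally show ?thesis .
next
  case False
  hence z: "X a b = 0" using so8_supp[OF X, of a b] by auto
  have "adcomp (cartan x) j X a b = 0" for j by (simp add: adcomp_cartan z)
  thus ?thesis using z by simp
qed

lemma mh_F: assumes I: "intd x" and pq: "p < 8" "q < 8" shows "\<exists>j. mh x j (Fm p q)"
proof -
  obtain j where j: "dg x p - dg x q = of_int j" using I pq unfolding intd_def by blast
  have "mh x j (Fm p q)" unfolding mh_def
  proof (intro conjI allI impI)
    show "Fm p q \<in> so8" using so8_F[OF pq] .
    fix a b assume "Fm p q a b \<noteq> 0"
    hence "(a = p \<and> b = q) \<or> (a = pidx q \<and> b = pidx p)" by (auto simp: Fm_def split: if_splits)
    thus "dg x a - dg x b = of_int j" using j dg_pidx pq by auto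
  qed
  thus ?thesis by blast
qed

lemma mh_bracket: assumes X: "mh x g X" and Y: "mh x h Y" shows "mh x (g + h) (bracket X Y)"
  unfolding mh_def
proof (intro conjI allI impI)
  show "bracket X Y \<in> so8" using X Y so8_bracket by (auto simp: mh_def)
  fix a b assume ne: "bracket X Y a b \<noteq> 0"
  show "dg x a - dg x b = of_int (g + h)"
  proof (rule ccontr)
    assume cc: "dg x a - dg x b \<noteq> of_int (g + h)"
    have h1: "X a c * Y c b = 0" for c
    proof (rule ccontr)
      assume "X a c * Y c b \<noteq> 0"
      hence "X a c \<noteq> 0" "Y c b \<noteq> 0" by auto
      hence "dg x a - dg x c = of_int g" "dg x c - dg x b = of_int h" using X Y by (auto simp: mh_def)
      hence "dg x a - dg x b = of_int g + of_int h" by (simp add: algebra_simps)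
      thus False using cc by simp
    qed
    have h2: "Y a c * X c b = 0" for c
    proof (rule ccontr)
      assume "Y a c * X c b \<noteq> 0"
      hence "Y a c \<noteq> 0" "X c b \<noteq> 0" by auto
      hence "dg x a - dg x c = of_int h" "dg x c - dg x b = of_int g" using X Y by (auto simp: mh_def)
      hence "dg x a - dg x b = of_int g + of_int h" by (simp add: algebra_simps)
      thus False using cc by simp
    qed
    have "bracket X Y a b = 0" by (simp add: bracket_def mmul_def h1 h2)
    thus False using ne by simp
  qed
qed

lemma mh_nform: assumes X: "mh x g X" and Y: "mh x h Y" and gh: "g + h \<noteq> 0" shows "nform X Y = 0"
proof -
  have hh: "X a b * Y b a = 0" for a b
  proof (rule ccontr)
    assume "X a b * Y b a \<noteq> 0"
    hence "X a b \<noteq> 0" "Y b a \<noteq> 0" by auto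
    hence "dg x a - dg x b = of_int g" "dg x b - dg x a = of_int h" using X Y by (auto simp: mh_def)
    hence "(of_int g + of_int h :: complex) = (dg x a - dg x b) + (dg x b - dg x a)" by simp
    hence "(of_int g + of_int h :: complex) = 0" by simp
    hence "g + h = 0" by (metis of_int_add of_int_eq_0_iff)
    thus False using gh by simp
  qed
  show ?thesis by (simp add: nform_def hh)
qed

lemma nform_cartan: "nform (cartan x) Z = (\<Sum>a<8. dg x a * Z a a) / 2"
proof -
  have "(\<Sum>a<8. \<Sum>b<8. cartan x a b * Z b a) = (\<Sum>a<8. dg x a * Z a a)"
  proof (rule sum.cong[OF refl])
    fix a assume "a \<in> {..<8::nat}"
    have "(\<Sum>b<8. cartan x a b * Z b a) = (\<Sum>b<8. if b = a then dg x a * Z a a else 0)"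
      by (intro sum.cong refl) (auto simp: cartan_dg)
    thus "(\<Sum>b<8. cartan x a b * Z b a) = dg x a * Z a a" using \<open>a \<in> _\<close> by simp
  qed
  thus ?thesis by (simp add: nform_def)
qed

lemma nform_cartan_bracket: assumes X: "mh x j X"
  shows "nform (cartan x) (bracket X Y) = of_int j * nform X Y"
proof -
  have "(\<Sum>a<8. dg x a * bracket X Y a a)
     = (\<Sum>a<8. \<Sum>c<8. dg x a * (X a c * Y c a)) - (\<Sum>a<8. \<Sum>c<8. dg x a * (Y a c * X c a))"
    by (simp add: bracket_def mmul_def sum_distrib_left right_diff_distrib sum_subtractf)
  also have "(\<Sum>a<8. \<Sum>c<8. dg x a * (Y a c * X c a)) = (\<Sum>c<8. \<Sum>a<8. dg x a * (Y a c * X c a))"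
    by (rule sum.swap)
  also have "(\<Sum>a<8. \<Sum>c<8. dg x a * (X a c * Y c a)) - (\<Sum>c<8. \<Sum>a<8. dg x a * (Y a c * X c a))
      = (\<Sum>a<8. \<Sum>c<8. of_int j * (X a c * Y c a))"
  proof -
    have "(\<Sum>a<8. \<Sum>c<8. dg x a * (X a c * Y c a)) - (\<Sum>a<8. \<Sum>c<8. dg x c * (Y c a * X a c))
        = (\<Sum>a<8. \<Sum>c<8. (dg x a - dg x c) * (X a c * Y c a))"
      by (simp add: sum_subtractf[symmetric] algebra_simps)
    also have "\<dots> = (\<Sum>a<8. \<Sum>c<8. of_int j * (X a c * Y c a))"
      by (intro sum.cong refl) (use X in \<open>auto simp: mh_def\<close>)
    finally show ?thesis .
  qed
  finally have "(\<Sum>a<8. dg x a * bracket X Y a a) = of_int j * (\<Sum>a<8. \<Sum>c<8. X a c * Y c a)"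
    by (simp add: sum_distrib_left)
  thus ?thesis unfolding nform_cartan by (simp add: nform_def)
qed


lemma bracket_addl: "bracket (\<lambda>a b. X a b + X' a b) Y = (\<lambda>a b. bracket X Y a b + bracket X' Y a b)"
  by (intro ext) (simp add: bracket_def mmul_def sum.distrib algebra_simps)
lemma bracket_addr: "bracket X (\<lambda>a b. Y a b + Y' a b) = (\<lambda>a b. bracket X Y a b + bracket X Y' a b)"
  by (intro ext) (simp add: bracket_def mmul_def sum.distrib algebra_simps)
lemma bracket_scl: "bracket (\<lambda>a b. c * X a b) Y = (\<lambda>a b. c * bracket X Y a b)"
  by (intro ext) (simp add: bracket_def mmul_def sum_distrib_left algebra_simps)
lemma bracket_scr: "bracket X (\<lambda>a b. c * Y a b) = (\<lambda>a b. c * bracket X Y a b)"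
  by (intro ext) (simp add: bracket_def mmul_def sum_distrib_left algebra_simps)
lemma nform_addl: "nform (\<lambda>a b. X a b + X' a b) Y = nform X Y + nform X' Y"
  by (simp add: nform_def sum.distrib algebra_simps add_divide_distrib)
lemma nform_addr: "nform X (\<lambda>a b. Y a b + Y' a b) = nform X Y + nform X Y'"
  by (simp add: nform_def sum.distrib algebra_simps add_divide_distrib)
lemma nform_scl: "nform (\<lambda>a b. c * X a b) Y = c * nform X Y"
  by (simp add: nform_def sum_distrib_left algebra_simps)
lemma nform_scr: "nform X (\<lambda>a b. c * Y a b) = c * nform X Y"
  by (simp add: nform_def sum_distrib_left algebra_simps)
lemma adcomp_add: "adcomp mu j (\<lambda>a b. X a b + Y a b) = (\<lambda>a b. adcomp mu j X a b + adcomp mu j Y a b)"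
  by (intro ext) (simp add: adcomp_def)
lemma adcomp_sc: "adcomp mu j (\<lambda>a b. c * X a b) = (\<lambda>a b. c * adcomp mu j X a b)"
  by (intro ext) (simp add: adcomp_def)

context affm begin

lemma sflow_add_v: "X \<in> so8 \<Longrightarrow> sflow (cartan x) k sc act X n (v + w) = sflow (cartan x) k sc act X n v + sflow (cartan x) k sc act X n w"
  unfolding sflow_def by (simp add: act_add adcomp_so8 sum.distrib sc_addr algebra_simps)

lemma sflow_sc_v: "X \<in> so8 \<Longrightarrow> sflow (cartan x) k sc act X n (sc c v) = sc c (sflow (cartan x) k sc act X n v)"
  unfolding sflow_def by (simp add: act_scv adcomp_so8 sc_sum_r sc_addr mult.commute)

lemma sflow_madd: "X \<in> so8 \<Longrightarrow> Y \<in> so8 \<Longrightarrow> sflow (cartan x) k sc act (\<lambda>a b. X a b + Y a b) n v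
   = sflow (cartan x) k sc act X n v + sflow (cartan x) k sc act Y n v"
  unfolding sflow_def adcomp_add nform_addr
  by (simp add: act_madd adcomp_so8 sum.distrib sc_addl distrib_right algebra_simps)

lemma sflow_mscale: "X \<in> so8 \<Longrightarrow> sflow (cartan x) k sc act (\<lambda>a b. c * X a b) n v = sc c (sflow (cartan x) k sc act X n v)"
  unfolding sflow_def adcomp_sc nform_scr
  by (simp add: act_mscale adcomp_so8 sc_sum_r sc_addr algebra_simps)

lemma sflow_hom: assumes X: "mh x j X"
  shows "sflow (cartan x) k sc act X n v = act X (n + j) v + (if n = 0 then sc (nform (cartan x) X * k) v else 0)"
proof -
  have so: "X \<in> so8" using X by (simp add: mh_def)
  have ad: "adcomp (cartan x) j' X = (if j' = j then X else (\<lambda>a b. 0))" for j'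
  proof (intro ext)
    fix a b
    show "adcomp (cartan x) j' X a b = (if j' = j then X else (\<lambda>a b. 0)) a b"
    proof (cases "X a b = 0")
      case True thus ?thesis by (simp add: adcomp_cartan)
    next
      case False
      hence "dg x a - dg x b = of_int j" using X by (simp add: mh_def)
      thus ?thesis by (auto simp: adcomp_cartan)
    qed
  qed
  have "(\<Sum>j'\<in>ad_eigs (cartan x). act (adcomp (cartan x) j' X) (n + j') v)
      = (\<Sum>j'\<in>ad_eigs (cartan x). if j' = j then act X (n + j) v else 0)"
    by (intro sum.cong refl) (simp add: ad act_mzero)
  also have "\<dots> = (if j \<in> ad_eigs (cartan x) then act X (n + j) v else 0)"
    using ad_eigs_finite by simp
  also have "\<dots> = act X (n + j) v"
  proof (cases "j \<in> ad_eigs (cartan x)")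
    case False
    have "X a b = 0" for a b
    proof (rule ccontr)
      assume ne: "X a b \<noteq> 0"
      have "\<not> (8 \<le> a \<or> 8 \<le> b)" using so8_supp[OF so, of a b] ne by blast
      hence "a < 8" "b < 8" by auto
      moreover have "dg x a - dg x b = of_int j" using ne X by (simp add: mh_def)
      ultimately have "j \<in> ad_eigs (cartan x)" by (auto simp: ad_eigs_cartan)
      thus False using False by simp
    qed
    hence "X = (\<lambda>a b. 0)" by (intro ext) simp
    thus ?thesis using False act_mzero by simp
  qed simp
  finally show ?thesis unfolding sflow_def by simp
qed

lemma sflow_comm_mh: assumes X: "mh x j X" and Y: "mh x l Y"
  shows "sflow (cartan x) k sc act X m (sflow (cartan x) k sc act Y n v)
    = sflow (cartan x) k sc act Y n (sflow (cartan x) k sc act X m v)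
      + sflow (cartan x) k sc act (bracket X Y) (m + n) v
      + (if m + n = 0 then sc (of_int m * nform X Y * k) v else 0)"
proof -
  have soX: "X \<in> so8" and soY: "Y \<in> so8" using X Y by (auto simp: mh_def)
  define c where "c = nform (cartan x) X * k"
  define c' where "c' = nform (cartan x) Y * k"
  have AX: "sflow (cartan x) k sc act X m w = act X (m + j) w + (if m = 0 then sc c w else 0)" for w
    unfolding c_def by (rule sflow_hom[OF X])
  have AY: "sflow (cartan x) k sc act Y n w = act Y (n + l) w + (if n = 0 then sc c' w else 0)" for w
    unfolding c'_def by (rule sflow_hom[OF Y])
  have AB: "sflow (cartan x) k sc act (bracket X Y) (m + n) w = act (bracket X Y) (m + n + (j + l)) w
       + (if m + n = 0 then sc (nform (cartan x) (bracket X Y) * k) w else 0)" for w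
    by (rule sflow_hom[OF mh_bracket[OF X Y]])
  have cm: "act X (m + j) (act Y (n + l) v) = act Y (n + l) (act X (m + j) v) + act (bracket X Y) (m + j + (n + l)) v
     + (if m + j + (n + l) = 0 then sc (of_int (m + j) * nform X Y * k) v else 0)"
    by (rule comm[OF soX soY])
  have nb: "nform (cartan x) (bracket X Y) = of_int j * nform X Y" by (rule nform_cartan_bracket[OF X])
  have cen: "(if m + j + (n + l) = 0 then sc (of_int (m + j) * nform X Y * k) v else 0)
     = (if m + n = 0 then sc (nform (cartan x) (bracket X Y) * k) v else 0)
       + (if m + n = 0 then sc (of_int m * nform X Y * k) v else 0)"
  proof (cases "nform X Y = 0")
    case True thus ?thesis using nb by simp
  next
    case False
    hence jl: "j + l = 0" using mh_nform[OF X Y] by auto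
    hence e: "(m + j + (n + l) = 0) = (m + n = 0)" by auto
    show ?thesis unfolding e nb by (simp add: sc_addl[symmetric] algebra_simps)
  qed
  have e2: "m + j + (n + l) = m + n + (j + l)" by simp
  show ?thesis
    unfolding AX AY AB act_add[OF soX] act_add[OF soY]
    using cm cen unfolding e2
    by (simp add: act_scv[OF soX] act_scv[OF soY] act_0[OF soX] act_0[OF soY] sc_addr ac_simps)
qed

lemma lin_expand:
  assumes fadd: "\<And>X Y. X \<in> so8 \<Longrightarrow> Y \<in> so8 \<Longrightarrow> f (\<lambda>a b. X a b + Y a b) = f X + f Y"
    and fsc: "\<And>X c. X \<in> so8 \<Longrightarrow> f (\<lambda>a b. c * X a b) = sc c (f X)"
    and X: "X \<in> so8"
  shows "f X = sc (1/2) (\<Sum>p<8. \<Sum>q<8. sc (X p q) (f (Fm p q)))"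
proof -
  have f0: "f (\<lambda>a b. 0) = 0" using fsc[OF so8_zero, of 0] by simp
  have fsum: "finite I \<Longrightarrow> (\<forall>i\<in>I. Z i \<in> so8) \<Longrightarrow> f (\<lambda>a b. \<Sum>i\<in>I. Z i a b) = (\<Sum>i\<in>I. f (Z i))" for I Z
  proof (induction I rule: finite_induct)
    case empty thus ?case using f0 by simp
  next
    case (insert i I)
    have "(\<lambda>a b. \<Sum>i\<in>insert i I. Z i a b) = (\<lambda>a b. Z i a b + (\<lambda>a b. \<Sum>i\<in>I. Z i a b) a b)"
      using insert by simp
    hence "f (\<lambda>a b. \<Sum>i\<in>insert i I. Z i a b) = f (Z i) + f (\<lambda>a b. \<Sum>i\<in>I. Z i a b)"
      using fadd[of "Z i" "\<lambda>a b. \<Sum>i\<in>I. Z i a b"] so8_msum[of I Z] insert by simp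
    thus ?case using insert by simp
  qed
  define Mpq where "Mpq p q = (\<lambda>a b. X p q * Fm p q a b)" for p q
  define Mp where "Mp p = (\<lambda>a b. \<Sum>q<8. Mpq p q a b)" for p
  define M where "M = (\<lambda>a b. \<Sum>p<8. Mp p a b)"
  have Mpq_so: "Mpq p q \<in> so8" if "p < 8" "q < 8" for p q
    unfolding Mpq_def using so8_scale[OF so8_F[OF that]] .
  have Mp_so: "Mp p \<in> so8" if "p < 8" for p
    unfolding Mp_def using so8_msum[of "{..<8}" "Mpq p"] Mpq_so that by simp
  have M_so: "M \<in> so8" unfolding M_def using so8_msum[of "{..<8}" Mp] Mp_so by simp
  have e: "X = (\<lambda>a b. (1/2) * M a b)"
  proof (intro ext)
    fix a b
    have "M a b = 2 * X a b" unfolding M_def Mp_def Mpq_def using expansion[OF X, of a b] by simp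
    thus "X a b = (1/2) * M a b" by simp
  qed
  have "f X = sc (1/2) (f M)" by (subst e) (rule fsc[OF M_so])
  also have "f M = (\<Sum>p<8. f (Mp p))"
    unfolding M_def by (rule fsum) (simp_all add: Mp_so)
  also have "\<dots> = (\<Sum>p<8. \<Sum>q<8. f (Mpq p q))"
  proof (rule sum.cong[OF refl])
    fix p assume "p \<in> {..<8::nat}"
    thus "f (Mp p) = (\<Sum>q<8. f (Mpq p q))"
      unfolding Mp_def by (intro fsum) (simp_all add: Mpq_so)
  qed
  also have "\<dots> = (\<Sum>p<8. \<Sum>q<8. sc (X p q) (f (Fm p q)))"
    by (intro sum.cong refl) (simp add: Mpq_def fsc so8_F)
  finally show ?thesis .
qed

lemma bilin_uniq:
  assumes P1: "\<And>X X' Y. X \<in> so8 \<Longrightarrow> X' \<in> so8 \<Longrightarrow> Y \<in> so8 \<Longrightarrow> P (\<lambda>a b. X a b + X' a b) Y = P X Y + P X' Y"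
    and P2: "\<And>X c Y. X \<in> so8 \<Longrightarrow> Y \<in> so8 \<Longrightarrow> P (\<lambda>a b. c * X a b) Y = sc c (P X Y)"
    and P3: "\<And>X Y Y'. X \<in> so8 \<Longrightarrow> Y \<in> so8 \<Longrightarrow> Y' \<in> so8 \<Longrightarrow> P X (\<lambda>a b. Y a b + Y' a b) = P X Y + P X Y'"
    and P4: "\<And>X c Y. X \<in> so8 \<Longrightarrow> Y \<in> so8 \<Longrightarrow> P X (\<lambda>a b. c * Y a b) = sc c (P X Y)"
    and Q1: "\<And>X X' Y. X \<in> so8 \<Longrightarrow> X' \<in> so8 \<Longrightarrow> Y \<in> so8 \<Longrightarrow> Q (\<lambda>a b. X a b + X' a b) Y = Q X Y + Q X' Y"
    and Q2: "\<And>X c Y. X \<in> so8 \<Longrightarrow> Y \<in> so8 \<Longrightarrow> Q (\<lambda>a b. c * X a b) Y = sc c (Q X Y)"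
    and Q3: "\<And>X Y Y'. X \<in> so8 \<Longrightarrow> Y \<in> so8 \<Longrightarrow> Y' \<in> so8 \<Longrightarrow> Q X (\<lambda>a b. Y a b + Y' a b) = Q X Y + Q X Y'"
    and Q4: "\<And>X c Y. X \<in> so8 \<Longrightarrow> Y \<in> so8 \<Longrightarrow> Q X (\<lambda>a b. c * Y a b) = sc c (Q X Y)"
    and B: "\<And>p q r s. p < 8 \<Longrightarrow> q < 8 \<Longrightarrow> r < 8 \<Longrightarrow> s < 8 \<Longrightarrow> P (Fm p q) (Fm r s) = Q (Fm p q) (Fm r s)"
    and X: "X \<in> so8" and Y: "Y \<in> so8"
  shows "P X Y = Q X Y"
proof -
  have a: "P (Fm p q) Y = Q (Fm p q) Y" if pq: "p < 8" "q < 8" for p q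
  proof -
    have "P (Fm p q) Y = sc (1/2) (\<Sum>r<8. \<Sum>s<8. sc (Y r s) (P (Fm p q) (Fm r s)))"
      by (rule lin_expand[where f="P (Fm p q)"]) (use P3 P4 so8_F[OF pq] Y in auto)
    also have "\<dots> = sc (1/2) (\<Sum>r<8. \<Sum>s<8. sc (Y r s) (Q (Fm p q) (Fm r s)))"
      using B pq by simp
    also have "\<dots> = Q (Fm p q) Y"
      by (rule lin_expand[where f="Q (Fm p q)", symmetric]) (use Q3 Q4 so8_F[OF pq] Y in auto)
    finally show ?thesis .
  qed
  have "P X Y = sc (1/2) (\<Sum>p<8. \<Sum>q<8. sc (X p q) (P (Fm p q) Y))"
    by (rule lin_expand[where f="\<lambda>X. P X Y"]) (use P1 P2 X Y in auto)
  also have "\<dots> = sc (1/2) (\<Sum>p<8. \<Sum>q<8. sc (X p q) (Q (Fm p q) Y))"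
    using a by simp
  also have "\<dots> = Q X Y"
    by (rule lin_expand[where f="\<lambda>X. Q X Y", symmetric]) (use Q1 Q2 X Y in auto)
  finally show ?thesis .
qed

lemma sflow_aff: assumes I: "intd x" shows "aff_module sc (sflow (cartan x) k sc act) k"
proof -
  let ?A = "sflow (cartan x) k sc act"
  have comm': "?A X m (?A Y n v) - ?A Y n (?A X m v) = ?A (bracket X Y) (m + n) v
      + (if m + n = 0 then sc (of_int m * nform X Y * k) v else 0)" if X: "X \<in> so8" and Y: "Y \<in> so8" for X Y m n v
  proof (rule bilin_uniq[where P="\<lambda>X Y. ?A X m (?A Y n v) - ?A Y n (?A X m v)"
      and Q="\<lambda>X Y. ?A (bracket X Y) (m + n) v + (if m + n = 0 then sc (of_int m * nform X Y * k) v else 0)", OF _ _ _ _ _ _ _ _ _ X Y])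
    fix X X' Y assume a: "X \<in> so8" "X' \<in> so8" "Y \<in> so8"
    show "?A (\<lambda>a b. X a b + X' a b) m (?A Y n v) - ?A Y n (?A (\<lambda>a b. X a b + X' a b) m v)
       = (?A X m (?A Y n v) - ?A Y n (?A X m v)) + (?A X' m (?A Y n v) - ?A Y n (?A X' m v))"
      using a by (simp add: sflow_madd sflow_add_v)
    show "?A (bracket (\<lambda>a b. X a b + X' a b) Y) (m + n) v + (if m + n = 0 then sc (of_int m * nform (\<lambda>a b. X a b + X' a b) Y * k) v else 0)
       = (?A (bracket X Y) (m + n) v + (if m + n = 0 then sc (of_int m * nform X Y * k) v else 0))
       + (?A (bracket X' Y) (m + n) v + (if m + n = 0 then sc (of_int m * nform X' Y * k) v else 0))"
      using a by (simp add: bracket_addl nform_addl sflow_madd so8_bracket sc_addl distrib_left distrib_right)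
  next
    fix X c Y assume a: "X \<in> so8" "Y \<in> so8"
    show "?A (\<lambda>a b. c * X a b) m (?A Y n v) - ?A Y n (?A (\<lambda>a b. c * X a b) m v)
       = sc c (?A X m (?A Y n v) - ?A Y n (?A X m v))"
      using a by (simp add: sflow_mscale sflow_sc_v sc_diff_r)
    show "?A (bracket (\<lambda>a b. c * X a b) Y) (m + n) v + (if m + n = 0 then sc (of_int m * nform (\<lambda>a b. c * X a b) Y * k) v else 0)
       = sc c (?A (bracket X Y) (m + n) v + (if m + n = 0 then sc (of_int m * nform X Y * k) v else 0))"
      using a by (simp add: bracket_scl nform_scl sflow_mscale so8_bracket sc_addr algebra_simps)
  next
    fix X Y Y' assume a: "X \<in> so8" "Y \<in> so8" "Y' \<in> so8"
    show "?A X m (?A (\<lambda>a b. Y a b + Y' a b) n v) - ?A (\<lambda>a b. Y a b + Y' a b) n (?A X m v)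
       = (?A X m (?A Y n v) - ?A Y n (?A X m v)) + (?A X m (?A Y' n v) - ?A Y' n (?A X m v))"
      using a by (simp add: sflow_madd sflow_add_v)
    show "?A (bracket X (\<lambda>a b. Y a b + Y' a b)) (m + n) v + (if m + n = 0 then sc (of_int m * nform X (\<lambda>a b. Y a b + Y' a b) * k) v else 0)
       = (?A (bracket X Y) (m + n) v + (if m + n = 0 then sc (of_int m * nform X Y * k) v else 0))
       + (?A (bracket X Y') (m + n) v + (if m + n = 0 then sc (of_int m * nform X Y' * k) v else 0))"
      using a by (simp add: bracket_addr nform_addr sflow_madd so8_bracket sc_addl distrib_left distrib_right)
  next
    fix X c Y assume a: "X \<in> so8" "Y \<in> so8"
    show "?A X m (?A (\<lambda>a b. c * Y a b) n v) - ?A (\<lambda>a b. c * Y a b) n (?A X m v)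
       = sc c (?A X m (?A Y n v) - ?A Y n (?A X m v))"
      using a by (simp add: sflow_mscale sflow_sc_v sc_diff_r)
    show "?A (bracket X (\<lambda>a b. c * Y a b)) (m + n) v + (if m + n = 0 then sc (of_int m * nform X (\<lambda>a b. c * Y a b) * k) v else 0)
       = sc c (?A (bracket X Y) (m + n) v + (if m + n = 0 then sc (of_int m * nform X Y * k) v else 0))"
      using a by (simp add: bracket_scr nform_scr sflow_mscale so8_bracket sc_addr algebra_simps)
  next
    fix p q r s :: nat assume pq: "p < 8" "q < 8" "r < 8" "s < 8"
    obtain j where j: "mh x j (Fm p q)" using mh_F[OF I pq(1,2)] by blast
    obtain l where l: "mh x l (Fm r s)" using mh_F[OF I pq(3,4)] by blast
    show "?A (Fm p q) m (?A (Fm r s) n v) - ?A (Fm r s) n (?A (Fm p q) m v)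
       = ?A (bracket (Fm p q) (Fm r s)) (m + n) v + (if m + n = 0 then sc (of_int m * nform (Fm p q) (Fm r s) * k) v else 0)"
      using sflow_comm_mh[OF j l, of m n v] by (simp add: diff_eq_eq ac_simps)
  qed
  have 1: "\<forall>X\<in>so8. \<forall>n v w. ?A X n (v + w) = ?A X n v + ?A X n w"
    using sflow_add_v[of _ x] by blast
  have 2: "\<forall>X\<in>so8. \<forall>n c v. ?A X n (sc c v) = sc c (?A X n v)"
    using sflow_sc_v[of _ x] by blast
  have 3: "\<forall>X\<in>so8. \<forall>Y\<in>so8. \<forall>n v. ?A (\<lambda>a b. X a b + Y a b) n v = ?A X n v + ?A Y n v"
    using sflow_madd[of _ _ x] by blast
  have 4: "\<forall>X\<in>so8. \<forall>c n v. ?A (\<lambda>a b. c * X a b) n v = sc c (?A X n v)"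
    using sflow_mscale[of _ x] by blast
  have 5: "\<forall>X\<in>so8. \<forall>Y\<in>so8. \<forall>m n v. ?A X m (?A Y n v) - ?A Y n (?A X m v) = ?A (bracket X Y) (m + n) v
      + (if m + n = 0 then sc (of_int m * nform X Y * k) v else 0)"
    using comm' by blast
  show ?thesis unfolding aff_module_def using cv 1 2 3 4 5 by (intro conjI)
qed

end


lemma csub_sum: assumes W: "csubspace sc W" shows "finite A \<Longrightarrow> (\<forall>i\<in>A. f i \<in> W) \<Longrightarrow> sum f A \<in> W"
  by (induction A rule: finite_induct) (use W in \<open>auto simp: csubspace_def\<close>)

lemma so8_diag_skew: "X \<in> so8 \<Longrightarrow> a < 8 \<Longrightarrow> X a (pidx a) = 0"
  using so8_skew[of X a "pidx a"] pidx_pidx[of a] pidx_lt[of a] by simp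

context affm begin

lemma csub_diff: "csubspace sc W \<Longrightarrow> x \<in> W \<Longrightarrow> y \<in> W \<Longrightarrow> x - y \<in> W"
proof -
  assume W: "csubspace sc W" and xy: "x \<in> W" "y \<in> W"
  have "sc (-1) y \<in> W" using W xy by (simp add: csubspace_def)
  hence "x + sc (-1) y \<in> W" using W xy by (simp add: csubspace_def)
  thus ?thesis using sc_neg_l[of 1 y] by simp
qed

lemma sflow_irr: assumes I: "intd x" and irr: "irreducible_mod sc act"
  shows "irreducible_mod sc (sflow (cartan x) k sc act)"
  unfolding irreducible_mod_def
proof (intro conjI allI impI)
  show "\<exists>v::'m. v \<noteq> 0" using irr unfolding irreducible_mod_def by blast
  fix W assume a: "csubspace sc W \<and> (\<forall>X\<in>so8. \<forall>n. \<forall>v\<in>W. sflow (cartan x) k sc act X n v \<in> W)"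
  hence W: "csubspace sc W" and inv: "\<And>X n v. X \<in> so8 \<Longrightarrow> v \<in> W \<Longrightarrow> sflow (cartan x) k sc act X n v \<in> W" by auto
  have "\<forall>X\<in>so8. \<forall>n. \<forall>v\<in>W. act X n v \<in> W"
  proof (intro ballI allI)
    fix X n v assume X: "X \<in> so8" and v: "v \<in> W"
    have e: "X = (\<lambda>a b. \<Sum>j\<in>ad_eigs (cartan x). adcomp (cartan x) j X a b)"
      using adcomp_sum[OF X I] by (intro ext) simp
    have "act X n v = (\<Sum>j\<in>ad_eigs (cartan x). act (adcomp (cartan x) j X) n v)"
      by (subst e, rule act_msum) (simp_all add: ad_eigs_finite adcomp_so8[OF X])
    also have "\<dots> \<in> W"
    proof (rule csub_sum[OF W ad_eigs_finite], rule ballI)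
      fix j
      have mhj: "mh x j (adcomp (cartan x) j X)" by (rule adcomp_mh[OF X])
      have "sflow (cartan x) k sc act (adcomp (cartan x) j X) (n - j) v = act (adcomp (cartan x) j X) n v
          + (if n - j = 0 then sc (nform (cartan x) (adcomp (cartan x) j X) * k) v else 0)"
        using sflow_hom[OF mhj, of "n - j" v] by simp
      hence "act (adcomp (cartan x) j X) n v = sflow (cartan x) k sc act (adcomp (cartan x) j X) (n - j) v
          - (if n - j = 0 then sc (nform (cartan x) (adcomp (cartan x) j X) * k) v else 0)" by simp
      moreover have "sflow (cartan x) k sc act (adcomp (cartan x) j X) (n - j) v \<in> W"
        using inv adcomp_so8[OF X] v by blast
      moreover have "(if n - j = 0 then sc (nform (cartan x) (adcomp (cartan x) j X) * k) v else 0) \<in> W"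
        using W v by (auto simp: csubspace_def)
      ultimately show "act (adcomp (cartan x) j X) n v \<in> W" using csub_diff[OF W] by simp
    qed
    finally show "act X n v \<in> W" .
  qed
  thus "W = {0} \<or> W = UNIV" using irr W unfolding irreducible_mod_def by blast
qed

end

context affm2 begin

lemma sflow_hw:
  assumes I: "intd x"
    and small: "\<And>X a b j. X \<in> so8 \<Longrightarrow> X a b \<noteq> 0 \<Longrightarrow> dg x a - dg x b = of_int j \<Longrightarrow> -1 \<le> j"
    and dom: "\<And>X a b j. X \<in> nplus \<Longrightarrow> X a b \<noteq> 0 \<Longrightarrow> dg x a - dg x b = of_int j \<Longrightarrow> 0 \<le> j"
    and hw: "hw_vector sc act (\<lambda>a b. 0) u" and irr: "irreducible_mod sc act"
  shows "hw_vector sc (sflow (cartan x) k sc act) (\<lambda>a b. -2 * cartan x a b) u"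
proof -
  have pos: "act X n u = 0" if "X \<in> so8" "n > 0" for X n using hw that by (auto simp: hw_vector_def)
  have va: "act X 0 u = 0" if "X \<in> so8" for X using vac[OF hw irr that] .
  have u0: "u \<noteq> 0" using hw by (simp add: hw_vector_def)
  have zero_comp: "adcomp (cartan x) j X = (\<lambda>a b. 0)" if "X \<in> so8" "\<And>a b. X a b \<noteq> 0 \<Longrightarrow> dg x a - dg x b = of_int j \<Longrightarrow> False" for X j
    using that by (intro ext) (auto simp: adcomp_cartan)
  have H: "sflow (cartan x) k sc act H 0 u = sc (nform (\<lambda>a b. -2 * cartan x a b) H) u" if Hc: "H \<in> cartan_sub" for H
  proof -
    obtain y where y: "H = cartan y" using Hc by (auto simp: cartan_sub_def)
    have mh0: "mh x 0 H" unfolding mh_def y using cartan_so8 by (auto simp: cartan_dg split: if_splits)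
    have "sflow (cartan x) k sc act H 0 u = act H 0 u + sc (nform (cartan x) H * k) u"
      using sflow_hom[OF mh0, of 0 u] by simp
    also have "act H 0 u = 0" using va y cartan_so8 by simp
    moreover have "nform (\<lambda>a b. -2 * cartan x a b) H = -2 * nform (cartan x) H" by (rule nform_scl)
    ultimately show ?thesis by (simp add: k2 mult.commute)
  qed
  have P: "sflow (cartan x) k sc act X n u = 0" if X: "X \<in> so8" and n: "n > 0" for X n
  proof -
    have "act (adcomp (cartan x) j X) (n + j) u = 0" for j
    proof (cases "n + j \<ge> 0")
      case True
      thus ?thesis using pos[OF adcomp_so8[OF X]] va[OF adcomp_so8[OF X]]
        by (cases "n + j = 0") auto
    next
      case False
      hence "j < -1" using n by simp
      hence "adcomp (cartan x) j X = (\<lambda>a b. 0)" using small[OF X] by (intro zero_comp[OF X]) force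
      thus ?thesis using act_mzero by simp
    qed
    thus ?thesis using n unfolding sflow_def by simp
  qed
  have NP: "sflow (cartan x) k sc act X 0 u = 0" if X: "X \<in> nplus" for X
  proof -
    have so: "X \<in> so8" using X by (simp add: nplus_def)
    have "act (adcomp (cartan x) j X) (0 + j) u = 0" for j
    proof (cases "j \<ge> 0")
      case True
      thus ?thesis using pos[OF adcomp_so8[OF so]] va[OF adcomp_so8[OF so]]
        by (cases "j = 0") auto
    next
      case False
      hence "adcomp (cartan x) j X = (\<lambda>a b. 0)" using dom[OF X] by (intro zero_comp[OF so]) force
      thus ?thesis using act_mzero by simp
    qed
    moreover have "nform (cartan x) X = 0"
    proof -
      have "X a a = 0" if "a < 8" for a
      proof (cases "a < 4")
        case True thus ?thesis using X by (simp add: nplus_def)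
      next
        case False
        have "X a a = - X (pidx a) (pidx a)" using so8_skew[OF so that that] .
        moreover have "pidx a < 4" using False that pidx_hi[of a] by simp
        ultimately show ?thesis using X by (simp add: nplus_def)
      qed
      thus ?thesis unfolding nform_cartan by simp
    qed
    ultimately show ?thesis unfolding sflow_def by simp
  qed
  show ?thesis unfolding hw_vector_def using u0 H P NP by auto
qed

end


definition xfw :: "nat \<Rightarrow> nat \<Rightarrow> complex" where
  "xfw i = (if i = 1 then (\<lambda>j. if j = 0 then 1 else 0)
             else if i = 2 then (\<lambda>j. if j \<le> 1 then 1 else 0)
             else if i = 3 then (\<lambda>j. if j \<le> 2 then 1/2 else if j = 3 then -1/2 else 0)
             else if i = 4 then (\<lambda>j. if j \<le> 3 then 1/2 else 0)
             else (\<lambda>j. 0))"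

lemma fw_xfw: "fw i = cartan (xfw i)"
  by (simp add: fw_def xfw_def)

definition etab :: "nat \<Rightarrow> nat \<Rightarrow> int" where
  "etab i a = (if i = 1 then [2,0,0,0,-2,0,0,0] ! a
     else if i = 3 then [1,1,1,-1,-1,-1,-1,1] ! a else [1,1,1,1,-1,-1,-1,-1] ! a)"

lemma dg_etab: assumes i: "i \<in> {1,3,4}" and a: "a < 8" shows "dg (xfw i) a = of_int (etab i a) / 2"
  using i less8_cases[OF a] by (auto simp: dg_def xfw_def etab_def)

lemma etab_even: assumes i: "i \<in> {1,3,4}" and a: "a < 8" and b: "b < 8"
  shows "etab i a - etab i b = 2 * ((etab i a - etab i b) div 2)"
  using i less8_cases[OF a] less8_cases[OF b] by (auto simp: etab_def)

lemma dg_diff: assumes i: "i \<in> {1,3,4}" and a: "a < 8" and b: "b < 8"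
  shows "dg (xfw i) a - dg (xfw i) b = of_int ((etab i a - etab i b) div 2)"
proof -
  have "dg (xfw i) a - dg (xfw i) b = of_int (etab i a - etab i b) / 2"
    unfolding dg_etab[OF i a] dg_etab[OF i b] by (simp add: diff_divide_distrib)
  also have "\<dots> = of_int (2 * ((etab i a - etab i b) div 2)) / 2" using etab_even[OF i a b] by simp
  also have "\<dots> = of_int ((etab i a - etab i b) div 2)" by simp
  finally show ?thesis .
qed

lemma intd_fw: "i \<in> {1,3,4} \<Longrightarrow> intd (xfw i)"
  unfolding intd_def using dg_diff by blast

lemma dg_diff_j: assumes i: "i \<in> {1,3,4}" and a: "a < 8" and b: "b < 8" and j: "dg (xfw i) a - dg (xfw i) b = of_int j"
  shows "2 * j = etab i a - etab i b"
proof -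
  have "(of_int j :: complex) = of_int ((etab i a - etab i b) div 2)" using j dg_diff[OF i a b] by simp
  hence "j = (etab i a - etab i b) div 2" by (simp only: of_int_eq_iff)
  thus ?thesis using etab_even[OF i a b] by simp
qed

lemma etab_small: assumes i: "i \<in> {1,3,4}" and a: "a < 8" and b: "b < 8" and nb: "b \<noteq> pidx a"
  shows "etab i a - etab i b \<ge> -2"
  using i less8_cases[OF a] less8_cases[OF b] nb by (auto simp: etab_def pidx_def)

lemma etab_dom: assumes i: "i \<in> {1,3,4}" and a: "a < 8" and b: "b < 8" and r: "rho a > rho b"
  shows "etab i a \<ge> etab i b"
  using i less8_cases[OF a] less8_cases[OF b] r by (auto simp: etab_def rho_def)

lemma small_fw: assumes i: "i \<in> {1,3,4}" and X: "X \<in> so8" and ne: "X a b \<noteq> 0"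
  and j: "dg (xfw i) a - dg (xfw i) b = of_int j" shows "-1 \<le> j"
proof -
  have "\<not> (8 \<le> a \<or> 8 \<le> b)" using so8_supp[OF X, of a b] ne by blast
  hence ab: "a < 8" "b < 8" by auto
  have "b \<noteq> pidx a" using so8_diag_skew[OF X ab(1)] ne by auto
  thus ?thesis using etab_small[OF i ab] dg_diff_j[OF i ab j] by simp
qed

lemma nplus_pos: assumes X: "X \<in> nplus" and ne: "X a b \<noteq> 0" shows "rho a > rho b"
proof -
  have so: "X \<in> so8" using X by (simp add: nplus_def)
  have "\<not> (8 \<le> a \<or> 8 \<le> b)" using so8_supp[OF so, of a b] ne by blast
  hence ab: "a < 8" "b < 8" by auto
  have c1: "X a b = 0" if "a < 4" "b < 4" "b \<le> a" for a b using X that by (simp add: nplus_def)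
  have c2: "X a b = 0" if "4 \<le> a" "a < 8" "b < 4" for a b using X that by (simp add: nplus_def)
  consider "a < 4 \<and> b < 4" | "4 \<le> a \<and> b < 4" | "a < 4 \<and> 4 \<le> b" | "4 \<le> a \<and> 4 \<le> b" by linarith
  thus ?thesis
  proof cases
    case 1
    hence "a < b" using c1[of a b] ne by (cases "b \<le> a") auto
    thus ?thesis using 1 by (simp add: rho_def)
  next
    case 2 thus ?thesis using c2 ab ne by auto
  next
    case 3
    have "b \<noteq> pidx a" using so8_diag_skew[OF so ab(1)] ne by auto
    hence "\<not> (a = 3 \<and> b = 7)" by (auto simp: pidx_def)
    thus ?thesis using 3 ab by (auto simp: rho_def)
  next
    case 4
    have sk: "X a b = - X (pidx b) (pidx a)" using so8_skew[OF so ab] .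
    have pa: "pidx a = a - 4" "pidx b = b - 4" using 4 ab pidx_hi by auto
    have "X (pidx b) (pidx a) \<noteq> 0" using sk ne by auto
    moreover have "pidx b < 4" "pidx a < 4" using pa 4 ab by auto
    ultimately have "\<not> (pidx a \<le> pidx b)" using c1[of "pidx b" "pidx a"] by blast
    hence "b < a" using pa 4 by auto
    thus ?thesis using 4 ab by (simp add: rho_def)
  qed
qed

lemma dom_fw: assumes i: "i \<in> {1,3,4}" and X: "X \<in> nplus" and ne: "X a b \<noteq> 0"
  and j: "dg (xfw i) a - dg (xfw i) b = of_int j" shows "0 \<le> j"
proof -
  have so: "X \<in> so8" using X by (simp add: nplus_def)
  have "\<not> (8 \<le> a \<or> 8 \<le> b)" using so8_supp[OF so, of a b] ne by blast
  hence ab: "a < 8" "b < 8" by auto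
  thus ?thesis using etab_dom[OF i ab nplus_pos[OF X ne]] dg_diff_j[OF i ab j] by simp
qed


lemma wapp_pair: "wapp (\<lambda>X n z. (A1 X n (fst z), A2 X n (snd z))) w z = (wapp A1 w (fst z), wapp A2 w (snd z))"
  by (induction w) auto

lemma fst_sumlist: "fst (sum_list (map f l)) = sum_list (map (\<lambda>x. fst (f x)) l)"
  by (induction l) auto
lemma snd_sumlist: "snd (sum_list (map f l)) = sum_list (map (\<lambda>x. snd (f x)) l)"
  by (induction l) auto

lemma aff_prod:
  fixes sc1 :: "complex \<Rightarrow> 'm::ab_group_add \<Rightarrow> 'm" and sc2 :: "complex \<Rightarrow> 'n::ab_group_add \<Rightarrow> 'n"
  assumes a1: "aff_module sc1 A1 k" and a2: "aff_module sc2 A2 k"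
  shows "aff_module (\<lambda>c z. (sc1 c (fst z), sc2 c (snd z))) (\<lambda>X n z. (A1 X n (fst z), A2 X n (snd z))) k"
proof -
  interpret M1: affm sc1 A1 k by unfold_locales (rule a1)
  interpret M2: affm sc2 A2 k by unfold_locales (rule a2)
  show ?thesis unfolding aff_module_def cvs_def
  proof (intro conjI ballI allI)
    fix v :: "'m \<times> 'n" show "(sc1 1 (fst v), sc2 1 (snd v)) = v" by simp
  next
    fix a b and v :: "'m \<times> 'n"
    show "(sc1 a (fst (sc1 b (fst v), sc2 b (snd v))), sc2 a (snd (sc1 b (fst v), sc2 b (snd v)))) = (sc1 (a * b) (fst v), sc2 (a * b) (snd v))"
      by simp
    show "(sc1 (a + b) (fst v), sc2 (a + b) (snd v)) = (sc1 a (fst v), sc2 a (snd v)) + (sc1 b (fst v), sc2 b (snd v))"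
      by (simp add: M1.sc_addl M2.sc_addl)
  next
    fix a and v w :: "'m \<times> 'n"
    show "(sc1 a (fst (v + w)), sc2 a (snd (v + w))) = (sc1 a (fst v), sc2 a (snd v)) + (sc1 a (fst w), sc2 a (snd w))"
      by (simp add: M1.sc_addr M2.sc_addr)
  next
    fix X n and v w :: "'m \<times> 'n" assume X: "X \<in> so8"
    show "(A1 X n (fst (v + w)), A2 X n (snd (v + w))) = (A1 X n (fst v), A2 X n (snd v)) + (A1 X n (fst w), A2 X n (snd w))"
      using X by (simp add: M1.act_add M2.act_add)
  next
    fix X n c and v :: "'m \<times> 'n" assume X: "X \<in> so8"
    show "(A1 X n (fst (sc1 c (fst v), sc2 c (snd v))), A2 X n (snd (sc1 c (fst v), sc2 c (snd v))))
        = (sc1 c (fst (A1 X n (fst v), A2 X n (snd v))), sc2 c (snd (A1 X n (fst v), A2 X n (snd v))))"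
      using X by (simp add: M1.act_scv M2.act_scv)
  next
    fix X Y n and v :: "'m \<times> 'n" assume X: "X \<in> so8" and Y: "Y \<in> so8"
    show "(A1 (\<lambda>a b. X a b + Y a b) n (fst v), A2 (\<lambda>a b. X a b + Y a b) n (snd v)) = (A1 X n (fst v), A2 X n (snd v)) + (A1 Y n (fst v), A2 Y n (snd v))"
      using X Y by (simp add: M1.act_madd M2.act_madd)
  next
    fix X c n and v :: "'m \<times> 'n" assume X: "X \<in> so8"
    show "(A1 (\<lambda>a b. c * X a b) n (fst v), A2 (\<lambda>a b. c * X a b) n (snd v)) = (sc1 c (fst (A1 X n (fst v), A2 X n (snd v))), sc2 c (snd (A1 X n (fst v), A2 X n (snd v))))"
      using X by (simp add: M1.act_mscale M2.act_mscale)
  next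
    fix X Y m n and v :: "'m \<times> 'n" assume X: "X \<in> so8" and Y: "Y \<in> so8"
    show "(A1 X m (fst (A1 Y n (fst v), A2 Y n (snd v))), A2 X m (snd (A1 Y n (fst v), A2 Y n (snd v))))
        - (A1 Y n (fst (A1 X m (fst v), A2 X m (snd v))), A2 Y n (snd (A1 X m (fst v), A2 X m (snd v))))
        = (A1 (bracket X Y) (m + n) (fst v), A2 (bracket X Y) (m + n) (snd v))
          + (if m + n = 0 then (sc1 (of_int m * nform X Y * k) (fst v), sc2 (of_int m * nform X Y * k) (snd v)) else 0)"
      using M1.comm[OF X Y, of m n "fst v"] M2.comm[OF X Y, of m n "snd v"] by simp
  qed
qed


lemma hw_iso:
  fixes sc1 :: "complex \<Rightarrow> 'm::ab_group_add \<Rightarrow> 'm" and sc2 :: "complex \<Rightarrow> 'n::ab_group_add \<Rightarrow> 'n"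
  assumes a1: "aff_module sc1 A1 (-2)" and i1: "irreducible_mod sc1 A1" and h1: "hw_vector sc1 A1 lam u1"
    and a2: "aff_module sc2 A2 (-2)" and i2: "irreducible_mod sc2 A2" and h2: "hw_vector sc2 A2 lam u2"
  shows "\<exists>f. mod_iso sc1 A1 sc2 A2 f"
proof -
  define scp where "scp = (\<lambda>c (z::'m \<times> 'n). (sc1 c (fst z), sc2 c (snd z)))"
  define actp where "actp = (\<lambda>X n (z::'m \<times> 'n). (A1 X n (fst z), A2 X n (snd z)))"
  interpret M1: affm2 sc1 A1 "-2" by unfold_locales (simp_all add: a1)
  interpret M2: affm2 sc2 A2 "-2" by unfold_locales (simp_all add: a2)
  interpret P: affm2 scp actp "-2" unfolding scp_def actp_def by unfold_locales (simp_all add: aff_prod[OF a1 a2])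
  have scp_simp[simp]: "scp c (x, y) = (sc1 c x, sc2 c y)" for c x y by (simp add: scp_def)
  have actp_simp[simp]: "actp X n (x, y) = (A1 X n x, A2 X n y)" for X n x y by (simp add: actp_def)
  have wp: "wapp actp w (x, y) = (wapp A1 w x, wapp A2 w y)" for w x y
    unfolding actp_def using wapp_pair[of A1 A2 w "(x, y)"] by simp
  have pos1: "A1 X n u1 = 0" if "X \<in> so8" "n > 0" for X n using h1 that by (auto simp: hw_vector_def)
  have pos2: "A2 X n u2 = 0" if "X \<in> so8" "n > 0" for X n using h2 that by (auto simp: hw_vector_def)
  have np1: "A1 X 0 u1 = 0" if "X \<in> nplus" for X using h1 that by (auto simp: hw_vector_def)
  have np2: "A2 X 0 u2 = 0" if "X \<in> nplus" for X using h2 that by (auto simp: hw_vector_def)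
  have ca1: "A1 H 0 u1 = sc1 (nform lam H) u1" if "H \<in> cartan_sub" for H using h1 that by (auto simp: hw_vector_def)
  have ca2: "A2 H 0 u2 = sc2 (nform lam H) u2" if "H \<in> cartan_sub" for H using h2 that by (auto simp: hw_vector_def)
  have u10: "u1 \<noteq> 0" and u20: "u2 \<noteq> 0" using h1 h2 by (auto simp: hw_vector_def)
  define U where "U = {(u1, u2)}"
  have hyU: "\<forall>u\<in>U. \<forall>X n h. hom h X \<longrightarrow> (0 < n \<or> (n = 0 \<and> 0 < h)) \<longrightarrow> actp X n u = 0"
  proof (intro ballI allI impI)
    fix u X and n h :: int assume u: "u \<in> U" and X: "hom h X" and r: "0 < n \<or> (n = 0 \<and> 0 < h)"
    have so: "X \<in> so8" using X by (simp add: hom_def)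
    show "actp X n u = 0"
    proof (cases "n > 0")
      case True thus ?thesis using u pos1[OF so] pos2[OF so] by (simp add: U_def zero_prod_def)
    next
      case False
      hence "n = 0" "X \<in> nplus" using r hom_pos_nplus[OF X] by auto
      thus ?thesis using u np1 np2 by (simp add: U_def zero_prod_def)
    qed
  qed
  have UC: "\<forall>u\<in>U. \<forall>X. hom 0 X \<longrightarrow> actp X 0 u \<in> cspan scp U"
  proof (intro ballI allI impI)
    fix u H assume u: "u \<in> U" and H: "hom 0 H"
    have "actp H 0 u = scp (nform lam H) u"
      using u ca1 ca2 hom0_cartan_sub[OF H] by (simp add: U_def)
    thus "actp H 0 u \<in> cspan scp U" using u by (auto intro: cspan.intros)
  qed
  define N where "N = P.WS U"
  have N_sub: "csubspace scp N" unfolding N_def P.WS_def by (rule cspan_csubspace)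
  have N_inv: "actp X n z \<in> N" if "X \<in> so8" "z \<in> N" for X n z
    using P.WS_inv that unfolding N_def by blast
  have uN: "(u1, u2) \<in> N" unfolding N_def P.WS_def
    by (rule cspan_base) (force simp: U_def intro: exI[of _ "[]"])
  have N_low: "N \<subseteq> cspan scp {wapp actp w (u1, u2) | w. homw w \<and> loww w}"
  proof -
    have "N \<subseteq> cspan scp {wapp actp w u | w u. u \<in> U \<and> homw w \<and> loww w}"
      unfolding N_def by (rule P.WS_low[OF hyU UC])
    also have "{wapp actp w u | w u. u \<in> U \<and> homw w \<and> loww w} = {wapp actp w (u1, u2) | w. homw w \<and> loww w}"
      by (auto simp: U_def)
    finally show ?thesis .
  qed
  have N0: "(0::'m \<times> 'n) \<in> N" using N_sub by (simp add: csubspace_def)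
  have N_add: "z + z' \<in> N" if "z \<in> N" "z' \<in> N" for z z' using N_sub that by (simp add: csubspace_def)
  have N_sc: "scp c z \<in> N" if "z \<in> N" for c z using N_sub that by (simp add: csubspace_def)
  have N_diff: "z - z' \<in> N" if "z \<in> N" "z' \<in> N" for z z' using P.csub_diff[OF N_sub that] .
  have contra: False if uv: "(x0, y0) \<in> N" and d: "x0 = sc1 d1 u1" "y0 = sc2 d2 u2" and ne: "d1 \<noteq> d2" for x0 y0 d1 d2
  proof -
    have "(x0, y0) \<in> cspan scp {wapp actp w (u1, u2) | w. homw w \<and> loww w}" using N_low uv by blast
    then obtain l where l: "\<forall>cz\<in>set l. homw (snd cz) \<and> loww (snd cz)"
      "(x0, y0) = sum_list (map (\<lambda>cz. scp (fst cz) (wapp actp (snd cz) (u1, u2))) l)"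
      using cspan_list[where f="\<lambda>w. wapp actp w (u1, u2)" and P="\<lambda>w. homw w \<and> loww w", OF _ P.cv] by blast
    have e1: "sum_list (map (\<lambda>cz. sc1 (fst cz) (wapp A1 (snd cz) u1)) l) = sc1 d1 u1"
      using arg_cong[OF l(2), of fst] d by (simp add: fst_sumlist wp)
    have e2: "sum_list (map (\<lambda>cz. sc2 (fst cz) (wapp A2 (snd cz) u2)) l) = sc2 d2 u2"
      using arg_cong[OF l(2), of snd] d by (simp add: snd_sumlist wp)
    have "d1 = sum_list (map fst (filter (\<lambda>cw. snd cw = []) l))" by (rule M1.Qlemma[OF h1 l(1) e1])
    moreover have "d2 = sum_list (map fst (filter (\<lambda>cw. snd cw = []) l))" by (rule M2.Qlemma[OF h2 l(1) e2])
    ultimately show False using ne by simp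
  qed
  have inj1: "x = 0" if "(x, 0) \<in> N" for x
  proof -
    define K where "K = {x. (x, 0) \<in> N}"
    have "csubspace sc1 K" unfolding K_def csubspace_def
    proof (intro conjI ballI allI)
      show "0 \<in> {x. (x, 0) \<in> N}" using N0 by (simp add: zero_prod_def)
    next
      fix v w assume "v \<in> {x. (x, 0) \<in> N}" "w \<in> {x. (x, 0) \<in> N}"
      thus "v + w \<in> {x. (x, 0) \<in> N}" using N_add by fastforce
    next
      fix c v assume "v \<in> {x. (x, 0) \<in> N}"
      thus "sc1 c v \<in> {x. (x, 0) \<in> N}" using N_sc[of "(v, 0)" c] by simp
    qed
    moreover have "\<forall>X\<in>so8. \<forall>n. \<forall>v\<in>K. A1 X n v \<in> K"
      unfolding K_def using N_inv M2.act_0 by fastforce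
    ultimately have "K = {0} \<or> K = UNIV" using i1 unfolding irreducible_mod_def by blast
    moreover have "K \<noteq> UNIV"
    proof
      assume "K = UNIV"
      hence "(u1, 0) \<in> N" unfolding K_def by blast
      thus False by (rule contra[of u1 0 1 0]) simp_all
    qed
    ultimately show ?thesis using that unfolding K_def by blast
  qed
  have inj2: "y = 0" if "(0, y) \<in> N" for y
  proof -
    define K where "K = {y. (0, y) \<in> N}"
    have "csubspace sc2 K" unfolding K_def csubspace_def
    proof (intro conjI ballI allI)
      show "0 \<in> {y. (0, y) \<in> N}" using N0 by (simp add: zero_prod_def)
    next
      fix v w assume "v \<in> {y. (0, y) \<in> N}" "w \<in> {y. (0, y) \<in> N}"
      thus "v + w \<in> {y. (0, y) \<in> N}" using N_add by fastforce
    next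
      fix c v assume "v \<in> {y. (0, y) \<in> N}"
      thus "sc2 c v \<in> {y. (0, y) \<in> N}" using N_sc[of "(0, v)" c] by simp
    qed
    moreover have "\<forall>X\<in>so8. \<forall>n. \<forall>v\<in>K. A2 X n v \<in> K"
      unfolding K_def using N_inv M1.act_0 by fastforce
    ultimately have "K = {0} \<or> K = UNIV" using i2 unfolding irreducible_mod_def by blast
    moreover have "K \<noteq> UNIV"
    proof
      assume "K = UNIV"
      hence "(0, u2) \<in> N" unfolding K_def by blast
      thus False by (rule contra[of 0 u2 0 1]) simp_all
    qed
    ultimately show ?thesis using that unfolding K_def by blast
  qed
  have surj1: "\<exists>y. (x, y) \<in> N" for x
  proof -
    define K where "K = fst ` N"
    have "csubspace sc1 K" unfolding K_def csubspace_def
    proof (intro conjI ballI allI)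
      show "0 \<in> fst ` N" using N0 by force
    next
      fix v w assume "v \<in> fst ` N" "w \<in> fst ` N"
      then obtain z z' where zz: "z \<in> N" "z' \<in> N" "v = fst z" "w = fst z'" by blast
      have "z + z' \<in> N" by (rule N_add[OF zz(1,2)])
      moreover have "v + w = fst (z + z')" using zz by simp
      ultimately show "v + w \<in> fst ` N" by blast
    next
      fix c v assume "v \<in> fst ` N"
      then obtain z where "z \<in> N" "v = fst z" by blast
      thus "sc1 c v \<in> fst ` N" using N_sc[of z c] by (force simp: scp_def)
    qed
    moreover have "\<forall>X\<in>so8. \<forall>n. \<forall>v\<in>K. A1 X n v \<in> K"
    proof (intro ballI allI)
      fix X n v assume "X \<in> so8" "v \<in> K"
      then obtain z where "z \<in> N" "v = fst z" unfolding K_def by blast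
      thus "A1 X n v \<in> K" using N_inv[OF \<open>X \<in> so8\<close>, of z n] unfolding K_def by (force simp: actp_def)
    qed
    ultimately have "K = {0} \<or> K = UNIV" using i1 unfolding irreducible_mod_def by blast
    moreover have "u1 \<in> K" using uN unfolding K_def by force
    ultimately have "K = UNIV" using u10 by auto
    hence "x \<in> fst ` N" unfolding K_def by simp
    thus ?thesis by force
  qed
  have surj2: "\<exists>x. (x, y) \<in> N" for y
  proof -
    define K where "K = snd ` N"
    have "csubspace sc2 K" unfolding K_def csubspace_def
    proof (intro conjI ballI allI)
      show "0 \<in> snd ` N" using N0 by force
    next
      fix v w assume "v \<in> snd ` N" "w \<in> snd ` N"
      then obtain z z' where zz: "z \<in> N" "z' \<in> N" "v = snd z" "w = snd z'" by blast
      have "z + z' \<in> N" by (rule N_add[OF zz(1,2)])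
      moreover have "v + w = snd (z + z')" using zz by simp
      ultimately show "v + w \<in> snd ` N" by blast
    next
      fix c v assume "v \<in> snd ` N"
      then obtain z where "z \<in> N" "v = snd z" by blast
      thus "sc2 c v \<in> snd ` N" using N_sc[of z c] by (force simp: scp_def)
    qed
    moreover have "\<forall>X\<in>so8. \<forall>n. \<forall>v\<in>K. A2 X n v \<in> K"
    proof (intro ballI allI)
      fix X n v assume "X \<in> so8" "v \<in> K"
      then obtain z where "z \<in> N" "v = snd z" unfolding K_def by blast
      thus "A2 X n v \<in> K" using N_inv[OF \<open>X \<in> so8\<close>, of z n] unfolding K_def by (force simp: actp_def)
    qed
    ultimately have "K = {0} \<or> K = UNIV" using i2 unfolding irreducible_mod_def by blast
    moreover have "u2 \<in> K" using uN unfolding K_def by force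
    ultimately have "K = UNIV" using u20 by auto
    hence "y \<in> snd ` N" unfolding K_def by simp
    thus ?thesis by force
  qed
  have uniq: "y = y'" if "(x, y) \<in> N" "(x, y') \<in> N" for x y y'
    using inj2[of "y - y'"] N_diff[OF that] by simp
  have uniq1: "x = x'" if "(x, y) \<in> N" "(x', y) \<in> N" for x x' y
    using inj1[of "x - x'"] N_diff[OF that] by simp
  define f where "f x = (THE y. (x, y) \<in> N)" for x
  have fN: "(x, f x) \<in> N" for x
    unfolding f_def using surj1[of x] uniq by (metis theI)
  have fe: "f x = y" if "(x, y) \<in> N" for x y using uniq[OF fN that] .
  have "mod_iso sc1 A1 sc2 A2 f" unfolding mod_iso_def
  proof (intro conjI allI ballI)
    show "bij f"
    proof (rule bijI)
      show "inj f"
      proof (rule injI)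
        fix x x' assume "f x = f x'"
        thus "x = x'" using uniq1[OF fN[of x]] fN[of x'] by simp
      qed
      show "surj f"
      proof -
        have "y \<in> range f" for y using surj2[of y] fe by blast
        thus ?thesis by blast
      qed
    qed
  next
    fix v w show "f (v + w) = f v + f w" using fe N_add[OF fN[of v] fN[of w]] by simp
  next
    fix c v show "f (sc1 c v) = sc2 c (f v)" using fe N_sc[OF fN[of v], of c] by simp
  next
    fix X n v assume X: "X \<in> so8"
    show "f (A1 X n v) = A2 X n (f v)" using fe N_inv[OF X fN[of v], of n] by simp
  qed
  thus ?thesis by blast
qed


theorem mainTheorem6:
  fixes sc1 :: "complex \<Rightarrow> 'm::ab_group_add \<Rightarrow> 'm" and act1 :: "mat \<Rightarrow> int \<Rightarrow> 'm \<Rightarrow> 'm"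
    and sc2 :: "complex \<Rightarrow> 'n::ab_group_add \<Rightarrow> 'n" and act2 :: "mat \<Rightarrow> int \<Rightarrow> 'n \<Rightarrow> 'n"
    and i :: nat
  assumes "i \<in> {1, 3, 4}"
    and "is_L sc1 act1 (-2) (\<lambda>a b. 0)"
    and "is_L sc2 act2 (-2) (\<lambda>a b. -2 * fw i a b)"
  shows "\<exists>f. mod_iso sc1 (sflow (fw i) (-2) sc1 act1) sc2 act2 f"
proof -
  have i: "i \<in> {1, 3, 4}" by (rule assms(1))
  have aff1: "aff_module sc1 act1 (-2)" and irr1: "irreducible_mod sc1 act1"
    and "\<exists>v. hw_vector sc1 act1 (\<lambda>a b. 0) v" using assms(2) by (auto simp: is_L_def)
  then obtain u1 where u1: "hw_vector sc1 act1 (\<lambda>a b. 0) u1" by blast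
  have aff2: "aff_module sc2 act2 (-2)" and irr2: "irreducible_mod sc2 act2"
    and "\<exists>v. hw_vector sc2 act2 (\<lambda>a b. -2 * fw i a b) v" using assms(3) by (auto simp: is_L_def)
  then obtain u2 where u2: "hw_vector sc2 act2 (\<lambda>a b. -2 * fw i a b) u2" by blast
  interpret M: affm2 sc1 act1 "-2" by unfold_locales (simp_all add: aff1)
  have I: "intd (xfw i)" by (rule intd_fw[OF i])
  have A: "sflow (fw i) (-2) sc1 act1 = sflow (cartan (xfw i)) (-2) sc1 act1" by (simp add: fw_xfw)
  have aff1': "aff_module sc1 (sflow (cartan (xfw i)) (-2) sc1 act1) (-2)" by (rule M.sflow_aff[OF I])
  have irr1': "irreducible_mod sc1 (sflow (cartan (xfw i)) (-2) sc1 act1)" by (rule M.sflow_irr[OF I irr1])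
  have hw1': "hw_vector sc1 (sflow (cartan (xfw i)) (-2) sc1 act1) (\<lambda>a b. -2 * cartan (xfw i) a b) u1"
    by (rule M.sflow_hw[OF I _ _ u1 irr1]) (use small_fw[OF i] dom_fw[OF i] in blast)+
  have L: "(\<lambda>a b. -2 * fw i a b) = (\<lambda>a b. -2 * cartan (xfw i) a b)" by (simp add: fw_xfw)
  have "\<exists>f. mod_iso sc1 (sflow (cartan (xfw i)) (-2) sc1 act1) sc2 act2 f"
    by (rule hw_iso[OF aff1' irr1' hw1' aff2 irr2]) (use u2 L in simp)
  thus ?thesis unfolding A .
qed


end
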